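(* Let $\gamma$ be a meromorphic family in $\mathrm{GL}_n(\mathbb C)$ with exponents $m_1\ge\dots\ge m_n$. Then (a) for each $j=0,1,\dots,n$ the limit $\mathcal L^j=\lim_{z\to0}z^{m_1+\dots+m_j}\lambda^j_{\mathrm{cha}}(\gamma(z))$ exists in $\mathrm{Mat}(\Lambda^jV)$ and is nonzero; (b) $\mathcal L^j=\mathcal L^j(\mathcal P^\gamma)$ for all $j$, where $\mathcal P^\gamma$ is the hinge attached to $\gamma$.
   Context: $V=\mathbb C^n$; $\lambda^j_{\mathrm{cha}}(A):\Lambda^jV\to\Lambda^jV$, $v_1\wedge\dots\wedge v_j\mapsto Av_1\wedge\dots\wedge Av_j$. A meromorphic family is a map $\gamma$ from a punctured disc $0<|z|<\varepsilon$ to $\mathrm{GL}_n(\mathbb C)$ with matrix entries holomorphic there and with poles or removable singularities at $0$; it can be written $\gamma(z)=a(z)\,\mathrm{diag}(z^{-m_1},\dots,z^{-m_n})\,b(z)$ with $a,b$ holomorphic near $0$, $a(0),b(0)$ invertible, and uniquely determined integers $m_1\ge\dots\ge m_n$ (the exponents). Let $k_1>\dots>k_\tau$ be the distinct exponents; $\mathcal P^\gamma=(P_1,\dots,P_\tau)$ with $P_j=\lim_{z\to0}\mathrm{graph}(z^{k_j}\gamma(z))$ in the Grassmannian of $n$-dimensional subspaces of $V\oplus V$; this is a hinge. For a subspace $P\subset V\oplus V$: $\mathrm{Ker}\,P=\{v:v\oplus0\in P\}$, $\mathrm{Dom}\,P$, $\mathrm{Im}\,P$ the projections to the first/second summands,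 $\mathrm{Indef}\,P=\{w:0\oplus w\in P\}$, $\mathrm{rk}\,P=\dim\mathrm{Dom}\,P-\dim\mathrm{Ker}\,P$. If $\dim P=n$, choose bases $f_1,\dots,f_a,g_1,\dots,g_b,h_1,\dots,h_c$ and $F_1,\dots,F_a,G_1,\dots,G_b,H_1,\dots,H_c$ of $V$ with $P$ spanned by $0\oplus F_i$, $g_j\oplus G_j$, $h_k\oplus0$; $\lambda(P):\Lambda V\to\Lambda V$ maps $f_1\wedge\dots\wedge f_a\wedge g_{i_1}\wedge\dots\wedge g_{i_s}$ ($i_1<\dots<i_s$) to $F_1\wedge\dots\wedge F_a\wedge G_{i_1}\wedge\dots\wedge G_{i_s}$ and kills the other basis monomials; it is defined up to a nonzero scalar; $\lambda^m(P)$ is its restriction to $\Lambda^mV$. A hinge is a sequence $(P_1,\dots,P_k)$ of $n$-dimensional subspaces with $\mathrm{Ker}\,P_j=\mathrm{Dom}\,P_{j+1}$, $\mathrm{Im}\,P_j=\mathrm{Indef}\,P_{j+1}$, $\mathrm{Dom}\,P_1=V$, $\mathrm{Im}\,P_k=V$, $\mathrm{rk}\,P_j>0$. Then $P_1$ is the graph of an invertible $A$; normalize $\lambda(P_1)=\lambda_{\mathrm{cha}}(A)$ and inductively $\lambda(P_{j+1})$ so that $\lambda^{s_j}(P_{j+1})=\lambda^{s_j}(P_j)$, where $s_j=\dim\mathrm{Im}\,P_j$ (these are nonzero and proportional). $\mathcal L^m(\mathcal P)$ is the normalized $\lambda^m(P_j)$ for any $j$ with $\lambda^m(P_j)\ne0$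 (well defined). *)

theory Defs
  imports "HOL-Complex_Analysis.Complex_Analysis"
begin

text \<open>Vectors of C^N are functions nat => complex vanishing at
  coordinates >= N. Matrices are functions nat => nat => complex (only entries
  with indices < N matter). V = C^n, and V (+) V is identified with C^(2n):
  the first summand is coordinates 0..n-1, the second is coordinates n..2n-1.
  The exterior algebra Lambda V has the basis e_I (I a subset of {0..<n},
  e_I = e_i1 ^ ... ^ e_ik with i1 < ... < ik); an element of Lambda V is its
  coordinate function nat set => complex, and a linear map of Lambda V is its
  matrix nat set => nat set => complex in this basis.\<close>

type_synonym cvec = "nat \<Rightarrow> complex"
type_synonym cmat = "nat \<Rightarrow> nat \<Rightarrow> complex"

definition vecs :: "nat \<Rightarrow> cvec set" where
  "vecs N = {v. \<forall>i\<ge>N. v i = 0}"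

definition cspan :: "cvec list \<Rightarrow> cvec set" where
  "cspan ws = {(\<lambda>i. \<Sum>k<length ws. c k * (ws ! k) i) | c. True}"

definition lin_indep :: "cvec list \<Rightarrow> bool" where
  "lin_indep ws = (\<forall>c. (\<forall>i. (\<Sum>k<length ws. c k * (ws ! k) i) = 0) \<longrightarrow> (\<forall>k<length ws. c k = 0))"

definition is_subspace_dim :: "nat \<Rightarrow> cvec set \<Rightarrow> nat \<Rightarrow> bool" where
  "is_subspace_dim N S d = (\<exists>ws. length ws = d \<and> set ws \<subseteq> vecs N \<and> lin_indep ws \<and> cspan ws = S)"

definition cdim :: "nat \<Rightarrow> cvec set \<Rightarrow> nat" where
  "cdim N S = (LEAST d. is_subspace_dim N S d)"

definition mdet :: "nat \<Rightarrow> cmat \<Rightarrow> complex" where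
  "mdet N M = (\<Sum>p | p permutes {..<N}. of_int (sign p) * (\<Prod>i<N. M i (p i)))"

definition mvec :: "nat \<Rightarrow> cmat \<Rightarrow> cvec \<Rightarrow> cvec" where
  "mvec N M v = (\<lambda>i. if i < N then (\<Sum>k<N. M i k * v k) else 0)"

definition cinner :: "nat \<Rightarrow> cvec \<Rightarrow> cvec \<Rightarrow> complex" where
  "cinner N u v = (\<Sum>i<N. u i * cnj (v i))"

definition oproj :: "nat \<Rightarrow> cvec set \<Rightarrow> cmat" where
  "oproj N S = (THE Q. (\<forall>i j. Q i j \<noteq> 0 \<longrightarrow> i < N \<and> j < N) \<and>
       (\<forall>x\<in>vecs N. mvec N Q x \<in> S \<and> (\<forall>y\<in>S. cinner N (\<lambda>i. x i - mvec N Q x i) y = 0)))"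

text \<open>Convergence in the Grassmannian of subspaces of C^N (gap topology:
  convergence of the orthogonal projections).\<close>
definition grass_tendsto :: "nat \<Rightarrow> ('a \<Rightarrow> cvec set) \<Rightarrow> cvec set \<Rightarrow> 'a filter \<Rightarrow> bool" where
  "grass_tendsto N S P F = (\<forall>i<N. \<forall>j<N. ((\<lambda>z. oproj N (S z) i j) \<longlongrightarrow> oproj N P i j) F)"

definition join :: "nat \<Rightarrow> cvec \<Rightarrow> cvec \<Rightarrow> cvec" where
  "join n v w = (\<lambda>i. if i < n then v i else if i < 2 * n then w (i - n) else 0)"

definition graph :: "nat \<Rightarrow> cmat \<Rightarrow> cvec set" where
  "graph n A = {join n v (mvec n A v) | v. v \<in> vecs n}"

definition Ker :: "nat \<Rightarrow> cvec set \<Rightarrow> cvec set" where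
  "Ker n P = {v \<in> vecs n. join n v (\<lambda>_. 0) \<in> P}"
definition Dom :: "nat \<Rightarrow> cvec set \<Rightarrow> cvec set" where
  "Dom n P = {v \<in> vecs n. \<exists>w\<in>vecs n. join n v w \<in> P}"
definition Im :: "nat \<Rightarrow> cvec set \<Rightarrow> cvec set" where
  "Im n P = {w \<in> vecs n. \<exists>v\<in>vecs n. join n v w \<in> P}"
definition Indef :: "nat \<Rightarrow> cvec set \<Rightarrow> cvec set" where
  "Indef n P = {w \<in> vecs n. join n (\<lambda>_. 0) w \<in> P}"

definition ksub :: "nat \<Rightarrow> nat \<Rightarrow> nat set set" where
  "ksub n k = {I. I \<subseteq> {..<n} \<and> card I = k}"

text \<open>Coordinates of v_1 ^ ... ^ v_k in the basis e_I.\<close>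
definition wedge :: "nat \<Rightarrow> cvec list \<Rightarrow> nat set \<Rightarrow> complex" where
  "wedge n vs I = (if I \<subseteq> {..<n} \<and> card I = length vs
     then mdet (length vs) (\<lambda>r c. (vs ! c) (sorted_list_of_set I ! r)) else 0)"

definition ext_apply :: "nat \<Rightarrow> (nat set \<Rightarrow> nat set \<Rightarrow> complex) \<Rightarrow> (nat set \<Rightarrow> complex) \<Rightarrow> nat set \<Rightarrow> complex" where
  "ext_apply n M x = (\<lambda>I. \<Sum>J\<in>Pow {..<n}. M I J * x J)"

text \<open>lambda_cha(A): the linear map of Lambda V sending e_J = e_j1 ^ ... ^ e_jk
  to A e_j1 ^ ... ^ A e_jk.\<close>
definition lam_cha :: "nat \<Rightarrow> cmat \<Rightarrow> nat set \<Rightarrow> nat set \<Rightarrow> complex" where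
  "lam_cha n A I J = wedge n (map (\<lambda>k i. if i < n then A i k else 0) (sorted_list_of_set J)) I"

text \<open>M is a (representative of) lambda(P): there are bases f,g,h and F,G,H of V
  with P spanned by 0(+)F_i, g_j(+)G_j, h_k(+)0, and M maps the monomial
  f_1^..^f_a^g_i1^..^g_is to F_1^..^F_a^G_i1^..^G_is and kills the other
  basis monomials of u = f@g@h.\<close>
definition is_lambda :: "nat \<Rightarrow> cvec set \<Rightarrow> (nat set \<Rightarrow> nat set \<Rightarrow> complex) \<Rightarrow> bool" where
  "is_lambda n P M = (\<exists>f g h F G H.
     length f + length g + length h = n \<and> length F = length f \<and>
     length G = length g \<and> length H = length h \<and>
     set (f @ g @ h) \<subseteq> vecs n \<and> lin_indep (f @ g @ h) \<and>
     set (F @ G @ H) \<subseteq> vecs n \<and> lin_indep (F @ G @ H) \<and>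
     P = cspan (map (join n (\<lambda>_. 0)) F @ map2 (join n) g G @ map (\<lambda>v. join n v (\<lambda>_. 0)) h) \<and>
     (\<forall>T\<subseteq>{..<n}. \<forall>I\<subseteq>{..<n}.
        ext_apply n M (wedge n (map (\<lambda>k. (f @ g @ h) ! k) (sorted_list_of_set T))) I =
        (if {..<length f} \<subseteq> T \<and> T \<subseteq> {..<length f + length g}
         then wedge n (map (\<lambda>k. (F @ G @ H) ! k) (sorted_list_of_set T)) I else 0)))"

text \<open>Normalized family (lambda(P_1), ..., lambda(P_k)) for a hinge (P_1,...,P_k)
  (indices shifted to 0,...,k-1).\<close>
definition normalized_lambdas :: "nat \<Rightarrow> cvec set list \<Rightarrow> (nat set \<Rightarrow> nat set \<Rightarrow> complex) list \<Rightarrow> bool" where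
  "normalized_lambdas n Ps Ms = (length Ms = length Ps \<and>
     (\<forall>j<length Ps. is_lambda n (Ps ! j) (Ms ! j)) \<and>
     (\<exists>A. graph n A = Ps ! 0 \<and> (\<forall>I\<subseteq>{..<n}. \<forall>J\<subseteq>{..<n}. (Ms ! 0) I J = lam_cha n A I J)) \<and>
     (\<forall>j. Suc j < length Ps \<longrightarrow>
        (\<forall>I\<in>ksub n (cdim n (Im n (Ps ! j))). \<forall>J\<in>ksub n (cdim n (Im n (Ps ! j))).
           (Ms ! Suc j) I J = (Ms ! j) I J)))"

definition meromorphic_family :: "nat \<Rightarrow> real \<Rightarrow> (complex \<Rightarrow> cmat) \<Rightarrow> bool" where
  "meromorphic_family n e \<gamma> = (e > 0 \<and>
     (\<forall>i<n. \<forall>j<n. (\<lambda>z. \<gamma> z i j) holomorphic_on (ball 0 e - {0}) \<and> not_essential (\<lambda>z. \<gamma> z i j) 0) \<and>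
     (\<forall>z. 0 < norm z \<and> norm z < e \<longrightarrow> mdet n (\<gamma> z) \<noteq> 0))"

definition has_exponents :: "nat \<Rightarrow> (complex \<Rightarrow> cmat) \<Rightarrow> (nat \<Rightarrow> int) \<Rightarrow> bool" where
  "has_exponents n \<gamma> m = ((\<forall>i j. i \<le> j \<and> j < n \<longrightarrow> m j \<le> m i) \<and>
     (\<exists>r>0. \<exists>a b.
        (\<forall>i<n. \<forall>j<n. (\<lambda>z. a z i j) holomorphic_on ball 0 r \<and> (\<lambda>z. b z i j) holomorphic_on ball 0 r) \<and>
        mdet n (a 0) \<noteq> 0 \<and> mdet n (b 0) \<noteq> 0 \<and>
        (\<forall>z. 0 < norm z \<and> norm z < r \<longrightarrow>
           (\<forall>i<n. \<forall>k<n. \<gamma> z i k = (\<Sum>l<n. a z i l * z powi (- m l) * b z l k)))))"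

definition distinct_exps :: "nat \<Rightarrow> (nat \<Rightarrow> int) \<Rightarrow> int list" where
  "distinct_exps n m = rev (sorted_list_of_set (m ` {..<n}))"

definition is_hinge_of :: "nat \<Rightarrow> (complex \<Rightarrow> cmat) \<Rightarrow> (nat \<Rightarrow> int) \<Rightarrow> cvec set list \<Rightarrow> bool" where
  "is_hinge_of n \<gamma> m Ps = (length Ps = length (distinct_exps n m) \<and>
     (\<forall>j<length Ps. is_subspace_dim (2 * n) (Ps ! j) n \<and>
        grass_tendsto (2 * n) (\<lambda>z. graph n (\<lambda>i k. z powi (distinct_exps n m ! j) * \<gamma> z i k)) (Ps ! j) (at 0)))"

end

theory Submission
  imports Defs "Jordan_Normal_Form.Determinant"
begin

lemma mdet_det: "mdet N M = det (mat N N (\<lambda>(i,j). M i j))"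
proof -
  have "\<And>p. p permutes {..<N} \<Longrightarrow> (\<Prod>i<N. M i (p i)) = (\<Prod>i = 0..<N. mat N N (\<lambda>(i,j). M i j) $$ (i, p i))"
    by (rule prod.cong) (auto simp: permutes_in_image atLeast0LessThan)
  thus ?thesis unfolding mdet_def det_def by (auto simp: atLeast0LessThan intro!: sum.cong)
qed

lemma perm_lt: "p permutes {..<N} \<Longrightarrow> x < N \<Longrightarrow> p x < N"
  using permutes_in_image[of p "{..<N}" x] by simp

lemma mdet_cong: "(\<And>i j. i < N \<Longrightarrow> j < N \<Longrightarrow> M i j = M' i j) \<Longrightarrow> mdet N M = mdet N M'"
  unfolding mdet_def
  by (intro sum.cong refl arg_cong[where f="\<lambda>x. _ * x"] prod.cong) (auto simp: perm_lt)

lemma mdet_zero_rows: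
  assumes A: "A \<subseteq> {..<N}" and B: "finite B" and c: "card B < card A"
    and z: "\<forall>r\<in>A. \<forall>c<N. c \<notin> B \<longrightarrow> M r c = 0"
  shows "mdet N M = 0"
  unfolding mdet_def
proof (rule sum.neutral, safe)
  fix p assume p: "p permutes {..<N}"
  have "\<not> p ` A \<subseteq> B"
  proof
    assume "p ` A \<subseteq> B"
    hence "card (p ` A) \<le> card B" using B by (simp add: card_mono)
    moreover have "card (p ` A) = card A" using permutes_inj_on[OF p] by (simp add: card_image)
    ultimately show False using c by simp
  qed
  then obtain r where r: "r \<in> A" "p r \<notin> B" by auto
  have "r < N" using r A by auto
  hence "p r < N" using p by (simp add: perm_lt)
  hence "M r (p r) = 0" using z r by auto
  hence "(\<Prod>i<N. M i (p i)) = 0" using \<open>r < N\<close> by (intro prod_zero) auto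
  thus "of_int (sign p) * (\<Prod>i<N. M i (p i)) = 0" by simp
qed

lemma mdet_zero_cols:
  assumes A: "A \<subseteq> {..<N}" and B: "finite B" and c: "card B < card A"
    and z: "\<forall>c\<in>A. \<forall>r<N. r \<notin> B \<longrightarrow> M r c = 0"
  shows "mdet N M = 0"
  unfolding mdet_def
proof (rule sum.neutral, safe)
  fix p assume p: "p permutes {..<N}"
  have ip: "Hilbert_Choice.inv p permutes {..<N}" using permutes_inv[OF p] .
  have "\<not> Hilbert_Choice.inv p ` A \<subseteq> B"
  proof
    assume "Hilbert_Choice.inv p ` A \<subseteq> B"
    hence "card (Hilbert_Choice.inv p ` A) \<le> card B" using B by (simp add: card_mono)
    moreover have "card (Hilbert_Choice.inv p ` A) = card A" using permutes_inj_on[OF ip] by (simp add: card_image)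
    ultimately show False using c by simp
  qed
  then obtain cc where r: "cc \<in> A" "Hilbert_Choice.inv p cc \<notin> B" by auto
  have "cc < N" using r A by auto
  hence ir: "Hilbert_Choice.inv p cc < N" using ip by (simp add: perm_lt)
  have "p (Hilbert_Choice.inv p cc) = cc" using permutes_inverses(1)[OF p] by simp
  hence "M (Hilbert_Choice.inv p cc) (p (Hilbert_Choice.inv p cc)) = 0" using z r ir by auto
  hence "(\<Prod>i<N. M i (p i)) = 0" using ir by (intro prod_zero) auto
  thus "of_int (sign p) * (\<Prod>i<N. M i (p i)) = 0" by simp
qed

lemma mdet_block_ur:
  assumes a: "a \<le> N" and z: "\<And>r c. r < a \<Longrightarrow> a \<le> c \<Longrightarrow> c < N \<Longrightarrow> M r c = 0"
  shows "mdet N M = mdet a M * mdet (N-a) (\<lambda>r c. M (a+r) (a+c))"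
proof -
  have "mat N N (\<lambda>(i,j). M i j) = four_block_mat (mat a a (\<lambda>(i,j). M i j)) (0\<^sub>m a (N-a))
      (mat (N-a) a (\<lambda>(i,j). M (a+i) j)) (mat (N-a) (N-a) (\<lambda>(i,j). M (a+i) (a+j)))"
    using a by (intro eq_matI) (auto simp: four_block_mat_def Let_def z)
  moreover have "det (four_block_mat (mat a a (\<lambda>(i,j). M i j)) (0\<^sub>m a (N-a)) (mat (N-a) a (\<lambda>(i,j). M (a+i) j)) (mat (N-a) (N-a) (\<lambda>(i,j). M (a+i) (a+j)))) = det (mat a a (\<lambda>(i,j). M i j)) * det (mat (N-a) (N-a) (\<lambda>(i,j). M (a+i) (a+j)))"
    by (rule det_four_block_mat_upper_right_zero[where m="N-a"]) auto
  ultimately have "det (mat N N (\<lambda>(i,j). M i j)) = det (mat a a (\<lambda>(i,j). M i j)) * det (mat (N-a) (N-a) (\<lambda>(i,j). M (a+i) (a+j)))"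
    by simp
  thus ?thesis by (simp add: mdet_det)
qed

lemma mdet_block_ll:
  assumes a: "a \<le> N" and z: "\<And>r c. a \<le> r \<Longrightarrow> r < N \<Longrightarrow> c < a \<Longrightarrow> M r c = 0"
  shows "mdet N M = mdet a M * mdet (N-a) (\<lambda>r c. M (a+r) (a+c))"
proof -
  have "mat N N (\<lambda>(i,j). M i j) = four_block_mat (mat a a (\<lambda>(i,j). M i j)) 
      (mat a (N-a) (\<lambda>(i,j). M i (a+j))) (0\<^sub>m (N-a) a) (mat (N-a) (N-a) (\<lambda>(i,j). M (a+i) (a+j)))"
    using a by (intro eq_matI) (auto simp: four_block_mat_def Let_def z)
  moreover have "det (four_block_mat (mat a a (\<lambda>(i,j). M i j)) (mat a (N-a) (\<lambda>(i,j). M i (a+j))) (0\<^sub>m (N-a) a) (mat (N-a) (N-a) (\<lambda>(i,j). M (a+i) (a+j)))) = det (mat a a (\<lambda>(i,j). M i j)) * det (mat (N-a) (N-a) (\<lambda>(i,j). M (a+i) (a+j)))"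
    by (rule det_four_block_mat_lower_left_zero[where m="N-a"]) auto
  ultimately have "det (mat N N (\<lambda>(i,j). M i j)) = det (mat a a (\<lambda>(i,j). M i j)) * det (mat (N-a) (N-a) (\<lambda>(i,j). M (a+i) (a+j)))"
    by simp
  thus ?thesis by (simp add: mdet_det)
qed

lemma mdet_rows_eq_zero:
  assumes "i < N" "j < N" "i \<noteq> j" "\<And>c. c < N \<Longrightarrow> M i c = M j c"
  shows "mdet N M = 0"
proof -
  have r: "row (mat N N (\<lambda>(i,j). M i j)) i = row (mat N N (\<lambda>(i,j). M i j)) j"
    using assms by (intro eq_vecI) auto
  show ?thesis unfolding mdet_det by (rule det_identical_rows[OF _ assms(3,1,2) r]) auto
qed

lemma mdet_permute_rows:
  assumes p: "p permutes {..<N}"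
  shows "mdet N (\<lambda>r c. M (p r) c) = of_int (sign p) * mdet N M"
proof -
  have p': "p permutes {0..<N}" using p by (simp add: atLeast0LessThan)
  have "mat N N (\<lambda>(i,j). mat N N (\<lambda>(i,j). M i j) $$ (p i, j)) = mat N N (\<lambda>(i,j). M (p i) j)"
    using p by (intro eq_matI) (auto simp: perm_lt)
  with det_permute_rows[OF _ p', of "mat N N (\<lambda>(i,j). M i j)"] show ?thesis
    by (simp add: mdet_det)
qed

lemma mdet_scale_rows: "mdet N (\<lambda>r c. d r * M r c) = (\<Prod>r<N. d r) * mdet N M"
  unfolding mdet_def sum_distrib_left
  by (intro sum.cong refl) (auto simp: prod.distrib mult.left_commute)


lemma ksub_facts:
  assumes "K \<in> ksub n k"
  shows "finite K" "length (sorted_list_of_set K) = k" "set (sorted_list_of_set K) = K"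
        "distinct (sorted_list_of_set K)" "K \<subseteq> {..<n}" "card K = k"
proof -
  have fin: "finite K" using assms unfolding ksub_def by (auto intro: finite_subset[of _ "{..<n}"])
  thus "finite K" "length (sorted_list_of_set K) = k" "set (sorted_list_of_set K) = K"
        "distinct (sorted_list_of_set K)" "K \<subseteq> {..<n}" "card K = k"
    using assms unfolding ksub_def by auto
qed

lemma finite_ksub: "finite (ksub n k)"
  unfolding ksub_def by (rule finite_subset[of _ "Pow {..<n}"]) auto

lemma nth_sl_image:
  assumes "K \<in> ksub n k"
  shows "inj_on (\<lambda>i. sorted_list_of_set K ! i) {..<k}" "(\<lambda>i. sorted_list_of_set K ! i) ` {..<k} = K"
proof -
  note f = ksub_facts[OF assms]
  show "inj_on (\<lambda>i. sorted_list_of_set K ! i) {..<k}"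
    using f by (intro inj_onI) (auto simp: nth_eq_iff_index_eq)
  show "(\<lambda>i. sorted_list_of_set K ! i) ` {..<k} = K"
  proof -
    have "(\<lambda>i. sorted_list_of_set K ! i) ` {..<length (sorted_list_of_set K)} = set (sorted_list_of_set K)"
      by (auto simp: set_conv_nth)
    thus ?thesis using f by simp
  qed
qed

lemma cauchy_binet:
  fixes A B :: "nat \<Rightarrow> nat \<Rightarrow> complex"
  shows "mdet k (\<lambda>r c. \<Sum>l<n. A r l * B l c) =
    (\<Sum>K\<in>ksub n k. mdet k (\<lambda>r c. A r (sorted_list_of_set K ! c)) * mdet k (\<lambda>r c. B (sorted_list_of_set K ! r) c))"
proof -
  define F where "F = PiE {..<k} (\<lambda>_. {..<n::nat})"
  define g where "g f = (\<Prod>r<k. A r (f r)) * mdet k (\<lambda>r c. B (f r) c)" for f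
  have finF: "finite F" unfolding F_def by (simp add: finite_PiE)
  have s1: "mdet k (\<lambda>r c. \<Sum>l<n. A r l * B l c) = (\<Sum>f\<in>F. g f)"
  proof -
    have "mdet k (\<lambda>r c. \<Sum>l<n. A r l * B l c) = (\<Sum>p | p permutes {..<k}. of_int (sign p) * (\<Sum>f\<in>F. \<Prod>r<k. A r (f r) * B (f r) (p r)))"
      unfolding mdet_def F_def by (simp add: prod_sum_PiE)
    also have "\<dots> = (\<Sum>p | p permutes {..<k}. \<Sum>f\<in>F. (\<Prod>r<k. A r (f r)) * (of_int (sign p) * (\<Prod>r<k. B (f r) (p r))))"
      by (simp add: sum_distrib_left prod.distrib mult_ac)
    also have "\<dots> = (\<Sum>f\<in>F. \<Sum>p | p permutes {..<k}. (\<Prod>r<k. A r (f r)) * (of_int (sign p) * (\<Prod>r<k. B (f r) (p r))))"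
      by (rule sum.swap)
    also have "\<dots> = (\<Sum>f\<in>F. g f)"
      unfolding g_def mdet_def by (simp add: sum_distrib_left)
    finally show ?thesis .
  qed
  define Fi where "Fi = {f\<in>F. inj_on f {..<k}}"
  have s2: "(\<Sum>f\<in>F. g f) = (\<Sum>f\<in>Fi. g f)"
  proof (rule sum.mono_neutral_right[OF finF])
    show "Fi \<subseteq> F" unfolding Fi_def by auto
    show "\<forall>f\<in>F - Fi. g f = 0"
    proof
      fix f assume "f \<in> F - Fi"
      then obtain i j where ij: "i < k" "j < k" "i \<noteq> j" "f i = f j" unfolding Fi_def inj_on_def by auto
      have "mdet k (\<lambda>r c. B (f r) c) = 0" by (rule mdet_rows_eq_zero[OF ij(1-3)]) (simp add: ij(4))
      thus "g f = 0" unfolding g_def by simp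
    qed
  qed
  define \<phi> where "\<phi> = (\<lambda>(K::nat set, p::nat\<Rightarrow>nat). \<lambda>r. if r < k then sorted_list_of_set K ! (p r) else undefined)"
  define \<psi> where "\<psi> = (\<lambda>f::nat\<Rightarrow>nat. (f ` {..<k}, \<lambda>r. if r < k then the_inv_into {..<k} (\<lambda>i. sorted_list_of_set (f ` {..<k}) ! i) (f r) else r))"
  define S where "S = Sigma (ksub n k) (\<lambda>_. {p. p permutes {..<k}})"
  have s3: "(\<Sum>K\<in>ksub n k. mdet k (\<lambda>r c. A r (sorted_list_of_set K ! c)) * mdet k (\<lambda>r c. B (sorted_list_of_set K ! r) c)) = (\<Sum>x\<in>S. g (\<phi> x))"
  proof -
    have "mdet k (\<lambda>r c. A r (sorted_list_of_set K ! c)) * mdet k (\<lambda>r c. B (sorted_list_of_set K ! r) c) = (\<Sum>p | p permutes {..<k}. g (\<phi> (K,p)))" if K: "K \<in> ksub n k" for K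
    proof -
      let ?s = "sorted_list_of_set K"
      have "mdet k (\<lambda>r c. A r (?s ! c)) * mdet k (\<lambda>r c. B (?s ! r) c) = (\<Sum>p | p permutes {..<k}. (\<Prod>r<k. A r (?s ! p r)) * (of_int (sign p) * mdet k (\<lambda>r c. B (?s ! r) c)))"
        unfolding mdet_def[of k "\<lambda>r c. A r (?s ! c)"] sum_distrib_right by (simp add: mult_ac)
      also have "\<dots> = (\<Sum>p | p permutes {..<k}. (\<Prod>r<k. A r (?s ! p r)) * mdet k (\<lambda>r c. B (?s ! p r) c))"
        by (intro sum.cong refl) (simp add: mdet_permute_rows[where M="\<lambda>r c. B (?s ! r) c"])
      also have "\<dots> = (\<Sum>p | p permutes {..<k}. g (\<phi> (K,p)))"
        unfolding g_def \<phi>_def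
        by (intro sum.cong refl arg_cong2[where f="(*)"] prod.cong mdet_cong) auto
      finally show ?thesis .
    qed
    hence "(\<Sum>K\<in>ksub n k. mdet k (\<lambda>r c. A r (sorted_list_of_set K ! c)) * mdet k (\<lambda>r c. B (sorted_list_of_set K ! r) c))
       = (\<Sum>K\<in>ksub n k. \<Sum>p | p permutes {..<k}. g (\<phi> (K,p)))" by (intro sum.cong) auto
    also have "\<dots> = (\<Sum>x\<in>S. g (\<phi> x))"
      unfolding S_def by (subst sum.Sigma) (auto simp: finite_ksub finite_permutations)
    finally show ?thesis .
  qed
  have s4: "(\<Sum>x\<in>S. g (\<phi> x)) = (\<Sum>f\<in>Fi. g f)"
  proof (rule sum.reindex_bij_witness[where i=\<psi> and j=\<phi>])
    show "\<phi> x \<in> Fi" if x: "x \<in> S" for x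
    proof -
      obtain K p where x: "x = (K,p)" and K: "K \<in> ksub n k" and p: "p permutes {..<k}" using x unfolding S_def by auto
      note f = ksub_facts[OF K]
      have mem: "sorted_list_of_set K ! (p r) \<in> K" if "r < k" for r
        using f perm_lt[OF p that] by (metis nth_mem)
      have "\<phi> x \<in> F" unfolding F_def x \<phi>_def
        using mem f(5) by (auto simp: PiE_def extensional_def subset_iff)
      moreover have "inj_on (\<phi> x) {..<k}"
      proof (rule inj_onI)
        fix r s assume rs: "r \<in> {..<k}" "s \<in> {..<k}" "\<phi> x r = \<phi> x s"
        hence "sorted_list_of_set K ! (p r) = sorted_list_of_set K ! (p s)" by (simp add: x \<phi>_def)
        hence "p r = p s" using f perm_lt[OF p] rs by (simp add: nth_eq_iff_index_eq)
        thus "r = s" using permutes_inj[OF p] by (simp add: inj_eq)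
      qed
      ultimately show ?thesis unfolding Fi_def by auto
    qed
    show "\<psi> (\<phi> x) = x" if x: "x \<in> S" for x
    proof -
      obtain K p where x: "x = (K,p)" and K: "K \<in> ksub n k" and p: "p permutes {..<k}" using x unfolding S_def by auto
      note f = ksub_facts[OF K] nth_sl_image[OF K]
      have im: "\<phi> x ` {..<k} = K"
      proof -
        have "\<phi> x ` {..<k} = (\<lambda>i. sorted_list_of_set K ! i) ` (p ` {..<k})"
          unfolding x \<phi>_def by (auto simp: image_iff)
        also have "\<dots> = K" using permutes_image[OF p] f by simp
        finally show ?thesis .
      qed
      have eqp: "(\<lambda>r. if r < k then the_inv_into {..<k} (\<lambda>i. sorted_list_of_set K ! i) (\<phi> x r) else r) = p"
      proof
        fix r show "(if r < k then the_inv_into {..<k} (\<lambda>i. sorted_list_of_set K ! i) (\<phi> x r) else r) = p r"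
          using f perm_lt[OF p, of r] permutes_not_in[OF p, of r]
          by (auto simp: x \<phi>_def the_inv_into_f_f)
      qed
      have "\<psi> (\<phi> x) = (\<phi> x ` {..<k}, \<lambda>r. if r < k then the_inv_into {..<k} (\<lambda>i. sorted_list_of_set (\<phi> x ` {..<k}) ! i) (\<phi> x r) else r)"
        by (simp add: \<psi>_def)
      also have "\<dots> = (K, \<lambda>r. if r < k then the_inv_into {..<k} (\<lambda>i. sorted_list_of_set K ! i) (\<phi> x r) else r)"
        by (simp only: im)
      also have "\<dots> = x" using eqp x by simp
      finally show ?thesis .
    qed
    show "\<phi> (\<psi> f) = f" if f: "f \<in> Fi" for f
    proof -
      define K where "K = f ` {..<k}"
      have fF: "f \<in> F" and inj: "inj_on f {..<k}" using f unfolding Fi_def by auto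
      have K: "K \<in> ksub n k" unfolding K_def ksub_def using fF inj by (auto simp: F_def card_image)
      note ff = ksub_facts[OF K] nth_sl_image[OF K]
      show ?thesis
      proof
        fix r show "\<phi> (\<psi> f) r = f r"
        proof (cases "r < k")
          case True
          have "f r \<in> (\<lambda>i. sorted_list_of_set K ! i) ` {..<k}" using ff True K_def by auto
          then show ?thesis using True ff unfolding \<phi>_def \<psi>_def K_def[symmetric]
            by (auto simp: f_the_inv_into_f)
        next
          case False
          then show ?thesis using fF unfolding \<phi>_def \<psi>_def F_def by (auto simp: PiE_def extensional_def)
        qed
      qed
    qed
    show "\<psi> f \<in> S" if f: "f \<in> Fi" for f
    proof -
      define K where "K = f ` {..<k}"
      have fF: "f \<in> F" and inj: "inj_on f {..<k}" using f unfolding Fi_def by auto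
      have K: "K \<in> ksub n k" unfolding K_def ksub_def using fF inj by (auto simp: F_def card_image)
      note ff = ksub_facts[OF K] nth_sl_image[OF K]
      define p where "p = (\<lambda>r. if r < k then the_inv_into {..<k} (\<lambda>i. sorted_list_of_set K ! i) (f r) else r)"
      have pin: "p r < k" if "r < k" for r
      proof -
        have "f r \<in> (\<lambda>i. sorted_list_of_set K ! i) ` {..<k}" using ff that K_def by auto
        thus ?thesis unfolding p_def using that the_inv_into_into[OF ff(7), of "f r" "{..<k}"] by auto
      qed
      have pinj: "inj_on p {..<k}"
      proof (rule inj_onI)
        fix r s assume rs: "r \<in> {..<k}" "s \<in> {..<k}" "p r = p s"
        have "f r \<in> (\<lambda>i. sorted_list_of_set K ! i) ` {..<k}" "f s \<in> (\<lambda>i. sorted_list_of_set K ! i) ` {..<k}"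
          using ff rs K_def by auto
        hence "f r = f s" using rs unfolding p_def
          by (metis (no_types, lifting) f_the_inv_into_f ff(7) lessThan_iff)
        thus "r = s" using inj rs by (auto simp: inj_on_def)
      qed
      have "p ` {..<k} = {..<k}" using pin pinj by (intro endo_inj_surj) auto
      hence "bij_betw p {..<k} {..<k}" using pinj by (simp add: bij_betw_def)
      hence "p permutes {..<k}" by (rule bij_imp_permutes) (simp add: p_def)
      thus ?thesis unfolding S_def \<psi>_def using K K_def p_def by auto
    qed
  qed simp
  show ?thesis using s1 s2 s3 s4 by simp
qed


definition mm :: "nat \<Rightarrow> cmat \<Rightarrow> cmat \<Rightarrow> cmat" where
  "mm n X Y = (\<lambda>i j. \<Sum>l<n. X i l * Y l j)"

definition idm :: cmat where "idm = (\<lambda>i j. if i = j then 1 else 0)"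

abbreviation sl :: "nat set \<Rightarrow> nat list" where "sl I \<equiv> sorted_list_of_set I"

lemma sub_ksub: "I \<subseteq> {..<n} \<Longrightarrow> I \<in> ksub n (card I)"
  unfolding ksub_def by auto

lemma lam_cha_eq:
  assumes I: "I \<subseteq> {..<n}" and J: "J \<subseteq> {..<n}"
  shows "lam_cha n X I J = (if card I = card J then mdet (card J) (\<lambda>r c. X (sl I ! r) (sl J ! c)) else 0)"
proof -
  note fI = ksub_facts[OF sub_ksub[OF I]] and fJ = ksub_facts[OF sub_ksub[OF J]]
  have lt: "sl I ! r < n" if "r < card I" for r using fI that by (metis nth_mem subsetD lessThan_iff)
  show ?thesis
    unfolding lam_cha_def wedge_def using I fJ
    by (auto intro!: mdet_cong simp: lt)
qed

lemma lam_cha_zero: "I \<subseteq> {..<n} \<Longrightarrow> J \<subseteq> {..<n} \<Longrightarrow> card I \<noteq> card J \<Longrightarrow> lam_cha n X I J = 0"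
  by (simp add: lam_cha_eq)

lemma lam_mult:
  assumes I: "I \<subseteq> {..<n}" and J: "J \<subseteq> {..<n}"
  shows "lam_cha n (mm n X Y) I J = (\<Sum>K\<in>Pow {..<n}. lam_cha n X I K * lam_cha n Y K J)"
proof (cases "card I = card J")
  case True
  define k where "k = card J"
  have "lam_cha n (mm n X Y) I J = mdet k (\<lambda>r c. \<Sum>l<n. X (sl I ! r) l * Y l (sl J ! c))"
    unfolding lam_cha_eq[OF I J] mm_def k_def using True by simp
  also have "\<dots> = (\<Sum>K\<in>ksub n k. mdet k (\<lambda>r c. X (sl I ! r) (sl K ! c)) * mdet k (\<lambda>r c. Y (sl K ! r) (sl J ! c)))"
    by (rule cauchy_binet)
  also have "\<dots> = (\<Sum>K\<in>ksub n k. lam_cha n X I K * lam_cha n Y K J)"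
    by (intro sum.cong refl) (auto simp: lam_cha_eq I J ksub_def True k_def)
  also have "\<dots> = (\<Sum>K\<in>Pow {..<n}. lam_cha n X I K * lam_cha n Y K J)"
  proof (rule sum.mono_neutral_left)
    show "ksub n k \<subseteq> Pow {..<n}" unfolding ksub_def by auto
    show "\<forall>i\<in>Pow {..<n} - ksub n k. lam_cha n X I i * lam_cha n Y i J = 0"
      using True I J unfolding ksub_def k_def by (auto simp: lam_cha_zero)
  qed auto
  finally show ?thesis .
next
  case False
  have "lam_cha n X I K * lam_cha n Y K J = 0" if "K \<subseteq> {..<n}" for K
    using False I J that by (cases "card K = card I") (auto simp: lam_cha_zero)
  hence "(\<Sum>K\<in>Pow {..<n}. lam_cha n X I K * lam_cha n Y K J) = 0" by (intro sum.neutral) auto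
  thus ?thesis using False by (simp add: lam_cha_zero I J)
qed

lemma mdet_idm: "mdet k (\<lambda>r c. if r = c then 1 else 0) = 1"
proof -
  have "mat k k (\<lambda>(i,j). if i = j then (1::complex) else 0) = 1\<^sub>m k" by (intro eq_matI) auto
  thus ?thesis by (simp add: mdet_det)
qed

lemma lam_id:
  assumes I: "I \<subseteq> {..<n}" and J: "J \<subseteq> {..<n}"
  shows "lam_cha n idm I J = (if I = J then 1 else 0)"
proof -
  note fI = ksub_facts[OF sub_ksub[OF I]] and fJ = ksub_facts[OF sub_ksub[OF J]]
  show ?thesis
  proof (cases "I = J")
    case True
    have "lam_cha n idm I J = mdet (card J) (\<lambda>r c. if r = c then 1 else 0)"
      unfolding lam_cha_eq[OF I J] idm_def using True fJ
      by (auto intro!: mdet_cong simp: nth_eq_iff_index_eq)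
    thus ?thesis using True mdet_idm by simp
  next
    case False
    show ?thesis
    proof (cases "card I = card J")
      case True
      have "\<not> J \<subseteq> I"
      proof
        assume "J \<subseteq> I" hence "J = I" using True fI by (simp add: card_subset_eq)
        thus False using False by simp
      qed
      then obtain j where j: "j \<in> J" "j \<notin> I" by auto
      then obtain c0 where c0: "c0 < card J" "sl J ! c0 = j" using fJ by (metis in_set_conv_nth)
      have memI: "\<forall>r<card J. sl I ! r \<in> I" using fI True by (metis nth_mem)
      have "mdet (card J) (\<lambda>r c. idm (sl I ! r) (sl J ! c)) = 0"
      proof (rule mdet_zero_cols[of "{c0}" _ "{}"])
        show "\<forall>c\<in>{c0}. \<forall>r<card J. r \<notin> {} \<longrightarrow> idm (sl I ! r) (sl J ! c) = 0"
          using c0 j memI unfolding idm_def by auto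
      qed (use c0 in auto)
      thus ?thesis using False True by (simp add: lam_cha_eq I J)
    next
      case False
      thus ?thesis by (auto simp: lam_cha_zero I J)
    qed
  qed
qed

lemma prod_sl: assumes I: "I \<subseteq> {..<n}" shows "(\<Prod>r<card I. d (sl I ! r)) = (\<Prod>i\<in>I. d i)"
proof -
  note f = nth_sl_image[OF sub_ksub[OF I]]
  have "(\<Prod>i\<in>I. d i) = (\<Prod>i\<in>(\<lambda>r. sl I ! r) ` {..<card I}. d i)" using f by simp
  also have "\<dots> = (\<Prod>r<card I. d (sl I ! r))" by (rule prod.reindex[OF f(1), unfolded comp_def])
  finally show ?thesis by simp
qed

lemma lam_scale_rows:
  assumes I: "I \<subseteq> {..<n}" and J: "J \<subseteq> {..<n}"
  shows "lam_cha n (\<lambda>i j. d i * X i j) I J = (\<Prod>i\<in>I. d i) * lam_cha n X I J"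
proof (cases "card I = card J")
  case True
  have "lam_cha n (\<lambda>i j. d i * X i j) I J = mdet (card I) (\<lambda>r c. d (sl I ! r) * X (sl I ! r) (sl J ! c))"
    using True by (simp add: lam_cha_eq I J)
  also have "\<dots> = (\<Prod>r<card I. d (sl I ! r)) * mdet (card I) (\<lambda>r c. X (sl I ! r) (sl J ! c))"
    by (rule mdet_scale_rows)
  moreover have "(\<Prod>r<card I. d (sl I ! r)) = prod d I" using prod_sl[OF I] .
  ultimately show ?thesis using True by (simp add: lam_cha_eq I J)
qed (simp add: lam_cha_zero I J)

lemma lam_cong:
  assumes "\<And>i j. i < n \<Longrightarrow> j < n \<Longrightarrow> X i j = Y i j" and I: "I \<subseteq> {..<n}" and J: "J \<subseteq> {..<n}"
  shows "lam_cha n X I J = lam_cha n Y I J"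
proof -
  note fI = ksub_facts[OF sub_ksub[OF I]] and fJ = ksub_facts[OF sub_ksub[OF J]]
  have "sl I ! r < n" if "r < card I" for r using fI that by (metis nth_mem subsetD lessThan_iff)
  moreover have "sl J ! r < n" if "r < card J" for r using fJ that by (metis nth_mem subsetD lessThan_iff)
  ultimately show ?thesis unfolding lam_cha_eq[OF I J] using assms(1)
    by (auto intro!: mdet_cong)
qed

lemma mdet_tendsto:
  assumes "\<And>i j. i < N \<Longrightarrow> j < N \<Longrightarrow> ((\<lambda>z. M z i j) \<longlongrightarrow> M0 i j) F"
  shows "((\<lambda>z. mdet N (M z)) \<longlongrightarrow> mdet N M0) F"
  unfolding mdet_def
proof (rule tendsto_sum)
  fix p assume p: "p \<in> {p. p permutes {..<N}}"
  have "((\<lambda>z. \<Prod>i<N. M z i (p i)) \<longlongrightarrow> (\<Prod>i<N. M0 i (p i))) F"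
  proof (rule tendsto_prod)
    fix i assume "i \<in> {..<N}"
    moreover have "p i < N" using perm_lt[of p N i] p \<open>i \<in> {..<N}\<close> by auto
    ultimately show "((\<lambda>z. M z i (p i)) \<longlongrightarrow> M0 i (p i)) F" using assms by auto
  qed
  thus "((\<lambda>z. of_int (sign p) * (\<Prod>i<N. M z i (p i))) \<longlongrightarrow> of_int (sign p) * (\<Prod>i<N. M0 i (p i))) F"
    by (rule tendsto_mult[OF tendsto_const])
qed

lemma lam_tendsto:
  assumes "\<And>i j. i < n \<Longrightarrow> j < n \<Longrightarrow> ((\<lambda>z. X z i j) \<longlongrightarrow> X0 i j) F" and I: "I \<subseteq> {..<n}" and J: "J \<subseteq> {..<n}"
  shows "((\<lambda>z. lam_cha n (X z) I J) \<longlongrightarrow> lam_cha n X0 I J) F"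
proof -
  note fI = ksub_facts[OF sub_ksub[OF I]] and fJ = ksub_facts[OF sub_ksub[OF J]]
  have "sl I ! r < n" if "r < card I" for r using fI that by (metis nth_mem subsetD lessThan_iff)
  moreover have "sl J ! r < n" if "r < card J" for r using fJ that by (metis nth_mem subsetD lessThan_iff)
  ultimately show ?thesis unfolding lam_cha_eq[OF I J] using assms(1)
    by (auto intro!: mdet_tendsto)
qed

definition minv :: "nat \<Rightarrow> cmat \<Rightarrow> cmat" where
  "minv n X = (\<lambda>i j. if i < n \<and> j < n then adj_mat (mat n n (\<lambda>(i,j). X i j)) $$ (i,j) / mdet n X else 0)"

lemma minv_right:
  assumes d: "mdet n X \<noteq> 0" and ij: "i < n" "j < n"
  shows "mm n X (minv n X) i j = idm i j"
proof -
  let ?A = "mat n n (\<lambda>(i,j). X i j)"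
  have "?A * adj_mat ?A = det ?A \<cdot>\<^sub>m 1\<^sub>m n" by (rule adj_mat) auto
  hence "(?A * adj_mat ?A) $$ (i,j) = (det ?A \<cdot>\<^sub>m 1\<^sub>m n) $$ (i,j)" by simp
  hence "(\<Sum>l<n. X i l * adj_mat ?A $$ (l,j)) = mdet n X * idm i j"
    using ij adj_mat(1)[of ?A n] by (auto simp: scalar_prod_def atLeast0LessThan mdet_det idm_def)
  hence "(\<Sum>l<n. X i l * (adj_mat ?A $$ (l,j) / mdet n X)) = idm i j"
    using d by (simp add: sum_divide_distrib[symmetric] times_divide_eq_right)
  thus ?thesis unfolding mm_def minv_def using ij by (auto intro!: sum.cong)
qed

lemma minv_left:
  assumes d: "mdet n X \<noteq> 0" and ij: "i < n" "j < n"
  shows "mm n (minv n X) X i j = idm i j"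
proof -
  let ?A = "mat n n (\<lambda>(i,j). X i j)"
  have "adj_mat ?A * ?A = det ?A \<cdot>\<^sub>m 1\<^sub>m n" by (rule adj_mat) auto
  hence "(adj_mat ?A * ?A) $$ (i,j) = (det ?A \<cdot>\<^sub>m 1\<^sub>m n) $$ (i,j)" by simp
  hence "(\<Sum>l<n. adj_mat ?A $$ (i,l) * X l j) = mdet n X * idm i j"
    using ij adj_mat(1)[of ?A n] by (auto simp: scalar_prod_def atLeast0LessThan mdet_det idm_def)
  hence "(\<Sum>l<n. (adj_mat ?A $$ (i,l) / mdet n X) * X l j) = idm i j"
    using d by (simp add: sum_divide_distrib[symmetric] times_divide_eq_left)
  thus ?thesis unfolding mm_def minv_def using ij by (auto intro!: sum.cong)
qed

lemma adj_entry:
  assumes ij: "i < n" "j < n"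
  shows "adj_mat (mat n n (\<lambda>(i,j). X i j)) $$ (i,j) = (-1)^(j+i) *
     mdet (n-1) (\<lambda>r c. X (if r < j then r else Suc r) (if c < i then c else Suc c))"
proof -
  have "mat_delete (mat n n (\<lambda>(i,j). X i j)) j i = mat (n-1) (n-1) (\<lambda>(r,c). X (if r < j then r else Suc r) (if c < i then c else Suc c))"
    unfolding mat_delete_def by (intro eq_matI) auto
  thus ?thesis unfolding adj_mat_def cofactor_def using ij by (simp add: mdet_det)
qed

lemma minv_tendsto:
  assumes "\<And>i j. i < n \<Longrightarrow> j < n \<Longrightarrow> ((\<lambda>z. X z i j) \<longlongrightarrow> X0 i j) F" and d: "mdet n X0 \<noteq> 0"
  shows "((\<lambda>z. minv n (X z) i j) \<longlongrightarrow> minv n X0 i j) F"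
proof (cases "i < n \<and> j < n")
  case True
  have "((\<lambda>z. mdet (n-1) (\<lambda>r c. X z (if r < j then r else Suc r) (if c < i then c else Suc c))) \<longlongrightarrow>
     mdet (n-1) (\<lambda>r c. X0 (if r < j then r else Suc r) (if c < i then c else Suc c))) F"
    by (rule mdet_tendsto) (use True in \<open>auto intro!: assms(1)\<close>)
  moreover have "((\<lambda>z. mdet n (X z)) \<longlongrightarrow> mdet n X0) F" by (rule mdet_tendsto) (rule assms(1))
  ultimately show ?thesis unfolding minv_def using True d
    by (simp add: adj_entry) (intro tendsto_intros, auto)
next
  case False
  hence "\<And>z. minv n (X z) i j = 0" "minv n X0 i j = 0" by (auto simp: minv_def)
  thus ?thesis by simp
qed


lemma cspan_mem: assumes "x \<in> set ws" shows "x \<in> cspan ws"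
proof -
  obtain k0 where k0: "k0 < length ws" "ws ! k0 = x" using assms by (auto simp: in_set_conv_nth)
  have e: "(if k = k0 then 1 else 0) * v = (if k = k0 then v else (0::complex))" for k v by simp
  have "(\<lambda>i. \<Sum>k<length ws. (if k = k0 then 1 else 0) * (ws ! k) i) = x"
    using k0 by (intro ext) (simp only: e sum.delta' finite_lessThan, simp)
  thus ?thesis unfolding cspan_def by (intro CollectI exI[of _ "\<lambda>k. if k = k0 then 1 else 0"]) simp
qed

lemma cspanI: "x = (\<lambda>i. \<Sum>k<length ws. c k * (ws ! k) i) \<Longrightarrow> x \<in> cspan ws"
  unfolding cspan_def by blast

lemma cspan_zero: "(\<lambda>i. 0) \<in> cspan ws"
  unfolding cspan_def by (rule CollectI, rule exI[of _ "\<lambda>_. 0"]) auto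

lemma cspan_add: assumes "x \<in> cspan ws" "y \<in> cspan ws" shows "(\<lambda>i. x i + y i) \<in> cspan ws"
proof -
  obtain a b where x: "x = (\<lambda>i. \<Sum>k<length ws. a k * (ws ! k) i)" and y: "y = (\<lambda>i. \<Sum>k<length ws. b k * (ws ! k) i)"
    using assms unfolding cspan_def by auto
  have "(\<lambda>i. x i + y i) = (\<lambda>i. \<Sum>k<length ws. (a k + b k) * (ws ! k) i)"
    unfolding x y by (simp add: sum.distrib[symmetric] distrib_right)
  thus ?thesis by (rule cspanI)
qed

lemma cspan_smult: assumes "x \<in> cspan ws" shows "(\<lambda>i. c * x i) \<in> cspan ws"
proof -
  obtain a where x: "x = (\<lambda>i. \<Sum>k<length ws. a k * (ws ! k) i)"
    using assms unfolding cspan_def by auto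
  have "(\<lambda>i. c * x i) = (\<lambda>i. \<Sum>k<length ws. (c * a k) * (ws ! k) i)"
    unfolding x by (simp add: sum_distrib_left mult.assoc)
  thus ?thesis by (rule cspanI)
qed

lemma cspan_diff: "x \<in> cspan ws \<Longrightarrow> y \<in> cspan ws \<Longrightarrow> (\<lambda>i. x i - y i) \<in> cspan ws"
  using cspan_add[of x ws "\<lambda>i. (-1) * y i"] cspan_smult[of y ws "-1"] by simp

lemma cspan_sum: "finite A \<Longrightarrow> (\<And>k. k \<in> A \<Longrightarrow> x k \<in> cspan ws) \<Longrightarrow> (\<lambda>i. \<Sum>k\<in>A. c k * x k i) \<in> cspan ws"
proof (induction A rule: finite_induct)
  case empty thus ?case by (simp add: cspan_zero)
next
  case (insert a A)
  have "(\<lambda>i. c a * x a i + (\<Sum>k\<in>A. c k * x k i)) \<in> cspan ws"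
    using insert by (intro cspan_add cspan_smult) auto
  thus ?case using insert by simp
qed

lemma cspan_mono: assumes "set us \<subseteq> cspan ws" shows "cspan us \<subseteq> cspan ws"
proof
  fix y assume "y \<in> cspan us"
  then obtain c where y: "y = (\<lambda>i. \<Sum>k<length us. c k * (us ! k) i)" unfolding cspan_def by auto
  show "y \<in> cspan ws" unfolding y using assms by (intro cspan_sum) auto
qed

lemma cspan_vecs: assumes "set ws \<subseteq> vecs N" shows "cspan ws \<subseteq> vecs N"
proof
  fix y assume "y \<in> cspan ws"
  then obtain c where y: "y = (\<lambda>i. \<Sum>k<length ws. c k * (ws ! k) i)" unfolding cspan_def by auto
  have "(ws ! k) i = 0" if "k < length ws" "i \<ge> N" for k i
  proof -
    have "ws ! k \<in> vecs N" using assms nth_mem[OF that(1)] by auto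
    thus ?thesis using that(2) by (simp add: vecs_def)
  qed
  thus "y \<in> vecs N" unfolding y vecs_def by auto
qed

lemma cspan_Cons: "y \<in> cspan (w # ws) \<longleftrightarrow> (\<exists>c0 y'. y' \<in> cspan ws \<and> y = (\<lambda>i. c0 * w i + y' i))"
proof
  assume "y \<in> cspan (w # ws)"
  then obtain c where y: "y = (\<lambda>i. \<Sum>k<length (w#ws). c k * ((w#ws) ! k) i)" unfolding cspan_def by auto
  have "y = (\<lambda>i. c 0 * w i + (\<Sum>k<length ws. c (Suc k) * (ws ! k) i))"
    unfolding y by (simp only: length_Cons sum.lessThan_Suc_shift nth_Cons_0 nth_Cons_Suc)
  moreover have "(\<lambda>i. \<Sum>k<length ws. c (Suc k) * (ws ! k) i) \<in> cspan ws" by (rule cspanI) simp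
  ultimately show "\<exists>c0 y'. y' \<in> cspan ws \<and> y = (\<lambda>i. c0 * w i + y' i)" by blast
next
  assume "\<exists>c0 y'. y' \<in> cspan ws \<and> y = (\<lambda>i. c0 * w i + y' i)"
  then obtain c0 y' where y': "y' \<in> cspan ws" "y = (\<lambda>i. c0 * w i + y' i)" by auto
  have "set ws \<subseteq> cspan (w # ws)" by (auto intro: cspan_mem)
  hence "y' \<in> cspan (w # ws)" using cspan_mono y'(1) by blast
  moreover have "w \<in> cspan (w # ws)" by (auto intro: cspan_mem)
  ultimately show "y \<in> cspan (w # ws)" unfolding y'(2) by (intro cspan_add cspan_smult)
qed

lemma cinner_add_left: "cinner N (\<lambda>i. a i + b i) y = cinner N a y + cinner N b y"
  unfolding cinner_def by (simp add: distrib_right sum.distrib)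
lemma cinner_diff_left: "cinner N (\<lambda>i. a i - b i) y = cinner N a y - cinner N b y"
  unfolding cinner_def by (simp add: left_diff_distrib sum_subtractf)
lemma cinner_scale_left: "cinner N (\<lambda>i. c * a i) y = c * cinner N a y"
  unfolding cinner_def by (simp add: sum_distrib_left mult.assoc)
lemma cinner_add_right: "cinner N a (\<lambda>i. x i + y i) = cinner N a x + cinner N a y"
  unfolding cinner_def by (simp add: distrib_left sum.distrib)
lemma cinner_scale_right: "cinner N a (\<lambda>i. c * y i) = cnj c * cinner N a y"
  unfolding cinner_def by (simp add: sum_distrib_left mult_ac)
lemma cinner_sym: "cinner N a b = cnj (cinner N b a)"
  unfolding cinner_def by (simp add: mult.commute)
lemma cinner_cong_right: "(\<And>i. i < N \<Longrightarrow> x i = y i) \<Longrightarrow> cinner N a x = cinner N a y"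
  unfolding cinner_def by simp
lemma cinner_zero_right: "cinner N a (\<lambda>i. 0) = 0"
  unfolding cinner_def by simp

lemma cinner_self_zero: assumes "cinner N d d = 0" "i < N" shows "d i = 0"
proof -
  have e: "d j * cnj (d j) = complex_of_real ((cmod (d j))\<^sup>2)" for j by (rule complex_norm_square[symmetric])
  have "cinner N d d = complex_of_real (\<Sum>j<N. (cmod (d j))\<^sup>2)"
    by (simp only: cinner_def e of_real_sum)
  hence "complex_of_real (\<Sum>j<N. (cmod (d j))\<^sup>2) = 0" using assms(1) by metis
  hence "(\<Sum>j<N. (cmod (d j))\<^sup>2) = 0" by (simp only: of_real_eq_0_iff)
  hence "\<forall>j\<in>{..<N}. (cmod (d j))\<^sup>2 = 0" by (subst (asm) sum_nonneg_eq_0_iff) auto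
  thus ?thesis using assms(2) by auto
qed

lemma orth_cspan:
  assumes "\<And>v. v \<in> set ws \<Longrightarrow> cinner N r v = 0" and "y \<in> cspan ws"
  shows "cinner N r y = 0"
proof -
  obtain c where y: "y = (\<lambda>i. \<Sum>k<length ws. c k * (ws ! k) i)" using assms(2) unfolding cspan_def by auto
  have "cinner N r y = (\<Sum>k<length ws. cnj (c k) * cinner N r (ws ! k))"
    unfolding y cinner_def by (simp add: sum_distrib_left sum.swap[of _ "{..<N}"] mult_ac)
  also have "\<dots> = 0" using assms(1) by (auto intro!: sum.neutral)
  finally show ?thesis .
qed

definition ospec :: "nat \<Rightarrow> cvec set \<Rightarrow> cmat \<Rightarrow> bool" where
  "ospec N S Q = ((\<forall>i j. Q i j \<noteq> 0 \<longrightarrow> i < N \<and> j < N) \<and>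
       (\<forall>x\<in>vecs N. mvec N Q x \<in> S \<and> (\<forall>y\<in>S. cinner N (\<lambda>i. x i - mvec N Q x i) y = 0)))"

lemma mvec_vecs: "mvec N Q x \<in> vecs N" unfolding mvec_def vecs_def by auto

lemma ospec_exists: "set ws \<subseteq> vecs N \<Longrightarrow> \<exists>Q. ospec N (cspan ws) Q"
proof (induction ws)
  case Nil
  have "cspan [] = {\<lambda>i. 0}" unfolding cspan_def by auto
  moreover have "mvec N (\<lambda>i j. 0) x = (\<lambda>i. 0)" for x unfolding mvec_def by auto
  ultimately have "ospec N (cspan []) (\<lambda>i j. 0)" unfolding ospec_def by (auto simp: cinner_zero_right)
  thus ?case by blast
next
  case (Cons w ws)
  then obtain Q where Q: "ospec N (cspan ws) Q" and w: "w \<in> vecs N" and ws: "set ws \<subseteq> vecs N" by auto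
  define u where "u = (\<lambda>i. w i - mvec N Q w i)"
  define nu where "nu = cinner N u u"
  define Q' where "Q' = (\<lambda>i j. if i < N \<and> j < N then Q i j + u i * cnj (u j) / nu else 0)"
  have Qz: "Q i j = 0" if "\<not> (i < N \<and> j < N)" for i j using Q that unfolding ospec_def by blast
  have Qm: "mvec N Q x \<in> cspan ws" "\<forall>y\<in>cspan ws. cinner N (\<lambda>i. x i - mvec N Q x i) y = 0" if "x \<in> vecs N" for x
    using Q that unfolding ospec_def by auto
  have uv: "u \<in> vecs N" using w unfolding u_def vecs_def mvec_def by auto
  have mQ': "mvec N Q' x = (\<lambda>i. mvec N Q x i + (cinner N x u / nu) * u i)" for x
  proof
    fix i show "mvec N Q' x i = mvec N Q x i + (cinner N x u / nu) * u i"
    proof (cases "i < N")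
      case True
      thus ?thesis unfolding mvec_def Q'_def cinner_def
        by (simp add: distrib_left sum.distrib sum_distrib_left sum_divide_distrib mult_ac)
    next
      case False
      thus ?thesis using uv unfolding mvec_def vecs_def by auto
    qed
  qed
  have wsub: "cspan ws \<subseteq> cspan (w # ws)" by (rule cspan_mono) (auto intro: cspan_mem)
  have wmem: "w \<in> cspan (w # ws)" by (auto intro: cspan_mem)
  have umem: "u \<in> cspan (w # ws)" unfolding u_def using wsub Qm(1)[OF w] wmem by (intro cspan_diff) auto
  have uorth: "cinner N u y = 0" if "y \<in> cspan ws" for y using Qm(2)[OF w] that unfolding u_def by auto
  have main: "mvec N Q' x \<in> cspan (w # ws) \<and> (\<forall>y\<in>cspan (w # ws). cinner N (\<lambda>i. x i - mvec N Q' x i) y = 0)"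
    if x: "x \<in> vecs N" for x
  proof (intro conjI ballI)
    show "mvec N Q' x \<in> cspan (w # ws)" unfolding mQ' using Qm(1)[OF x] wsub umem
      by (intro cspan_add cspan_smult) auto
    define lam where "lam = cinner N x u / nu"
    define r where "r = (\<lambda>i. x i - mvec N Q' x i)"
    have r: "r = (\<lambda>i. (x i - mvec N Q x i) - lam * u i)" unfolding r_def mQ' lam_def by auto
    have r1: "cinner N r y = 0" if "y \<in> cspan ws" for y
    proof -
      have "cinner N (\<lambda>i. x i - mvec N Q x i) y = 0" using Qm(2)[OF x] that by auto
      moreover have "cinner N u y = 0" using uorth that by auto
      ultimately show ?thesis unfolding r cinner_diff_left[of N "\<lambda>i. x i - mvec N Q x i"] cinner_scale_left by simp
    qed
    have r2: "cinner N r w = 0"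
    proof -
      have "cinner N r w = cinner N r (\<lambda>i. mvec N Q w i + u i)"
        by (rule cinner_cong_right) (simp add: u_def)
      also have "\<dots> = cinner N r (mvec N Q w) + cinner N r u" by (rule cinner_add_right)
      also have "cinner N r (mvec N Q w) = 0" using r1 Qm(1)[OF w] by simp
      also have "cinner N r u = cinner N x u - cinner N (mvec N Q x) u - lam * nu"
        unfolding r cinner_diff_left cinner_scale_left nu_def by simp
      also have "cinner N (mvec N Q x) u = 0"
        using uorth[OF Qm(1)[OF x]] by (subst cinner_sym) simp
      also have "cinner N x u - 0 - lam * nu = 0"
      proof (cases "nu = 0")
        case True
        hence "\<forall>i<N. u i = 0" using cinner_self_zero unfolding nu_def by blast
        hence "cinner N x u = 0" unfolding cinner_def by simp
        thus ?thesis by (simp add: lam_def True)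
      next
        case False thus ?thesis unfolding lam_def by simp
      qed
      finally show ?thesis by simp
    qed
    fix y assume "y \<in> cspan (w # ws)"
    then obtain c0 y' where y': "y' \<in> cspan ws" "y = (\<lambda>i. c0 * w i + y' i)" unfolding cspan_Cons by auto
    show "cinner N (\<lambda>i. x i - mvec N Q' x i) y = 0"
      unfolding r_def[symmetric] y'(2) cinner_add_right cinner_scale_right using r1[OF y'(1)] r2 by simp
  qed
  have "ospec N (cspan (w # ws)) Q'"
    unfolding ospec_def
  proof (rule conjI)
    show "\<forall>i j. Q' i j \<noteq> 0 \<longrightarrow> i < N \<and> j < N" unfolding Q'_def by (auto split: if_splits)
  qed (use main in auto)
  thus ?case by blast
qed

lemma ospec_unique:
  assumes ws: "set ws \<subseteq> vecs N" and Q1: "ospec N (cspan ws) Q1" and Q2: "ospec N (cspan ws) Q2"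
  shows "Q1 = Q2"
proof -
  have eqv: "mvec N Q1 x = mvec N Q2 x" if x: "x \<in> vecs N" for x
  proof
    fix i
    define d where "d = (\<lambda>i. mvec N Q1 x i - mvec N Q2 x i)"
    have d: "d \<in> cspan ws" unfolding d_def using Q1 Q2 x unfolding ospec_def by (intro cspan_diff) auto
    have "cinner N (\<lambda>i. x i - mvec N Q1 x i) d = 0" "cinner N (\<lambda>i. x i - mvec N Q2 x i) d = 0"
      using Q1 Q2 x d unfolding ospec_def by auto
    hence "cinner N (\<lambda>i. (x i - mvec N Q2 x i) - (x i - mvec N Q1 x i)) d = 0"
      unfolding cinner_diff_left by simp
    hence "cinner N d d = 0" unfolding d_def by (simp add: algebra_simps)
    hence "i < N \<Longrightarrow> d i = 0" using cinner_self_zero by blast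
    thus "mvec N Q1 x i = mvec N Q2 x i" unfolding d_def by (cases "i < N") (auto simp: mvec_def)
  qed
  show ?thesis
  proof (intro ext)
    fix i j
    show "Q1 i j = Q2 i j"
    proof (cases "i < N \<and> j < N")
      case True
      define e where "e = (\<lambda>k. if k = j then (1::complex) else 0)"
      have "e \<in> vecs N" using True unfolding e_def vecs_def by auto
      hence "mvec N Q1 e i = mvec N Q2 e i" using eqv by simp
      thus ?thesis using True unfolding mvec_def e_def by (simp add: if_distrib cong: if_cong)
    next
      case False
      have "\<forall>i j. Q1 i j \<noteq> 0 \<longrightarrow> i < N \<and> j < N" "\<forall>i j. Q2 i j \<noteq> 0 \<longrightarrow> i < N \<and> j < N"
        using Q1 Q2 unfolding ospec_def by blast+
      thus ?thesis using False by metis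
    qed
  qed
qed

lemma oproj_spec: assumes "set ws \<subseteq> vecs N" shows "ospec N (cspan ws) (oproj N (cspan ws))"
proof -
  obtain Q where Q: "ospec N (cspan ws) Q" using ospec_exists[OF assms] by blast
  have "\<exists>!Q. ospec N (cspan ws) Q" using Q ospec_unique[OF assms] by blast
  hence "ospec N (cspan ws) (THE Q. ospec N (cspan ws) Q)" by (rule theI')
  thus ?thesis unfolding oproj_def ospec_def[symmetric] .
qed

lemma ospec_fix:
  assumes ws: "set ws \<subseteq> vecs N" and Q: "ospec N (cspan ws) Q" and x: "x \<in> cspan ws"
  shows "mvec N Q x = x"
proof
  fix i
  have xv: "x \<in> vecs N" using cspan_vecs[OF ws] x by auto
  define d where "d = (\<lambda>i. x i - mvec N Q x i)"
  have "d \<in> cspan ws" unfolding d_def using Q xv x unfolding ospec_def by (intro cspan_diff) auto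
  hence "cinner N d d = 0" using Q xv unfolding ospec_def d_def by auto
  hence "i < N \<Longrightarrow> d i = 0" using cinner_self_zero by blast
  thus "mvec N Q x i = x i" using xv unfolding d_def vecs_def mvec_def by (cases "i < N") auto
qed


lemma down_closed_eq:
  assumes "S \<subseteq> {..<n}" "\<And>i j. i \<le> j \<Longrightarrow> j \<in> S \<Longrightarrow> i \<in> S"
  shows "S = {..<card S}"
proof -
  have fin: "finite S" using assms(1) finite_subset by blast
  show ?thesis
  proof (cases "S = {}")
    case True thus ?thesis by simp
  next
    case False
    define M where "M = Max S"
    have M: "M \<in> S" "\<And>x. x \<in> S \<Longrightarrow> x \<le> M" using fin False unfolding M_def by auto
    have "S = {..M}" using M assms(2) by auto
    thus ?thesis by auto
  qed
qed

locale msorted =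
  fixes n :: nat and m :: "nat \<Rightarrow> int"
  assumes npos: "0 < n"
    and msort: "\<And>i j. i \<le> j \<Longrightarrow> j < n \<Longrightarrow> m j \<le> m i"
begin

definition ds where "ds = distinct_exps n m"
definition tau where "tau = length ds"
definition kt where "kt t = ds ! t"
definition alpha where "alpha t = card {i. i < n \<and> kt t < m i}"
definition beta where "beta t = card {i. i < n \<and> m i = kt t}"
definition sj where "sj j = (\<Sum>i<j. m i)"

lemma gt_set: "{i. i < n \<and> k < m i} = {..<card {i. i < n \<and> k < m i}}"
  by (rule down_closed_eq[of _ n]) (auto dest: msort[of _ _] intro: order.strict_trans2)

lemma ge_set: "{i. i < n \<and> k \<le> m i} = {..<card {i. i < n \<and> k \<le> m i}}"
  by (rule down_closed_eq[of _ n]) (auto dest: msort[of _ _] intro: order.trans)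

lemma gt_iff: "i < n \<Longrightarrow> k < m i \<longleftrightarrow> i < card {i. i < n \<and> k < m i}"
  using gt_set[of k] by (metis (no_types, lifting) lessThan_iff mem_Collect_eq)

lemma ge_iff: "i < n \<Longrightarrow> k \<le> m i \<longleftrightarrow> i < card {i. i < n \<and> k \<le> m i}"
  using ge_set[of k] by (metis (no_types, lifting) lessThan_iff mem_Collect_eq)

lemma card_ge_split: "card {i. i < n \<and> k \<le> m i} = card {i. i < n \<and> k < m i} + card {i. i < n \<and> m i = k}"
proof -
  have "{i. i < n \<and> k \<le> m i} = {i. i < n \<and> k < m i} \<union> {i. i < n \<and> m i = k}" by auto
  moreover have "{i. i < n \<and> k < m i} \<inter> {i. i < n \<and> m i = k} = {}" by auto
  ultimately show ?thesis by (simp add: card_Un_disjoint)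
qed

lemma card_ge_le: "card {i. i < n \<and> k \<le> m i} \<le> n"
  by (rule order.trans[OF card_mono[of "{..<n}"]]) auto

lemma blk_gt: "i < n \<Longrightarrow> kt t < m i \<longleftrightarrow> i < alpha t"
  unfolding alpha_def by (rule gt_iff)

lemma blk_ge: "i < n \<Longrightarrow> kt t \<le> m i \<longleftrightarrow> i < alpha t + beta t"
  unfolding alpha_def beta_def card_ge_split[symmetric] by (rule ge_iff)

lemma blk_le: "alpha t + beta t \<le> n"
  unfolding alpha_def beta_def card_ge_split[symmetric] by (rule card_ge_le)

lemma blk_eq: "i < n \<Longrightarrow> m i = kt t \<longleftrightarrow> alpha t \<le> i \<and> i < alpha t + beta t"
  using blk_gt[of i t] blk_ge[of i t] by auto

lemma blk_lt: "i < n \<Longrightarrow> m i < kt t \<longleftrightarrow> alpha t + beta t \<le> i"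
  using blk_ge[of i t] by auto

lemma ds_props:
  shows "sorted_wrt (>) ds" "set ds = m ` {..<n}" "distinct ds"
proof -
  have "sorted_wrt (<) (sorted_list_of_set (m ` {..<n}))" by (rule strict_sorted_list_of_set)
  thus "sorted_wrt (>) ds" unfolding ds_def distinct_exps_def by (simp add: sorted_wrt_rev)
  show "set ds = m ` {..<n}" unfolding ds_def distinct_exps_def by simp
  show "distinct ds" unfolding ds_def distinct_exps_def by simp
qed

lemma ds_less: "s < t \<Longrightarrow> t < tau \<Longrightarrow> kt t < kt s"
  using ds_props(1) unfolding kt_def tau_def sorted_wrt_iff_nth_less by auto

lemma ds_le_iff: "s < tau \<Longrightarrow> t < tau \<Longrightarrow> kt t \<le> kt s \<longleftrightarrow> s \<le> t"
  using ds_less[of s t] ds_less[of t s] by (cases s t rule: linorder_cases) auto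

lemma m_in_ds: "i < n \<Longrightarrow> \<exists>s<tau. m i = kt s"
  using ds_props(2) unfolding kt_def tau_def by (metis imageI in_set_conv_nth lessThan_iff)

lemma kt_in: "t < tau \<Longrightarrow> \<exists>i<n. m i = kt t"
  using ds_props(2) unfolding kt_def tau_def by (metis (no_types, lifting) imageE lessThan_iff nth_mem)

lemma tau_pos: "0 < tau"
proof -
  have "m 0 \<in> set ds" using ds_props(2) npos by auto
  thus ?thesis unfolding tau_def by (cases ds) auto
qed

lemma alpha0: "alpha 0 = 0"
proof -
  have "\<not> kt 0 < m i" if i: "i < n" for i
  proof -
    obtain s where s: "s < tau" "m i = kt s" using m_in_ds[OF i] by auto
    thus ?thesis using ds_le_iff[of 0 s] tau_pos by auto
  qed
  thus ?thesis unfolding alpha_def by auto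
qed

lemma alpha_Suc: assumes "Suc t < tau" shows "alpha (Suc t) = alpha t + beta t"
proof -
  have "{i. i < n \<and> kt (Suc t) < m i} = {i. i < n \<and> kt t \<le> m i}"
  proof (intro Collect_cong conj_cong refl)
    fix i assume i: "i < n"
    obtain s where s: "s < tau" "m i = kt s" using m_in_ds[OF i] by auto
    show "kt (Suc t) < m i \<longleftrightarrow> kt t \<le> m i"
      unfolding s(2) using ds_le_iff[of s t] ds_le_iff[of s "Suc t"] ds_less[of t "Suc t"] s(1) assms
      by (cases "s \<le> t") (auto simp: not_le le_Suc_eq)
  qed
  thus ?thesis unfolding alpha_def beta_def card_ge_split[symmetric] by simp
qed

lemma cover: assumes "j \<le> n" shows "\<exists>t<tau. alpha t \<le> j \<and> j \<le> alpha t + beta t"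
proof (cases j)
  case 0 thus ?thesis using tau_pos alpha0 by auto
next
  case (Suc i)
  hence i: "i < n" using assms by auto
  obtain s where s: "s < tau" "m i = kt s" using m_in_ds[OF i] by auto
  have "alpha s \<le> i" "i < alpha s + beta s" using blk_eq[OF i, of s] s by auto
  thus ?thesis using s Suc by (intro exI[of _ s]) auto
qed

lemma beta_pos: "t < tau \<Longrightarrow> 0 < beta t"
proof -
  assume "t < tau"
  then obtain i where "i < n" "m i = kt t" using kt_in by auto
  hence "alpha t \<le> i" "i < alpha t + beta t" using blk_eq by auto
  thus ?thesis by simp
qed

lemma thr:
  assumes t: "alpha t \<le> j" "j \<le> alpha t + beta t" and K: "K \<subseteq> {..<n}" "card K = j"
  shows "(\<Sum>i\<in>K. m i) \<le> sj j"
    and "(\<Sum>i\<in>K. m i) = sj j \<longleftrightarrow> {..<alpha t} \<subseteq> K \<and> K \<subseteq> {..<alpha t + beta t}"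
proof -
  let ?k = "kt t" and ?a = "alpha t" and ?b = "beta t"
  have jn: "j \<le> n" using t blk_le[of t] by simp
  have finK: "finite K" using K finite_subset by blast
  define X where "X = K - {..<j}"
  define Y where "Y = {..<j} - K"
  have finX: "finite X" "finite Y" unfolding X_def Y_def using finK by auto
  have KU: "K = (K \<inter> {..<j}) \<union> X" "(K \<inter> {..<j}) \<inter> X = {}" unfolding X_def by auto
  have JU: "{..<j} = (K \<inter> {..<j}) \<union> Y" "(K \<inter> {..<j}) \<inter> Y = {}" unfolding Y_def by auto
  have f1: "finite (K \<inter> {..<j})" using finK by simp
  have "card K = card ((K \<inter> {..<j}) \<union> X)" by (rule arg_cong[where f=card]) (rule KU(1))
  also have "\<dots> = card (K \<inter> {..<j}) + card X" by (rule card_Un_disjoint[OF f1 finX(1) KU(2)])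
  finally have c1: "card K = card (K \<inter> {..<j}) + card X" .
  have "card {..<j} = card ((K \<inter> {..<j}) \<union> Y)" by (rule arg_cong[where f=card]) (rule JU(1))
  also have "\<dots> = card (K \<inter> {..<j}) + card Y" by (rule card_Un_disjoint[OF f1 finX(2) JU(2)])
  finally have c2: "card {..<j} = card (K \<inter> {..<j}) + card Y" .
  have cXY: "card X = card Y" using c1 c2 K(2) by simp
  have "(\<Sum>i\<in>K. m i) = (\<Sum>i\<in>(K \<inter> {..<j}) \<union> X. m i)" by (rule arg_cong[where f="sum m"]) (rule KU(1))
  also have "\<dots> = (\<Sum>i\<in>K \<inter> {..<j}. m i) + (\<Sum>i\<in>X. m i)" by (rule sum.union_disjoint[OF f1 finX(1) KU(2)])
  finally have sK: "(\<Sum>i\<in>K. m i) = (\<Sum>i\<in>K \<inter> {..<j}. m i) + (\<Sum>i\<in>X. m i)" .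
  have "sj j = (\<Sum>i\<in>(K \<inter> {..<j}) \<union> Y. m i)" unfolding sj_def by (rule arg_cong[where f="sum m"]) (rule JU(1))
  also have "\<dots> = (\<Sum>i\<in>K \<inter> {..<j}. m i) + (\<Sum>i\<in>Y. m i)" by (rule sum.union_disjoint[OF f1 finX(2) JU(2)])
  finally have sJ: "sj j = (\<Sum>i\<in>K \<inter> {..<j}. m i) + (\<Sum>i\<in>Y. m i)" .
  have Xle: "m i \<le> ?k" if "i \<in> X" for i
  proof -
    have "i < n" "j \<le> i" using that K unfolding X_def by auto
    thus ?thesis using blk_gt[of i t] t by auto
  qed
  have Yge: "?k \<le> m i" if "i \<in> Y" for i
  proof -
    have "i < j" using that unfolding Y_def by auto
    thus ?thesis using blk_ge[of i t] t jn by auto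
  qed
  have sX: "(\<Sum>i\<in>X. m i) \<le> of_nat (card X) * ?k"
    using sum_mono[of X m "\<lambda>_. ?k", OF Xle] by simp
  have sY: "of_nat (card Y) * ?k \<le> (\<Sum>i\<in>Y. m i)"
    using sum_mono[of Y "\<lambda>_. ?k" m, OF Yge] by simp
  show "(\<Sum>i\<in>K. m i) \<le> sj j" unfolding sK sJ using sX sY cXY by simp
  show "(\<Sum>i\<in>K. m i) = sj j \<longleftrightarrow> {..<?a} \<subseteq> K \<and> K \<subseteq> {..<?a + ?b}"
  proof
    assume eq: "(\<Sum>i\<in>K. m i) = sj j"
    have cc: "int (card X) * ?k = int (card Y) * ?k" using cXY by simp
    have e2: "(\<Sum>i\<in>X. m i) = (\<Sum>i\<in>Y. m i)" using eq unfolding sK sJ by simp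
    have "(\<Sum>i\<in>X. m i) = of_nat (card X) * ?k" using e2 sX sY cc by linarith
    moreover have "(\<Sum>i\<in>Y. m i) = of_nat (card Y) * ?k" using e2 sX sY cc by linarith
    ultimately have eX: "(\<Sum>i\<in>X. ?k - m i) = 0" and eY: "(\<Sum>i\<in>Y. m i - ?k) = 0"
      by (simp_all add: sum_subtractf)
    have "\<forall>i\<in>X. ?k - m i = 0" using eX Xle finX by (subst (asm) sum_nonneg_eq_0_iff) auto
    hence X: "\<And>i. i \<in> X \<Longrightarrow> m i = ?k" by auto
    have "\<forall>i\<in>Y. m i - ?k = 0" using eY Yge finX by (subst (asm) sum_nonneg_eq_0_iff) auto
    hence Y: "\<And>i. i \<in> Y \<Longrightarrow> m i = ?k" by auto
    show "{..<?a} \<subseteq> K \<and> K \<subseteq> {..<?a + ?b}"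
    proof
      show "{..<?a} \<subseteq> K"
      proof
        fix i assume i: "i \<in> {..<?a}"
        have "i < n" using i blk_le[of t] by auto
        hence ne: "m i \<noteq> ?k" using blk_eq[of i t] i by auto
        have "i < j" using i t by auto
        thus "i \<in> K" using Y[of i] ne unfolding Y_def by auto
      qed
      show "K \<subseteq> {..<?a + ?b}"
      proof
        fix i assume i: "i \<in> K"
        have "i < n" using i K by auto
        show "i \<in> {..<?a + ?b}"
        proof (cases "i < j")
          case True thus ?thesis using t by auto
        next
          case False
          hence "m i = ?k" using X[of i] i unfolding X_def by auto
          thus ?thesis using blk_eq[OF \<open>i < n\<close>, of t] by auto
        qed
      qed
    qed
  next
    assume bl: "{..<?a} \<subseteq> K \<and> K \<subseteq> {..<?a + ?b}"
    have X: "m i = ?k" if "i \<in> X" for i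
    proof -
      have "i < n" "j \<le> i" "i < ?a + ?b" using that K bl unfolding X_def by auto
      thus ?thesis using blk_eq[of i t] t by auto
    qed
    have Y: "m i = ?k" if "i \<in> Y" for i
    proof -
      have "i < j" "i \<notin> K" using that unfolding Y_def by auto
      hence "?a \<le> i" using bl by (meson lessThan_iff not_le subsetD)
      moreover have "i < n" using \<open>i < j\<close> jn by auto
      ultimately show ?thesis using blk_eq[of i t] t \<open>i < j\<close> by auto
    qed
    have "(\<Sum>i\<in>X. m i) = of_nat (card X) * ?k" using X by simp
    moreover have "(\<Sum>i\<in>Y. m i) = of_nat (card Y) * ?k" using Y by simp
    ultimately show "(\<Sum>i\<in>K. m i) = sj j" unfolding sK sJ using cXY by simp
  qed
qed

lemma sum_le_sj: assumes "j \<le> n" "K \<subseteq> {..<n}" "card K = j" shows "(\<Sum>i\<in>K. m i) \<le> sj j"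
  using cover[OF assms(1)] thr(1)[OF _ _ assms(2,3)] by blast

end

lemma triple_sum:
  fixes x :: "'i \<Rightarrow> complex"
  assumes "finite A" "finite B" "finite C"
  shows "(\<Sum>I\<in>A. \<Sum>J\<in>B. x I * (\<Sum>K\<in>C. p I K * d K * q K J) * y J) =
         (\<Sum>K\<in>C. (\<Sum>I\<in>A. x I * p I K) * d K * (\<Sum>J\<in>B. q K J * y J))"
proof -
  have "(\<Sum>I\<in>A. \<Sum>J\<in>B. x I * (\<Sum>K\<in>C. p I K * d K * q K J) * y J) =
        (\<Sum>I\<in>A. \<Sum>J\<in>B. \<Sum>K\<in>C. x I * p I K * d K * q K J * y J)"
    by (simp add: sum_distrib_left sum_distrib_right mult_ac)
  also have "\<dots> = (\<Sum>I\<in>A. \<Sum>K\<in>C. \<Sum>J\<in>B. x I * p I K * d K * q K J * y J)"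
    by (intro sum.cong refl) (rule sum.swap)
  also have "\<dots> = (\<Sum>K\<in>C. \<Sum>I\<in>A. \<Sum>J\<in>B. x I * p I K * d K * q K J * y J)"
    by (rule sum.swap)
  also have "\<dots> = (\<Sum>K\<in>C. (\<Sum>I\<in>A. x I * p I K) * d K * (\<Sum>J\<in>B. q K J * y J))"
    by (simp add: sum_distrib_left sum_distrib_right mult_ac)
  finally show ?thesis .
qed

lemma lam_inv_left:
  assumes "mdet n X \<noteq> 0" "I \<subseteq> {..<n}" "J \<subseteq> {..<n}"
  shows "(\<Sum>K\<in>Pow {..<n}. lam_cha n (minv n X) I K * lam_cha n X K J) = (if I = J then 1 else 0)"
proof -
  have "lam_cha n (mm n (minv n X) X) I J = lam_cha n idm I J"
    by (rule lam_cong) (use assms minv_left in auto)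
  thus ?thesis using lam_mult[OF assms(2,3)] lam_id[OF assms(2,3)] by simp
qed

lemma lam_inv_right:
  assumes "mdet n X \<noteq> 0" "I \<subseteq> {..<n}" "J \<subseteq> {..<n}"
  shows "(\<Sum>K\<in>Pow {..<n}. lam_cha n X I K * lam_cha n (minv n X) K J) = (if I = J then 1 else 0)"
proof -
  have "lam_cha n (mm n X (minv n X)) I J = lam_cha n idm I J"
    by (rule lam_cong) (use assms minv_right in auto)
  thus ?thesis using lam_mult[OF assms(2,3)] lam_id[OF assms(2,3)] by simp
qed

lemma sandwich_nonzero:
  assumes X: "mdet n X \<noteq> 0" and Y: "mdet n Y \<noteq> 0" and K0: "K0 \<subseteq> {..<n}" "card K0 = j" "D K0 \<noteq> 0"
  shows "\<exists>I\<in>ksub n j. \<exists>J\<in>ksub n j. (\<Sum>K\<in>Pow {..<n}. lam_cha n X I K * D K * lam_cha n Y K J) \<noteq> 0"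
proof (rule ccontr)
  define N where "N I J = (\<Sum>K\<in>Pow {..<n}. lam_cha n X I K * D K * lam_cha n Y K J)" for I J
  assume "\<not> ?thesis"
  hence z: "N I J = 0" if "I \<in> ksub n j" "J \<in> ksub n j" for I J using that unfolding N_def by blast
  define S where "S = (\<Sum>I\<in>Pow {..<n}. \<Sum>J\<in>Pow {..<n}. lam_cha n (minv n X) K0 I * N I J * lam_cha n (minv n Y) J K0)"
  have "S = 0" unfolding S_def
  proof (intro sum.neutral ballI)
    fix I J assume IJ: "I \<in> Pow {..<n}" "J \<in> Pow {..<n}"
    show "lam_cha n (minv n X) K0 I * N I J * lam_cha n (minv n Y) J K0 = 0"
    proof (cases "card I = j \<and> card J = j")
      case True thus ?thesis using z[of I J] IJ unfolding ksub_def by auto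
    next
      case False thus ?thesis using IJ K0 by (auto simp: lam_cha_zero)
    qed
  qed
  moreover have "S = D K0"
  proof -
    have "S = (\<Sum>K\<in>Pow {..<n}. (\<Sum>I\<in>Pow {..<n}. lam_cha n (minv n X) K0 I * lam_cha n X I K) * D K *
                 (\<Sum>J\<in>Pow {..<n}. lam_cha n Y K J * lam_cha n (minv n Y) J K0))"
      unfolding S_def N_def by (rule triple_sum) auto
    also have "\<dots> = (\<Sum>K\<in>Pow {..<n}. (if K0 = K then 1 else 0) * D K * (if K = K0 then 1 else 0))"
      by (intro sum.cong refl) (simp add: lam_inv_left[OF X K0(1)] lam_inv_right[OF Y _ K0(1)])
    also have "\<dots> = D K0" using K0 by (simp add: if_distrib cong: if_cong)
    finally show ?thesis .
  qed
  ultimately show False using K0 by simp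
qed

lemma prod_powi: "finite K \<Longrightarrow> (z::complex) \<noteq> 0 \<Longrightarrow> (\<Prod>i\<in>K. z powi f i) = z powi (\<Sum>i\<in>K. f i)"
  by (induction K rule: finite_induct) (auto simp: power_int_add)

lemma tendsto_powi0:
  assumes "(e::int) \<ge> 0"
  shows "((\<lambda>z::complex. z powi e) \<longlongrightarrow> (if e = 0 then 1 else 0)) (at 0)"
proof -
  have "((\<lambda>z::complex. z ^ nat e) \<longlongrightarrow> 0 ^ nat e) (at 0)"
    by (intro tendsto_power tendsto_ident_at)
  moreover have "(\<lambda>z::complex. z powi e) = (\<lambda>z. z ^ nat e)" using assms by (auto simp: power_int_def)
  moreover have "(0::complex) ^ nat e = (if e = 0 then 1 else 0)" using assms by auto
  ultimately show ?thesis by simp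
qed

locale hsetup = msorted +
  fixes \<gamma> :: "complex \<Rightarrow> cmat" and r :: real and a b :: "complex \<Rightarrow> cmat"
  assumes rpos: "0 < r"
    and hola: "\<And>i j. i < n \<Longrightarrow> j < n \<Longrightarrow> (\<lambda>z. a z i j) holomorphic_on ball 0 r"
    and holb: "\<And>i j. i < n \<Longrightarrow> j < n \<Longrightarrow> (\<lambda>z. b z i j) holomorphic_on ball 0 r"
    and deta: "mdet n (a 0) \<noteq> 0" and detb: "mdet n (b 0) \<noteq> 0"
    and fac: "\<And>z i k. 0 < norm z \<Longrightarrow> norm z < r \<Longrightarrow> i < n \<Longrightarrow> k < n \<Longrightarrow>
       \<gamma> z i k = (\<Sum>l<n. a z i l * z powi (- m l) * b z l k)"
begin

lemma hol_tendsto: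
  assumes "f holomorphic_on ball 0 r" shows "(f \<longlongrightarrow> f 0) (at 0)"
proof -
  have "continuous_on (ball 0 r) f" using assms holomorphic_on_imp_continuous_on by blast
  hence "isCont f 0" using rpos by (simp add: continuous_on_eq_continuous_at)
  thus ?thesis by (simp add: isCont_def)
qed

lemma conta: "i < n \<Longrightarrow> j < n \<Longrightarrow> ((\<lambda>z. a z i j) \<longlongrightarrow> a 0 i j) (at 0)"
  using hol_tendsto[OF hola] .
lemma contb: "i < n \<Longrightarrow> j < n \<Longrightarrow> ((\<lambda>z. b z i j) \<longlongrightarrow> b 0 i j) (at 0)"
  using hol_tendsto[OF holb] .

lemma ev_punct: "eventually (\<lambda>z. 0 < norm z \<and> norm z < r) (at (0::complex))"
  unfolding eventually_at using rpos by (intro exI[of _ r]) auto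

lemma ev_deta: "eventually (\<lambda>z. mdet n (a z) \<noteq> 0) (at 0)"
  by (rule tendsto_imp_eventually_ne[OF mdet_tendsto[OF conta] deta])
lemma ev_detb: "eventually (\<lambda>z. mdet n (b z) \<noteq> 0) (at 0)"
  by (rule tendsto_imp_eventually_ne[OF mdet_tendsto[OF contb] detb])

lemma conta_inv: "((\<lambda>z. minv n (a z) i j) \<longlongrightarrow> minv n (a 0) i j) (at 0)"
  by (rule minv_tendsto[OF conta deta])
lemma contb_inv: "((\<lambda>z. minv n (b z) i j) \<longlongrightarrow> minv n (b 0) i j) (at 0)"
  by (rule minv_tendsto[OF contb detb])

definition Ldef :: "nat \<Rightarrow> nat set \<Rightarrow> nat set \<Rightarrow> complex" where
  "Ldef j I J = (\<Sum>K\<in>Pow {..<n}. lam_cha n (a 0) I K * (if card K = j \<and> sum m K = sj j then 1 else 0) * lam_cha n (b 0) K J)"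

lemma gamma_lam:
  assumes z: "0 < norm z" "norm z < r" and I: "I \<subseteq> {..<n}" and J: "J \<subseteq> {..<n}"
  shows "lam_cha n (\<gamma> z) I J = (\<Sum>K\<in>Pow {..<n}. lam_cha n (a z) I K * ((\<Prod>i\<in>K. z powi (- m i)) * lam_cha n (b z) K J))"
proof -
  have "lam_cha n (\<gamma> z) I J = lam_cha n (mm n (a z) (\<lambda>l k. z powi (- m l) * b z l k)) I J"
    by (rule lam_cong[OF _ I J]) (simp add: fac[OF z] mm_def mult.assoc)
  also have "\<dots> = (\<Sum>K\<in>Pow {..<n}. lam_cha n (a z) I K * lam_cha n (\<lambda>l k. z powi (- m l) * b z l k) K J)"
    by (rule lam_mult[OF I J])
  also have "\<dots> = (\<Sum>K\<in>Pow {..<n}. lam_cha n (a z) I K * ((\<Prod>i\<in>K. z powi (- m i)) * lam_cha n (b z) K J))"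
    by (intro sum.cong refl) (simp add: lam_scale_rows[OF _ J])
  finally show ?thesis .
qed

lemma part_a_lim:
  assumes j: "j \<le> n" and I: "I \<in> ksub n j" and J: "J \<in> ksub n j"
  shows "((\<lambda>z. z powi (sj j) * lam_cha n (\<gamma> z) I J) \<longlongrightarrow> Ldef j I J) (at 0)"
proof -
  have I': "I \<subseteq> {..<n}" "card I = j" and J': "J \<subseteq> {..<n}" using I J unfolding ksub_def by auto
  define g where "g z K = lam_cha n (a z) I K * ((z powi (sj j) * (\<Prod>i\<in>K. z powi (- m i))) * lam_cha n (b z) K J)" for z K
  have ev: "eventually (\<lambda>z. (\<Sum>K\<in>Pow {..<n}. g z K) = z powi (sj j) * lam_cha n (\<gamma> z) I J) (at 0)"
    using ev_punct
  proof (rule eventually_mono)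
    fix z :: complex assume z: "0 < norm z \<and> norm z < r"
    show "(\<Sum>K\<in>Pow {..<n}. g z K) = z powi (sj j) * lam_cha n (\<gamma> z) I J"
      unfolding gamma_lam[OF z[THEN conjunct1] z[THEN conjunct2] I'(1) J'] g_def sum_distrib_left
      by (simp add: mult_ac)
  qed
  have lim: "((\<lambda>z. \<Sum>K\<in>Pow {..<n}. g z K) \<longlongrightarrow> Ldef j I J) (at 0)"
    unfolding Ldef_def
  proof (rule tendsto_sum)
    fix K assume K: "K \<in> Pow {..<n}"
    hence K': "K \<subseteq> {..<n}" by auto
    show "((\<lambda>z. g z K) \<longlongrightarrow> lam_cha n (a 0) I K * (if card K = j \<and> sum m K = sj j then 1 else 0) * lam_cha n (b 0) K J) (at 0)"
    proof (cases "card K = j")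
      case False
      hence "\<And>z. g z K = 0" "lam_cha n (a 0) I K = 0" using I' K' unfolding g_def by (auto simp: lam_cha_zero)
      thus ?thesis by simp
    next
      case True
      define e where "e = sj j - sum m K"
      have e0: "e \<ge> 0" unfolding e_def using sum_le_sj[OF j K' True] by simp
      have fK: "finite K" using K' finite_subset by blast
      have ev2: "eventually (\<lambda>z. lam_cha n (a z) I K * (z powi e * lam_cha n (b z) K J) = g z K) (at 0)"
        using ev_punct
      proof (rule eventually_mono)
        fix z :: complex assume z: "0 < norm z \<and> norm z < r"
        hence z0: "z \<noteq> 0" by auto
        have "z powi (sj j) * (\<Prod>i\<in>K. z powi (- m i)) = z powi e"
          unfolding prod_powi[OF fK z0] e_def using z0 by (simp add: power_int_add[symmetric] sum_negf)
        thus "lam_cha n (a z) I K * (z powi e * lam_cha n (b z) K J) = g z K" unfolding g_def by simp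
      qed
      have "((\<lambda>z. lam_cha n (a z) I K * (z powi e * lam_cha n (b z) K J)) \<longlongrightarrow>
          lam_cha n (a 0) I K * ((if e = 0 then 1 else 0) * lam_cha n (b 0) K J)) (at 0)"
        by (intro tendsto_mult lam_tendsto[OF conta I'(1) K'] lam_tendsto[OF contb K' J'] tendsto_powi0[OF e0])
      hence "((\<lambda>z. g z K) \<longlongrightarrow> lam_cha n (a 0) I K * ((if e = 0 then 1 else 0) * lam_cha n (b 0) K J)) (at 0)"
        using ev2 by (rule Lim_transform_eventually)
      moreover have "(e = 0) = (sum m K = sj j)" unfolding e_def by auto
      ultimately show ?thesis using True by (simp add: mult_ac)
    qed
  qed
  show ?thesis using lim ev by (rule Lim_transform_eventually)
qed

end

context hsetup begin

definition Ebl where "Ebl t K = ({..<alpha t} \<subseteq> K \<and> K \<subseteq> {..<alpha t + beta t})"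

definition Mt :: "nat \<Rightarrow> nat set \<Rightarrow> nat set \<Rightarrow> complex" where
  "Mt t I J = (\<Sum>K\<in>Pow {..<n}. lam_cha n (a 0) I K * (if Ebl t K then 1 else 0) * lam_cha n (b 0) K J)"

lemma L_eq_M:
  assumes t: "alpha t \<le> j" "j \<le> alpha t + beta t" and I: "I \<in> ksub n j"
  shows "Ldef j I J = Mt t I J"
  unfolding Ldef_def Mt_def
proof (intro sum.cong refl)
  fix K assume K: "K \<in> Pow {..<n}"
  have I': "I \<subseteq> {..<n}" "card I = j" using I unfolding ksub_def by auto
  show "lam_cha n (a 0) I K * (if card K = j \<and> sum m K = sj j then 1 else 0) * lam_cha n (b 0) K J =
        lam_cha n (a 0) I K * (if Ebl t K then 1 else 0) * lam_cha n (b 0) K J"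
  proof (cases "card K = j")
    case True
    thus ?thesis using thr(2)[OF t, of K] K unfolding Ebl_def by auto
  next
    case False
    thus ?thesis using I' K by (simp add: lam_cha_zero)
  qed
qed

lemma Mt_nonzero:
  assumes t: "alpha t \<le> j" "j \<le> alpha t + beta t"
  shows "\<exists>I\<in>ksub n j. \<exists>J\<in>ksub n j. Mt t I J \<noteq> 0"
  unfolding Mt_def
proof (rule sandwich_nonzero[OF deta detb, of "{..<j}"])
  show "{..<j} \<subseteq> {..<n}" using t blk_le[of t] by auto
  show "(if Ebl t {..<j} then 1 else 0) \<noteq> (0::complex)" using t unfolding Ebl_def by auto
qed simp

lemma Mt_deg:
  assumes "\<exists>I\<in>ksub n j. \<exists>J\<in>ksub n j. Mt t I J \<noteq> 0"
  shows "alpha t \<le> j \<and> j \<le> alpha t + beta t"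
proof (rule ccontr)
  assume nt: "\<not> (alpha t \<le> j \<and> j \<le> alpha t + beta t)"
  obtain I J where I: "I \<in> ksub n j" and J: "J \<in> ksub n j" and nz: "Mt t I J \<noteq> 0" using assms by auto
  have "Mt t I J = 0" unfolding Mt_def
  proof (intro sum.neutral ballI)
    fix K assume K: "K \<in> Pow {..<n}"
    have I': "I \<subseteq> {..<n}" "card I = j" using I unfolding ksub_def by auto
    show "lam_cha n (a 0) I K * (if Ebl t K then 1 else 0) * lam_cha n (b 0) K J = 0"
    proof (cases "card K = j")
      case True
      have "\<not> Ebl t K"
      proof
        assume E: "Ebl t K"
        have fK: "finite K" using K finite_subset by auto
        have "card {..<alpha t} \<le> card K" using E fK unfolding Ebl_def by (intro card_mono) auto
        moreover have "card K \<le> card {..<alpha t + beta t}" using E unfolding Ebl_def by (intro card_mono) auto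
        ultimately show False using nt True by simp
      qed
      thus ?thesis by simp
    next
      case False thus ?thesis using I' K by (simp add: lam_cha_zero)
    qed
  qed
  thus False using nz by simp
qed

lemma L_nonzero: assumes "j \<le> n" shows "\<exists>I\<in>ksub n j. \<exists>J\<in>ksub n j. Ldef j I J \<noteq> 0"
proof -
  obtain t where t: "t < tau" "alpha t \<le> j" "j \<le> alpha t + beta t" using cover[OF assms] by auto
  obtain I J where IJ: "I \<in> ksub n j" "J \<in> ksub n j" "Mt t I J \<noteq> 0" using Mt_nonzero[OF t(2,3)] by auto
  have "Ldef j I J \<noteq> 0" using L_eq_M[OF t(2,3) IJ(1), of J] IJ(3) by simp
  thus ?thesis using IJ(1,2) by blast
qed

end

definition colv :: "nat \<Rightarrow> cmat \<Rightarrow> nat \<Rightarrow> cvec" where "colv n X k = (\<lambda>i. if i < n then X i k else 0)"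
definition zv :: cvec where "zv = (\<lambda>_. 0)"

lemma colv_vecs: "colv n X k \<in> vecs n" unfolding colv_def vecs_def by auto
lemma zv_vecs: "zv \<in> vecs n" unfolding zv_def vecs_def by auto

lemma mvec_colv: "mvec n X (colv n Y k) = colv n (mm n X Y) k"
  unfolding mvec_def colv_def mm_def by auto

lemma mvec_mm: "mvec n X (mvec n Y v) = mvec n (mm n X Y) v"
proof
  fix i
  have "(\<Sum>k<n. X i k * (\<Sum>l<n. Y k l * v l)) = (\<Sum>k<n. \<Sum>l<n. X i k * Y k l * v l)"
    by (simp add: sum_distrib_left mult_ac)
  also have "\<dots> = (\<Sum>l<n. \<Sum>k<n. X i k * Y k l * v l)" by (rule sum.swap)
  also have "\<dots> = (\<Sum>l<n. (\<Sum>k<n. X i k * Y k l) * v l)" by (simp add: sum_distrib_right)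
  finally show "mvec n X (mvec n Y v) i = mvec n (mm n X Y) v i"
    unfolding mvec_def mm_def by simp
qed

lemma mvec_cong_vec: "(\<And>k. k < n \<Longrightarrow> u k = u' k) \<Longrightarrow> mvec n X u = mvec n X u'"
  unfolding mvec_def by auto

lemma mvec_cong_mat: "(\<And>i j. i < n \<Longrightarrow> j < n \<Longrightarrow> X i j = Y i j) \<Longrightarrow> mvec n X u = mvec n Y u"
  unfolding mvec_def by auto

lemma mvec_idm: assumes "\<And>i j. i < n \<Longrightarrow> j < n \<Longrightarrow> Z i j = idm i j" "i < n" shows "mvec n Z u i = u i"
proof -
  have "(\<Sum>k<n. Z i k * u k) = (\<Sum>k<n. if k = i then u k else 0)"
    using assms by (intro sum.cong refl) (auto simp: idm_def)
  also have "\<dots> = u i" using assms(2) by (simp add: sum.delta')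
  finally show ?thesis using assms(2) unfolding mvec_def by simp
qed

lemma mvec_idm_vecs: "(\<And>i j. i < n \<Longrightarrow> j < n \<Longrightarrow> Z i j = idm i j) \<Longrightarrow> u \<in> vecs n \<Longrightarrow> mvec n Z u = u"
proof
  fix i assume "\<And>i j. i < n \<Longrightarrow> j < n \<Longrightarrow> Z i j = idm i j" "u \<in> vecs n"
  thus "mvec n Z u i = u i" using mvec_idm[of n Z i u] unfolding vecs_def by (cases "i < n") (auto simp: mvec_def)
qed

lemma sum_colv: "(\<lambda>l. \<Sum>i<n. c i * colv n X i l) = mvec n X c"
  unfolding mvec_def colv_def by (auto simp: mult.commute)

lemma mvec_lin: "mvec n X (\<lambda>i. \<Sum>k\<in>A. c k * f k i) = (\<lambda>i. \<Sum>k\<in>A. c k * mvec n X (f k) i)"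
proof
  fix i
  have "(\<Sum>l<n. X i l * (\<Sum>k\<in>A. c k * f k l)) = (\<Sum>l<n. \<Sum>k\<in>A. c k * (X i l * f k l))"
    by (simp add: sum_distrib_left mult_ac)
  also have "\<dots> = (\<Sum>k\<in>A. \<Sum>l<n. c k * (X i l * f k l))" by (rule sum.swap)
  also have "\<dots> = (\<Sum>k\<in>A. c k * (\<Sum>l<n. X i l * f k l))" by (simp add: sum_distrib_left)
  finally show "mvec n X (\<lambda>i. \<Sum>k\<in>A. c k * f k i) i = (\<Sum>k\<in>A. c k * mvec n X (f k) i)"
    unfolding mvec_def by simp
qed

lemma join_vecs: "v \<in> vecs n \<Longrightarrow> w \<in> vecs n \<Longrightarrow> Defs.join n v w \<in> vecs (2 * n)"
  unfolding Defs.join_def vecs_def by auto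

lemma join_lin: "Defs.join n (\<lambda>i. \<Sum>k\<in>A. c k * f k i) (\<lambda>i. \<Sum>k\<in>A. c k * g k i) = (\<lambda>i. \<Sum>k\<in>A. c k * Defs.join n (f k) (g k) i)"
  unfolding Defs.join_def by auto

lemma join_inj:
  assumes "Defs.join n v w = Defs.join n v' w'" "v \<in> vecs n" "w \<in> vecs n" "v' \<in> vecs n" "w' \<in> vecs n"
  shows "v = v' \<and> w = w'"
proof
  show "v = v'"
  proof
    fix i show "v i = v' i"
    proof (cases "i < n")
      case True thus ?thesis using fun_cong[OF assms(1), of i] unfolding Defs.join_def by simp
    next
      case False thus ?thesis using assms unfolding vecs_def by auto
    qed
  qed
  show "w = w'"
  proof
    fix i show "w i = w' i"
    proof (cases "i < n")
      case True thus ?thesis using fun_cong[OF assms(1), of "n + i"] unfolding Defs.join_def by simp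
    next
      case False thus ?thesis using assms unfolding vecs_def by auto
    qed
  qed
qed

lemma join_split: "x \<in> vecs (2 * n) \<Longrightarrow> x = Defs.join n (\<lambda>i. if i < n then x i else 0) (\<lambda>i. if i < n then x (n + i) else 0)"
  unfolding Defs.join_def vecs_def by (auto simp: fun_eq_iff)

lemma cspan_map_upt: "x \<in> cspan (map f [0..<N]) \<longleftrightarrow> (\<exists>c. x = (\<lambda>i. \<Sum>k<N. c k * f k i))"
  unfolding cspan_def by auto

context hsetup begin

abbreviation "a0i \<equiv> minv n (a 0)"
abbreviation "b0i \<equiv> minv n (b 0)"

definition uu where "uu t i = Defs.join n (if m i \<le> kt t then colv n b0i i else zv) (if kt t \<le> m i then colv n (a 0) i else zv)"
definition ulist where "ulist t = map (uu t) [0..<n]"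
definition Pt where "Pt t = cspan (ulist t)"
definition Pcond where "Pcond t v w = (\<forall>i<n. (kt t < m i \<longrightarrow> mvec n (b 0) v i = 0) \<and>
    (m i = kt t \<longrightarrow> mvec n (b 0) v i = mvec n a0i w i) \<and> (m i < kt t \<longrightarrow> mvec n a0i w i = 0))"

lemma b0_b0i: "i < n \<Longrightarrow> j < n \<Longrightarrow> mm n (b 0) b0i i j = idm i j" by (rule minv_right[OF detb])
lemma b0i_b0: "i < n \<Longrightarrow> j < n \<Longrightarrow> mm n b0i (b 0) i j = idm i j" by (rule minv_left[OF detb])
lemma a0_a0i: "i < n \<Longrightarrow> j < n \<Longrightarrow> mm n (a 0) a0i i j = idm i j" by (rule minv_right[OF deta])
lemma a0i_a0: "i < n \<Longrightarrow> j < n \<Longrightarrow> mm n a0i (a 0) i j = idm i j" by (rule minv_left[OF deta])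

lemma uu_vecs: "uu t i \<in> vecs (2 * n)"
  unfolding uu_def by (intro join_vecs) (auto simp: colv_vecs zv_vecs)

lemma ulist_vecs: "set (ulist t) \<subseteq> vecs (2 * n)"
  unfolding ulist_def using uu_vecs by auto

lemma Pt_vecs: "Pt t \<subseteq> vecs (2 * n)"
  unfolding Pt_def by (rule cspan_vecs[OF ulist_vecs])

lemma Pt_iff: "x \<in> Pt t \<longleftrightarrow> (\<exists>v w. v \<in> vecs n \<and> w \<in> vecs n \<and> x = Defs.join n v w \<and> Pcond t v w)"
proof
  assume "x \<in> Pt t"
  then obtain c where x: "x = (\<lambda>i. \<Sum>k<n. c k * uu t k i)" unfolding Pt_def ulist_def cspan_map_upt by auto
  define c1 where "c1 k = (if m k \<le> kt t then c k else 0)" for k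
  define c2 where "c2 k = (if kt t \<le> m k then c k else 0)" for k
  define V where "V = mvec n b0i c1"
  define W where "W = mvec n (a 0) c2"
  have "x = Defs.join n (\<lambda>i. \<Sum>k<n. c k * (if m k \<le> kt t then colv n b0i k else zv) i) (\<lambda>i. \<Sum>k<n. c k * (if kt t \<le> m k then colv n (a 0) k else zv) i)"
    unfolding x join_lin uu_def ..
  also have "(\<lambda>i. \<Sum>k<n. c k * (if m k \<le> kt t then colv n b0i k else zv) i) = V"
    unfolding V_def sum_colv[symmetric] c1_def zv_def by (auto intro!: sum.cong)
  also have "(\<lambda>i. \<Sum>k<n. c k * (if kt t \<le> m k then colv n (a 0) k else zv) i) = W"
    unfolding W_def sum_colv[symmetric] c2_def zv_def by (auto intro!: sum.cong)
  finally have xj: "x = Defs.join n V W" .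
  have bV: "mvec n (b 0) V i = c1 i" if "i < n" for i
    unfolding V_def mvec_mm using mvec_idm[OF b0_b0i that] by simp
  have aW: "mvec n a0i W i = c2 i" if "i < n" for i
    unfolding W_def mvec_mm using mvec_idm[OF a0i_a0 that] by simp
  have "Pcond t V W" unfolding Pcond_def using bV aW by (auto simp: c1_def c2_def)
  moreover have "V \<in> vecs n" "W \<in> vecs n" unfolding V_def W_def by (auto simp: mvec_vecs)
  ultimately show "\<exists>v w. v \<in> vecs n \<and> w \<in> vecs n \<and> x = Defs.join n v w \<and> Pcond t v w" using xj by blast
next
  assume "\<exists>v w. v \<in> vecs n \<and> w \<in> vecs n \<and> x = Defs.join n v w \<and> Pcond t v w"
  then obtain v w where v: "v \<in> vecs n" and w: "w \<in> vecs n" and x: "x = Defs.join n v w" and P: "Pcond t v w" by auto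
  define x' where "x' = mvec n (b 0) v"
  define y' where "y' = mvec n a0i w"
  define c where "c k = (if m k \<le> kt t then x' k else y' k)" for k
  have V: "(\<lambda>i. \<Sum>k<n. c k * (if m k \<le> kt t then colv n b0i k else zv) i) = v"
  proof -
    have "(\<lambda>i. \<Sum>k<n. c k * (if m k \<le> kt t then colv n b0i k else zv) i) = (\<lambda>i. \<Sum>k<n. x' k * colv n b0i k i)"
    proof (intro ext sum.cong refl)
      fix i k assume k: "k \<in> {..<n}"
      show "c k * (if m k \<le> kt t then colv n b0i k else zv) i = x' k * colv n b0i k i"
        using P k unfolding c_def Pcond_def x'_def zv_def by (cases "m k \<le> kt t") auto
    qed
    also have "\<dots> = mvec n b0i (mvec n (b 0) v)" unfolding sum_colv x'_def ..
    also have "\<dots> = v" unfolding mvec_mm by (rule mvec_idm_vecs[OF b0i_b0 v])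
    finally show ?thesis .
  qed
  have W: "(\<lambda>i. \<Sum>k<n. c k * (if kt t \<le> m k then colv n (a 0) k else zv) i) = w"
  proof -
    have "(\<lambda>i. \<Sum>k<n. c k * (if kt t \<le> m k then colv n (a 0) k else zv) i) = (\<lambda>i. \<Sum>k<n. y' k * colv n (a 0) k i)"
    proof (intro ext sum.cong refl)
      fix i k assume k: "k \<in> {..<n}"
      show "c k * (if kt t \<le> m k then colv n (a 0) k else zv) i = y' k * colv n (a 0) k i"
        using P k unfolding c_def Pcond_def x'_def y'_def zv_def
        by (cases "m k < kt t"; cases "m k = kt t") auto
    qed
    also have "\<dots> = mvec n (a 0) (mvec n a0i w)" unfolding sum_colv y'_def ..
    also have "\<dots> = w" unfolding mvec_mm by (rule mvec_idm_vecs[OF a0_a0i w])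
    finally show ?thesis .
  qed
  have "x = (\<lambda>i. \<Sum>k<n. c k * uu t k i)"
    unfolding x uu_def join_lin[symmetric] V W ..
  thus "x \<in> Pt t" unfolding Pt_def ulist_def cspan_map_upt by blast
qed

end

lemma swap3: fixes X :: "nat \<Rightarrow> complex" shows "(\<Sum>l<n. X l * (\<Sum>s<n. Y l s * Z s)) = (\<Sum>s<n. (\<Sum>l<n. X l * Y l s) * Z s)"
proof -
  have "(\<Sum>l<n. X l * (\<Sum>s<n. Y l s * Z s)) = (\<Sum>l<n. \<Sum>s<n. X l * Y l s * Z s)"
    by (simp add: sum_distrib_left mult.assoc)
  also have "\<dots> = (\<Sum>s<n. \<Sum>l<n. X l * Y l s * Z s)" by (rule sum.swap)
  also have "\<dots> = (\<Sum>s<n. (\<Sum>l<n. X l * Y l s) * Z s)" by (simp add: sum_distrib_right)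
  finally show ?thesis .
qed

lemma sum_idm: fixes f :: "nat \<Rightarrow> complex" assumes "i < n" shows "(\<Sum>s<n. f s * idm s i) = f i"
proof -
  have "(\<Sum>s<n. f s * idm s i) = (\<Sum>s<n. if s = i then f s else 0)" by (intro sum.cong) (auto simp: idm_def)
  thus ?thesis using assms by (simp add: sum.delta')
qed

lemma sum_idm': fixes f :: "nat \<Rightarrow> complex" assumes "i < n" shows "(\<Sum>s<n. idm i s * f s) = f i"
proof -
  have "(\<Sum>s<n. idm i s * f s) = (\<Sum>s<n. if s = i then f s else 0)" by (intro sum.cong) (auto simp: idm_def)
  thus ?thesis using assms by (simp add: sum.delta')
qed

lemma mvec_tendsto:
  assumes "\<And>i j. i < n \<Longrightarrow> j < n \<Longrightarrow> ((\<lambda>z. X z i j) \<longlongrightarrow> X0 i j) F"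
    and "\<And>k. k < n \<Longrightarrow> ((\<lambda>z. v z k) \<longlongrightarrow> v0 k) F"
  shows "((\<lambda>z. mvec n (X z) (v z) p) \<longlongrightarrow> mvec n X0 v0 p) F"
  unfolding mvec_def by (cases "p < n") (auto intro!: tendsto_sum tendsto_mult assms)

lemma mvec_scale: "mvec n X (\<lambda>l. c * f l) = (\<lambda>i. c * mvec n X f i)"
  unfolding mvec_def by (auto simp: sum_distrib_left mult_ac)

lemma mvec_scale_mat: "mvec n (\<lambda>i k. c * G i k) v = (\<lambda>i. c * mvec n G v i)"
  unfolding mvec_def by (auto simp: sum_distrib_left mult_ac)

lemma vec_expand: assumes "v \<in> vecs n" shows "v = (\<lambda>i. \<Sum>l<n. v l * colv n idm l i)"
proof
  fix i show "v i = (\<Sum>l<n. v l * colv n idm l i)"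
  proof (cases "i < n")
    case True thus ?thesis unfolding colv_def using sum_idm'[OF True, of v] by (simp add: idm_def mult.commute)
  next
    case False thus ?thesis using assms unfolding colv_def vecs_def by auto
  qed
qed

lemma graph_cspan: "graph n A = cspan (map (\<lambda>l. Defs.join n (colv n idm l) (mvec n A (colv n idm l))) [0..<n])"
proof (intro subset_antisym subsetI)
  fix x assume "x \<in> graph n A"
  then obtain v where v: "v \<in> vecs n" "x = Defs.join n v (mvec n A v)" unfolding graph_def by auto
  have "x = Defs.join n (\<lambda>i. \<Sum>l<n. v l * colv n idm l i) (mvec n A (\<lambda>i. \<Sum>l<n. v l * colv n idm l i))"
    using v vec_expand[OF v(1)] by metis
  also have "\<dots> = (\<lambda>i. \<Sum>l<n. v l * Defs.join n (colv n idm l) (mvec n A (colv n idm l)) i)"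
    unfolding mvec_lin join_lin ..
  finally show "x \<in> cspan (map (\<lambda>l. Defs.join n (colv n idm l) (mvec n A (colv n idm l))) [0..<n])"
    unfolding cspan_map_upt by blast
next
  fix x assume "x \<in> cspan (map (\<lambda>l. Defs.join n (colv n idm l) (mvec n A (colv n idm l))) [0..<n])"
  then obtain c where x: "x = (\<lambda>i. \<Sum>l<n. c l * Defs.join n (colv n idm l) (mvec n A (colv n idm l)) i)"
    unfolding cspan_map_upt by auto
  define v where "v = (\<lambda>i. \<Sum>l<n. c l * colv n idm l i)"
  have "v \<in> vecs n" unfolding v_def colv_def vecs_def by auto
  moreover have "x = Defs.join n v (mvec n A v)" unfolding x v_def mvec_lin join_lin ..
  ultimately show "x \<in> graph n A" unfolding graph_def by auto
qed

context hsetup begin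

lemma gamma_col:
  assumes z: "0 < norm z" "norm z < r" and d: "mdet n (b z) \<noteq> 0" and i: "i < n"
  shows "mvec n (\<gamma> z) (colv n (minv n (b z)) i) = (\<lambda>l. z powi (- m i) * colv n (a z) i l)"
proof
  fix l show "mvec n (\<gamma> z) (colv n (minv n (b z)) i) l = z powi (- m i) * colv n (a z) i l"
  proof (cases "l < n")
    case True
    have "mvec n (\<gamma> z) (colv n (minv n (b z)) i) l = (\<Sum>q<n. (\<Sum>s<n. (a z l s * z powi (- m s)) * b z s q) * minv n (b z) q i)"
      unfolding mvec_def colv_def using True fac[OF z True] by (auto intro!: sum.cong)
    also have "\<dots> = (\<Sum>s<n. (a z l s * z powi (- m s)) * (\<Sum>q<n. b z s q * minv n (b z) q i))"
      by (rule swap3[symmetric])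
    also have "\<dots> = (\<Sum>s<n. (a z l s * z powi (- m s)) * idm s i)"
      using minv_right[OF d _ i] by (intro sum.cong refl) (simp add: mm_def)
    also have "\<dots> = a z l i * z powi (- m i)" by (rule sum_idm[OF i])
    finally show ?thesis using True by (simp add: colv_def mult.commute)
  next
    case False thus ?thesis by (simp add: mvec_def colv_def)
  qed
qed

lemma ai_gamma:
  assumes z: "0 < norm z" "norm z < r" and d: "mdet n (a z) \<noteq> 0" and p: "p < n"
  shows "mvec n (minv n (a z)) (mvec n (\<gamma> z) V) p = z powi (- m p) * mvec n (b z) V p"
proof -
  have "mvec n (minv n (a z)) (mvec n (\<gamma> z) V) p = (\<Sum>l<n. minv n (a z) p l * (\<Sum>q<n. (\<Sum>s<n. a z l s * (z powi (- m s) * b z s q)) * V q))"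
  proof -
    have g: "\<forall>l<n. \<forall>q<n. \<gamma> z l q = (\<Sum>s<n. a z l s * (z powi (- m s) * b z s q))"
      using fac[OF z] by (auto simp: mult.assoc)
    have inner: "mvec n (\<gamma> z) V l = (\<Sum>q<n. (\<Sum>s<n. a z l s * (z powi (- m s) * b z s q)) * V q)" if "l < n" for l
      using that by (simp add: mvec_def g)
    have outer: "mvec n X u p = (\<Sum>l<n. X p l * u l)" for X u using p by (simp add: mvec_def)
    show ?thesis unfolding outer[of "minv n (a z)"] by (intro sum.cong refl) (simp add: inner)
  qed
  also have "\<dots> = (\<Sum>l<n. minv n (a z) p l * (\<Sum>s<n. a z l s * (\<Sum>q<n. z powi (- m s) * b z s q * V q)))"
  proof -
    have ie: "(\<Sum>q<n. (\<Sum>s<n. a z l s * (z powi (- m s) * b z s q)) * V q) = (\<Sum>s<n. a z l s * (\<Sum>q<n. z powi (- m s) * b z s q * V q))" for l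
      using swap3[where X="a z l" and Y="\<lambda>s q. z powi (- m s) * b z s q" and Z=V] by simp
    show ?thesis by (simp only: ie)
  qed
  also have "\<dots> = (\<Sum>s<n. (\<Sum>l<n. minv n (a z) p l * a z l s) * (\<Sum>q<n. z powi (- m s) * b z s q * V q))"
    by (rule swap3)
  also have "\<dots> = (\<Sum>s<n. idm p s * (\<Sum>q<n. z powi (- m s) * b z s q * V q))"
    using minv_left[OF d p] by (intro sum.cong refl) (simp add: mm_def)
  also have "\<dots> = (\<Sum>q<n. z powi (- m p) * b z p q * V q)" by (rule sum_idm'[OF p])
  also have "\<dots> = z powi (- m p) * mvec n (b z) V p" unfolding mvec_def using p
    by (simp add: sum_distrib_left mult_ac)
  finally show ?thesis .
qed

end

context hsetup begin

lemma powi_comb: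
  assumes "(z::complex) \<noteq> 0"
  shows "z powi x * z powi y = z powi (x + y)"
  using assms by (simp add: power_int_add)

lemma hinge_sub1:
  assumes t: "t < tau" and ws: "set ws \<subseteq> vecs (2*n)" and P: "P = cspan ws"
    and G: "grass_tendsto (2*n) (\<lambda>z. graph n (\<lambda>i k. z powi kt t * \<gamma> z i k)) P (at 0)"
  shows "P \<subseteq> Pt t"
proof
  define A where "A z = (\<lambda>i k. z powi kt t * \<gamma> z i k)" for z
  define gl where "gl z = map (\<lambda>l. Defs.join n (colv n idm l) (mvec n (A z) (colv n idm l))) [0..<n]" for z
  have glv: "set (gl z) \<subseteq> vecs (2*n)" for z unfolding gl_def by (auto intro!: join_vecs colv_vecs mvec_vecs)
  have gr: "graph n (A z) = cspan (gl z)" for z unfolding gl_def by (rule graph_cspan)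
  define Qz where "Qz z = oproj (2*n) (graph n (A z))" for z
  define Qs where "Qs = oproj (2*n) P"
  have specQ: "ospec (2*n) (cspan (gl z)) (Qz z)" for z unfolding Qz_def gr by (rule oproj_spec[OF glv])
  have specP: "ospec (2*n) (cspan ws) Qs" unfolding Qs_def P by (rule oproj_spec[OF ws])
  have conv: "((\<lambda>z. Qz z i j) \<longlongrightarrow> Qs i j) (at 0)" if "i < 2*n" "j < 2*n" for i j
    using G that unfolding grass_tendsto_def Qz_def Qs_def A_def by blast
  fix y assume yP: "y \<in> P"
  have yv: "y \<in> vecs (2*n)" using yP P cspan_vecs[OF ws] by auto
  define x where "x z = mvec (2*n) (Qz z) y" for z
  have xg: "x z \<in> graph n (A z)" for z using specQ[of z] yv unfolding x_def ospec_def gr by auto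
  have fixy: "mvec (2*n) Qs y = y" using ospec_fix[OF ws specP] yP P by simp
  have xlim: "((\<lambda>z. x z k) \<longlongrightarrow> y k) (at 0)" if "k < 2*n" for k
  proof -
    have "((\<lambda>z. x z k) \<longlongrightarrow> mvec (2*n) Qs y k) (at 0)" unfolding x_def
      by (rule mvec_tendsto) (auto intro: conv)
    thus ?thesis using fixy by simp
  qed
  define V where "V z = (\<lambda>i. if i < n then x z i else 0)" for z
  define W where "W z = (\<lambda>i. if i < n then x z (n+i) else 0)" for z
  have VW: "W z = mvec n (A z) (V z)" for z
  proof -
    obtain v where v: "v \<in> vecs n" "x z = Defs.join n v (mvec n (A z) v)" using xg[of z] unfolding graph_def by auto
    have "V z = v" using v unfolding V_def Defs.join_def vecs_def by (auto simp: fun_eq_iff)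
    moreover have "W z = mvec n (A z) v" using v unfolding W_def Defs.join_def by (auto simp: fun_eq_iff mvec_def)
    ultimately show ?thesis by simp
  qed
  define vs where "vs = (\<lambda>i. if i < n then y i else 0)"
  define wss where "wss = (\<lambda>i. if i < n then y (n+i) else 0)"
  have yj: "y = Defs.join n vs wss" unfolding vs_def wss_def by (rule join_split[OF yv])
  have Vlim: "((\<lambda>z. V z k) \<longlongrightarrow> vs k) (at 0)" for k
    unfolding V_def vs_def by (cases "k < n") (auto intro: xlim)
  have Wlim: "((\<lambda>z. W z k) \<longlongrightarrow> wss k) (at 0)" for k
    unfolding W_def wss_def by (cases "k < n") (auto intro: xlim)
  have vsv: "vs \<in> vecs n" "wss \<in> vecs n" unfolding vs_def wss_def vecs_def by auto
  have "Pcond t vs wss" unfolding Pcond_def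
  proof (intro allI impI conjI)
    fix p assume p: "p < n"
    define BV where "BV z = mvec n (b z) (V z) p" for z
    define AW where "AW z = mvec n (minv n (a z)) (W z) p" for z
    have BVl: "(BV \<longlongrightarrow> mvec n (b 0) vs p) (at 0)" unfolding BV_def
      by (rule mvec_tendsto) (auto intro: contb Vlim)
    have AWl: "(AW \<longlongrightarrow> mvec n a0i wss p) (at 0)" unfolding AW_def
      by (rule mvec_tendsto) (auto intro: conta_inv Wlim)
    have key: "eventually (\<lambda>z. z \<noteq> 0 \<and> AW z = z powi (kt t - m p) * BV z) (at 0)"
      using ev_punct ev_deta
    proof eventually_elim
      case (elim z)
      hence z0: "z \<noteq> 0" by auto
      have "AW z = z powi kt t * mvec n (minv n (a z)) (mvec n (\<gamma> z) (V z)) p"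
        unfolding AW_def VW A_def mvec_scale_mat mvec_scale ..
      also have "\<dots> = z powi kt t * (z powi (- m p) * BV z)"
        unfolding BV_def using ai_gamma[where z=z and V="V z" and p=p] elim p by simp
      also have "\<dots> = z powi (kt t - m p) * BV z"
        using powi_comb[OF z0, of "kt t" "- m p"] by (simp add: mult.assoc)
      finally show ?case using z0 by simp
    qed
    have nb: "at (0::complex) \<noteq> bot" by simp
    show "kt t < m p \<Longrightarrow> mvec n (b 0) vs p = 0"
    proof -
      assume lt: "kt t < m p"
      have ev: "eventually (\<lambda>z. z powi (m p - kt t) * AW z = BV z) (at 0)"
        using key
      proof (rule eventually_mono)
        fix z :: complex assume "z \<noteq> 0 \<and> AW z = z powi (kt t - m p) * BV z"
        thus "z powi (m p - kt t) * AW z = BV z"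
          using powi_comb[of z "m p - kt t" "kt t - m p"] by (simp add: mult.assoc[symmetric])
      qed
      have "((\<lambda>z. z powi (m p - kt t) * AW z) \<longlongrightarrow> 0 * mvec n a0i wss p) (at 0)"
        using tendsto_mult[OF tendsto_powi0[of "m p - kt t"] AWl] lt by simp
      hence "(BV \<longlongrightarrow> 0) (at 0)" using ev by (simp add: Lim_transform_eventually)
      thus ?thesis using BVl tendsto_unique[OF nb] by blast
    qed
    show "m p = kt t \<Longrightarrow> mvec n (b 0) vs p = mvec n a0i wss p"
    proof -
      assume eq: "m p = kt t"
      have ev: "eventually (\<lambda>z. AW z = BV z) (at 0)"
        using key by (rule eventually_mono) (simp add: eq)
      have "(BV \<longlongrightarrow> mvec n a0i wss p) (at 0)" using AWl ev by (rule Lim_transform_eventually)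
      thus ?thesis using BVl tendsto_unique[OF nb] by blast
    qed
    show "m p < kt t \<Longrightarrow> mvec n a0i wss p = 0"
    proof -
      assume lt: "m p < kt t"
      have ev: "eventually (\<lambda>z. z powi (kt t - m p) * BV z = AW z) (at 0)"
        using key by (rule eventually_mono) simp
      have "((\<lambda>z. z powi (kt t - m p) * BV z) \<longlongrightarrow> 0 * mvec n (b 0) vs p) (at 0)"
        using tendsto_mult[OF tendsto_powi0[of "kt t - m p"] BVl] lt by simp
      hence "(AW \<longlongrightarrow> 0) (at 0)" using ev by (simp add: Lim_transform_eventually)
      thus ?thesis using AWl tendsto_unique[OF nb] by blast
    qed
  qed
  thus "y \<in> Pt t" unfolding Pt_iff using vsv yj by blast
qed

lemma hinge_sub2:
  assumes t: "t < tau" and ws: "set ws \<subseteq> vecs (2*n)" and P: "P = cspan ws"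
    and G: "grass_tendsto (2*n) (\<lambda>z. graph n (\<lambda>i k. z powi kt t * \<gamma> z i k)) P (at 0)"
  shows "Pt t \<subseteq> P"
proof -
  define A where "A z = (\<lambda>i k. z powi kt t * \<gamma> z i k)" for z
  define gl where "gl z = map (\<lambda>l. Defs.join n (colv n idm l) (mvec n (A z) (colv n idm l))) [0..<n]" for z
  have glv: "set (gl z) \<subseteq> vecs (2*n)" for z unfolding gl_def by (auto intro!: join_vecs colv_vecs mvec_vecs)
  have gr: "graph n (A z) = cspan (gl z)" for z unfolding gl_def by (rule graph_cspan)
  define Qz where "Qz z = oproj (2*n) (graph n (A z))" for z
  define Qs where "Qs = oproj (2*n) P"
  have specQ: "ospec (2*n) (cspan (gl z)) (Qz z)" for z unfolding Qz_def gr by (rule oproj_spec[OF glv])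
  have specP: "ospec (2*n) (cspan ws) Qs" unfolding Qs_def P by (rule oproj_spec[OF ws])
  have conv: "((\<lambda>z. Qz z i j) \<longlongrightarrow> Qs i j) (at 0)" if "i < 2*n" "j < 2*n" for i j
    using G that unfolding grass_tendsto_def Qz_def Qs_def A_def by blast
  have nb: "at (0::complex) \<noteq> bot" by simp
  have uP: "uu t i \<in> P" if i: "i < n" for i
  proof -
    define s where "s z = (if m i \<le> kt t then 1 else z powi (m i - kt t))" for z :: complex
    define Vt where "Vt z = (\<lambda>l. s z * colv n (minv n (b z)) i l)" for z
    define Wt where "Wt z = mvec n (A z) (Vt z)" for z
    define ut where "ut z = Defs.join n (Vt z) (Wt z)" for z
    have Vtv: "Vt z \<in> vecs n" for z unfolding Vt_def colv_def vecs_def by auto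
    have utg: "ut z \<in> cspan (gl z)" for z unfolding gr[symmetric] graph_def ut_def Wt_def using Vtv by auto
    have fixu: "mvec (2*n) (Qz z) (ut z) = ut z" for z by (rule ospec_fix[OF glv specQ utg])
    define e2 where "e2 = (if m i \<le> kt t then kt t - m i else 0)"
    have e2nn: "e2 \<ge> 0" unfolding e2_def by auto
    have slim: "(s \<longlongrightarrow> (if m i \<le> kt t then 1 else 0)) (at 0)"
    proof (cases "m i \<le> kt t")
      case True thus ?thesis unfolding s_def by simp
    next
      case False
      thus ?thesis unfolding s_def using tendsto_powi0[of "m i - kt t"] by simp
    qed
    have Vtlim: "((\<lambda>z. Vt z l) \<longlongrightarrow> (if m i \<le> kt t then colv n b0i i l else 0)) (at 0)" for l
    proof -
      have "((\<lambda>z. colv n (minv n (b z)) i l) \<longlongrightarrow> colv n b0i i l) (at 0)"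
        unfolding colv_def by (cases "l < n") (auto intro: contb_inv)
      from tendsto_mult[OF slim this] show ?thesis unfolding Vt_def by (simp split: if_splits)
    qed
    have Wtev: "eventually (\<lambda>z. z powi e2 * colv n (a z) i l = Wt z l) (at 0)" for l
      using ev_punct ev_detb
    proof eventually_elim
      case (elim z)
      hence z0: "z \<noteq> 0" by auto
      have gc: "mvec n (\<gamma> z) (colv n (minv n (b z)) i) = (\<lambda>l. z powi (- m i) * colv n (a z) i l)"
        using gamma_col[OF _ _ _ i, of z] elim by auto
      have "Wt z l = z powi kt t * (s z * (z powi (- m i) * colv n (a z) i l))"
        unfolding Wt_def A_def Vt_def mvec_scale_mat mvec_scale gc by simp
      also have "z powi kt t * (s z * (z powi (- m i) * colv n (a z) i l)) = z powi e2 * colv n (a z) i l"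
      proof (cases "m i \<le> kt t")
        case True
        thus ?thesis unfolding s_def e2_def using powi_comb[OF z0, of "kt t" "- m i"] by (simp add: mult.assoc[symmetric])
      next
        case False
        have "z powi kt t * z powi (m i - kt t) * z powi (- m i) = 1"
          using powi_comb[OF z0, of "kt t" "m i - kt t"] powi_comb[OF z0, of "m i" "- m i"] by simp
        thus ?thesis unfolding s_def e2_def using False by (simp add: mult.assoc[symmetric])
      qed
      finally show ?case by simp
    qed
    have Wtlim: "((\<lambda>z. Wt z l) \<longlongrightarrow> (if kt t \<le> m i then colv n (a 0) i l else 0)) (at 0)" for l
    proof -
      have "((\<lambda>z. colv n (a z) i l) \<longlongrightarrow> colv n (a 0) i l) (at 0)"
        unfolding colv_def by (cases "l < n") (auto intro: conta i)
      from tendsto_mult[OF tendsto_powi0[OF e2nn] this]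
      have "((\<lambda>z. z powi e2 * colv n (a z) i l) \<longlongrightarrow> (if e2 = 0 then 1 else 0) * colv n (a 0) i l) (at 0)" .
      moreover have "(e2 = 0) = (kt t \<le> m i)" unfolding e2_def by auto
      ultimately have "((\<lambda>z. z powi e2 * colv n (a z) i l) \<longlongrightarrow> (if kt t \<le> m i then colv n (a 0) i l else 0)) (at 0)"
        by (cases "kt t \<le> m i") auto
      thus ?thesis using Wtev[of l] by (rule Lim_transform_eventually)
    qed
    have ulim: "((\<lambda>z. ut z k) \<longlongrightarrow> uu t i k) (at 0)" for k
    proof -
      consider "k < n" | "n \<le> k" "k < 2*n" | "2*n \<le> k" by linarith
      thus ?thesis
      proof cases
        case 1 thus ?thesis unfolding ut_def uu_def Defs.join_def zv_def using Vtlim[of k] by (simp split: if_splits)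
      next
        case 2 thus ?thesis unfolding ut_def uu_def Defs.join_def zv_def using Wtlim[of "k - n"] by (simp split: if_splits)
      next
        case 3 thus ?thesis unfolding ut_def uu_def Defs.join_def by simp
      qed
    qed
    have "mvec (2*n) Qs (uu t i) = uu t i"
    proof
      fix k show "mvec (2*n) Qs (uu t i) k = uu t i k"
      proof (cases "k < 2*n")
        case True
        have "((\<lambda>z. mvec (2*n) (Qz z) (ut z) k) \<longlongrightarrow> mvec (2*n) Qs (uu t i) k) (at 0)"
          by (rule mvec_tendsto) (auto intro: conv ulim)
        hence "((\<lambda>z. ut z k) \<longlongrightarrow> mvec (2*n) Qs (uu t i) k) (at 0)" using fixu by simp
        thus ?thesis using ulim[of k] tendsto_unique[OF nb] by blast
      next
        case False thus ?thesis using uu_vecs[of t i] unfolding mvec_def vecs_def by auto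
      qed
    qed
    moreover have "mvec (2*n) Qs (uu t i) \<in> cspan ws" using specP uu_vecs[of t i] unfolding ospec_def by auto
    ultimately show ?thesis using P by simp
  qed
  show ?thesis unfolding Pt_def P
  proof (rule cspan_mono)
    show "set (ulist t) \<subseteq> cspan ws" using uP P unfolding ulist_def by auto
  qed
qed

lemma hinge_eq:
  assumes t: "t < tau" and ws: "set ws \<subseteq> vecs (2*n)" and P: "P = cspan ws"
    and G: "grass_tendsto (2*n) (\<lambda>z. graph n (\<lambda>i k. z powi kt t * \<gamma> z i k)) P (at 0)"
  shows "P = Pt t"
  using hinge_sub1[OF assms] hinge_sub2[OF assms] by blast

end

lemma mdet_mm: "mdet n (mm n X Y) = mdet n X * mdet n Y"
proof -
  have "mat n n (\<lambda>(i,j). mm n X Y i j) = mat n n (\<lambda>(i,j). X i j) * mat n n (\<lambda>(i,j). Y i j)"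
    by (intro eq_matI) (auto simp: mm_def scalar_prod_def atLeast0LessThan intro!: sum.cong)
  thus ?thesis unfolding mdet_det by (simp add: det_mult[of _ n])
qed

lemma indep_mdet:
  assumes li: "lin_indep ws" and ws: "set ws \<subseteq> vecs n" and len: "length ws = n"
  shows "mdet n (\<lambda>r c. (ws ! c) r) \<noteq> 0"
proof
  assume "mdet n (\<lambda>r c. (ws ! c) r) = 0"
  hence "det (mat n n (\<lambda>(r,c). (ws ! c) r)) = 0" by (simp add: mdet_det)
  then obtain v where v: "v \<in> carrier_vec n" "v \<noteq> 0\<^sub>v n" "mat n n (\<lambda>(r,c). (ws ! c) r) *\<^sub>v v = 0\<^sub>v n"
    using det_0_iff_vec_prod_zero_field[of "mat n n (\<lambda>(r,c). (ws ! c) r)" n] by auto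
  define c where "c k = v $ k" for k
  have "\<forall>i. (\<Sum>k<length ws. c k * (ws ! k) i) = 0"
  proof
    fix i show "(\<Sum>k<length ws. c k * (ws ! k) i) = 0"
    proof (cases "i < n")
      case True
      have "(mat n n (\<lambda>(r,c). (ws ! c) r) *\<^sub>v v) $ i = 0" using v(3) True by simp
      thus ?thesis using True v(1) len unfolding c_def
        by (simp add: scalar_prod_def atLeast0LessThan mult.commute)
    next
      case False
      have "(ws ! k) i = 0" if "k < length ws" for k using ws nth_mem[OF that] False unfolding vecs_def by auto
      thus ?thesis by simp
    qed
  qed
  hence "\<forall>k<length ws. c k = 0" using li unfolding lin_indep_def by blast
  hence "v = 0\<^sub>v n" using v(1) len unfolding c_def by (intro eq_vecI) auto
  thus False using v(2) by simp
qed

lemma cols_indep: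
  assumes d: "mdet n X \<noteq> 0" and N: "N \<le> n"
  shows "lin_indep (map (colv n X) [0..<N])"
  unfolding lin_indep_def
proof (intro allI impI)
  fix c assume z: "\<forall>i. (\<Sum>k<length (map (colv n X) [0..<N]). c k * (map (colv n X) [0..<N] ! k) i) = 0"
  define c' where "c' k = (if k < N then c k else 0)" for k
  have "mvec n X c' = (\<lambda>i. \<Sum>k<n. c' k * colv n X k i)" unfolding sum_colv ..
  also have "\<dots> = (\<lambda>i. 0)"
  proof
    fix i
    have "(\<Sum>k<n. c' k * colv n X k i) = (\<Sum>k<N. c k * colv n X k i)"
      unfolding c'_def using N by (intro sum.mono_neutral_cong_right) auto
    also have "\<dots> = 0" using z[rule_format, of i] by simp
    finally show "(\<Sum>k<n. c' k * colv n X k i) = 0" .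
  qed
  finally have mz: "mvec n X c' = (\<lambda>i. 0)" .
  fix k assume k: "k < length (map (colv n X) [0..<N])"
  hence kN: "k < N" by simp
  have "mvec n (minv n X) (mvec n X c') k = c' k"
    unfolding mvec_mm using mvec_idm[OF minv_left[OF d]] kN N by simp
  moreover have "mvec n (minv n X) (mvec n X c') k = 0" by (simp only: mz) (simp add: mvec_def)
  ultimately show "c k = 0" using kN unfolding c'_def by simp
qed

lemma wedge_lam:
  assumes ws: "set ws \<subseteq> vecs n" "length ws = n" and T: "T \<subseteq> {..<n}"
  shows "wedge n (map (\<lambda>k. ws ! k) (sorted_list_of_set T)) = (\<lambda>K. lam_cha n (\<lambda>r c. (ws ! c) r) K T)"
proof -
  have fT: "finite T" using T finite_subset by blast
  have eq: "map (\<lambda>k. ws ! k) (sorted_list_of_set T) = map (\<lambda>k i. if i < n then (ws ! k) i else 0) (sorted_list_of_set T)"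
  proof (rule map_cong[OF refl])
    fix k assume "k \<in> set (sorted_list_of_set T)"
    hence "k < n" using T fT by auto
    hence "ws ! k \<in> vecs n" using ws nth_mem[of k ws] by auto
    thus "ws ! k = (\<lambda>i. if i < n then (ws ! k) i else 0)" unfolding vecs_def by auto
  qed
  show ?thesis unfolding lam_cha_def by (rule ext) (simp only: eq)
qed

lemma steinitz:
  assumes li: "lin_indep us" and sp: "set us \<subseteq> cspan ws"
  shows "length us \<le> length ws"
proof (rule ccontr)
  assume "\<not> ?thesis"
  hence lt: "length ws < length us" by simp
  define p where "p = length us"
  define d where "d = length ws"
  have "\<forall>j. \<exists>c. j < p \<longrightarrow> us ! j = (\<lambda>i. \<Sum>l<d. c l * (ws ! l) i)"
    using sp unfolding p_def d_def cspan_def by (auto dest!: nth_mem[of _ us] simp: subset_iff)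
  then obtain C where C: "\<And>j. j < p \<Longrightarrow> us ! j = (\<lambda>i. \<Sum>l<d. C j l * (ws ! l) i)" by metis
  define M where "M = mat p p (\<lambda>(r,c). if r < d then C c r else 0)"
  have "mdet p (\<lambda>r c. if r < d then C c r else 0) = 0"
    by (rule mdet_zero_rows[of "{d}" _ "{}"]) (use lt in \<open>auto simp: p_def d_def\<close>)
  hence "det M = 0" unfolding M_def mdet_det by simp
  then obtain x where x: "x \<in> carrier_vec p" "x \<noteq> 0\<^sub>v p" "M *\<^sub>v x = 0\<^sub>v p"
    using det_0_iff_vec_prod_zero_field[of M p] unfolding M_def by auto
  have Cx: "(\<Sum>j<p. C j l * x $ j) = 0" if "l < d" for l
  proof -
    have "(M *\<^sub>v x) $ l = 0" using x(3) that lt unfolding p_def d_def by simp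
    thus ?thesis using that lt x(1) unfolding M_def p_def d_def
      by (simp add: scalar_prod_def atLeast0LessThan mult.commute)
  qed
  have "\<forall>i. (\<Sum>j<length us. x $ j * (us ! j) i) = 0"
  proof
    fix i
    have "(\<Sum>j<p. x $ j * (us ! j) i) = (\<Sum>j<p. x $ j * (\<Sum>l<d. C j l * (ws ! l) i))"
      using C by (intro sum.cong refl) auto
    also have "\<dots> = (\<Sum>l<d. (\<Sum>j<p. C j l * x $ j) * (ws ! l) i)"
      by (simp add: sum_distrib_left sum_distrib_right mult_ac sum.swap[of _ "{..<p}"])
    also have "\<dots> = 0" using Cx by simp
    finally show "(\<Sum>j<length us. x $ j * (us ! j) i) = 0" unfolding p_def .
  qed
  hence "\<forall>j<p. x $ j = 0" using li unfolding lin_indep_def p_def by blast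
  hence "x = 0\<^sub>v p" using x(1) by (intro eq_vecI) auto
  thus False using x(2) by simp
qed


lemma pos_card:
  assumes X: "X \<subseteq> {..<n}"
  shows "card {c. c < card X \<and> sl X ! c \<in> Y} = card (X \<inter> Y)"
proof -
  note f = nth_sl_image[OF sub_ksub[OF X]]
  have sub: "{c. c < card X \<and> sl X ! c \<in> Y} \<subseteq> {..<card X}" by auto
  have inj: "inj_on (\<lambda>i. sl X ! i) {c. c < card X \<and> sl X ! c \<in> Y}" using inj_on_subset[OF f(1) sub] .
  have "(\<lambda>i. sl X ! i) ` {c. c < card X \<and> sl X ! c \<in> Y} = X \<inter> Y"
  proof
    show "(\<lambda>i. sl X ! i) ` {c. c < card X \<and> sl X ! c \<in> Y} \<subseteq> X \<inter> Y" using f(2) by auto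
    show "X \<inter> Y \<subseteq> (\<lambda>i. sl X ! i) ` {c. c < card X \<and> sl X ! c \<in> Y}"
    proof
      fix x assume x: "x \<in> X \<inter> Y"
      then obtain i where "i < card X" "sl X ! i = x" using f(2) by (metis IntD1 imageE lessThan_iff)
      thus "x \<in> (\<lambda>i. sl X ! i) ` {c. c < card X \<and> sl X ! c \<in> Y}" using x by auto
    qed
  qed
  thus ?thesis using card_image[OF inj] by simp
qed

lemma sl_prefix:
  assumes X: "X \<subseteq> {..<n}" and A: "{..<al} \<subseteq> X"
  shows "sl X = [0..<al] @ sl (X - {..<al})"
proof -
  have fX: "finite X" using X finite_subset by blast
  have "sorted_list_of_set X = [0..<al] @ sl (X - {..<al})"
  proof (subst sorted_list_of_set_unique[OF fX, symmetric], intro conjI)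
    show "sorted_wrt (<) ([0..<al] @ sl (X - {..<al}))"
      unfolding sorted_wrt_append using fX by auto
    show "set ([0..<al] @ sl (X - {..<al})) = X" using A fX by auto
    have "card X = card ({..<al} \<union> (X - {..<al}))" using A by (metis Un_Diff_cancel Un_absorb1)
    also have "\<dots> = al + card (X - {..<al})" by (subst card_Un_disjoint) (use fX in auto)
    finally show "length ([0..<al] @ sl (X - {..<al})) = card X" using fX by simp
  qed
  thus ?thesis .
qed

lemma sl_prefix_nth:
  assumes X: "X \<subseteq> {..<n}" and A: "{..<al} \<subseteq> X"
  shows "r < al \<Longrightarrow> sl X ! r = r" and "al \<le> r \<Longrightarrow> r < card X \<Longrightarrow> al \<le> sl X ! r"
proof -
  note e = sl_prefix[OF X A]
  show "r < al \<Longrightarrow> sl X ! r = r" unfolding e by (simp add: nth_append)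
  assume r: "al \<le> r" "r < card X"
  have "sl X ! r \<in> X" using r ksub_facts[OF sub_ksub[OF X]] by (metis nth_mem)
  moreover have "sl X ! r \<notin> {..<al}"
  proof -
    have fX: "finite X" using X finite_subset by blast
    have "sl X ! r = sl (X - {..<al}) ! (r - al)" unfolding e using r by (simp add: nth_append)
    moreover have "r - al < length (sl (X - {..<al}))"
    proof -
      have "length (sl X) = card X" using fX by simp
      thus ?thesis using r unfolding e by simp
    qed
    ultimately show ?thesis using fX by (metis Diff_iff finite_Diff nth_mem set_sorted_list_of_set)
  qed
  ultimately show "al \<le> sl X ! r" by auto
qed

lemma sl_mem: "X \<subseteq> {..<n} \<Longrightarrow> r < card X \<Longrightarrow> sl X ! r \<in> X"
  using ksub_facts[OF sub_ksub] by (metis nth_mem)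

lemma block_claim:
  fixes R S :: cmat
  assumes ab: "al + be \<le> n"
   and R1: "\<And>p k. p < al \<Longrightarrow> al \<le> k \<Longrightarrow> k < n \<Longrightarrow> R p k = 0"
   and R2: "\<And>p k. p < al + be \<Longrightarrow> al + be \<le> k \<Longrightarrow> k < n \<Longrightarrow> R p k = 0"
   and S1: "\<And>p k. al \<le> p \<Longrightarrow> p < n \<Longrightarrow> k < al \<Longrightarrow> S p k = 0"
   and S2: "\<And>p k. al + be \<le> p \<Longrightarrow> p < n \<Longrightarrow> k < al + be \<Longrightarrow> S p k = 0"
   and RS: "\<And>p k. al \<le> p \<Longrightarrow> p < al + be \<Longrightarrow> al \<le> k \<Longrightarrow> k < al + be \<Longrightarrow> R p k = S p k"
   and dS: "mdet al S \<noteq> 0"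
   and K: "K \<subseteq> {..<n}" and T: "T \<subseteq> {..<n}"
  shows "(if {..<al} \<subseteq> K \<and> K \<subseteq> {..<al+be} then 1 else 0) * lam_cha n R K T =
         (mdet al R / mdet al S) * ((if {..<al} \<subseteq> T \<and> T \<subseteq> {..<al+be} then 1 else 0) * lam_cha n S K T)"
proof (cases "card K = card T")
  case False thus ?thesis by (simp add: lam_cha_zero K T)
next
  case True
  define d where "d = card T"
  have cK: "card K = d" using True d_def by simp
  have fK: "finite K" "finite T" using K T finite_subset by auto
  have sK: "sl K ! r < n" if "r < d" for r using sl_mem[OF K] that cK K by auto
  have sT: "sl T ! r < n" if "r < d" for r using sl_mem[OF T] that d_def T by auto
  have lR: "lam_cha n R K T = mdet d (\<lambda>r c. R (sl K ! r) (sl T ! c))" using True by (simp add: lam_cha_eq K T d_def)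
  have lS: "lam_cha n S K T = mdet d (\<lambda>r c. S (sl K ! r) (sl T ! c))" using True by (simp add: lam_cha_eq K T d_def)
  consider "{..<al} \<subseteq> K \<and> K \<subseteq> {..<al+be}" "{..<al} \<subseteq> T \<and> T \<subseteq> {..<al+be}"
    | "{..<al} \<subseteq> K \<and> K \<subseteq> {..<al+be}" "\<not> ({..<al} \<subseteq> T \<and> T \<subseteq> {..<al+be})"
    | "\<not> ({..<al} \<subseteq> K \<and> K \<subseteq> {..<al+be})" "{..<al} \<subseteq> T \<and> T \<subseteq> {..<al+be}"
    | "\<not> ({..<al} \<subseteq> K \<and> K \<subseteq> {..<al+be})" "\<not> ({..<al} \<subseteq> T \<and> T \<subseteq> {..<al+be})" by blast
  thus ?thesis
  proof cases
    case 1
    have ad: "al \<le> d" using 1 card_mono[OF fK(2), of "{..<al}"] d_def by auto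
    have Kp: "r < al \<Longrightarrow> sl K ! r = r" "al \<le> r \<Longrightarrow> r < d \<Longrightarrow> al \<le> sl K ! r" for r
      using sl_prefix_nth[OF K, of al] 1 cK by auto
    have Tp: "r < al \<Longrightarrow> sl T ! r = r" "al \<le> r \<Longrightarrow> r < d \<Longrightarrow> al \<le> sl T ! r" for r
      using sl_prefix_nth[OF T, of al] 1 d_def by auto
    have Kb: "sl K ! r < al + be" if "r < d" for r using sl_mem[OF K, of r] that cK 1 by (auto simp: subset_iff)
    have Tb: "sl T ! r < al + be" if "r < d" for r using sl_mem[OF T, of r] that d_def 1 by (auto simp: subset_iff)
    define X where "X = mdet (d - al) (\<lambda>r c. R (sl K ! (al + r)) (sl T ! (al + c)))"
    have "mdet d (\<lambda>r c. R (sl K ! r) (sl T ! c)) = mdet al (\<lambda>r c. R (sl K ! r) (sl T ! c)) * X"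
      unfolding X_def
      by (rule mdet_block_ur[OF ad]) (use Kp Tp sT R1 in auto)
    also have "mdet al (\<lambda>r c. R (sl K ! r) (sl T ! c)) = mdet al R" by (rule mdet_cong) (simp add: Kp Tp)
    finally have eR: "lam_cha n R K T = mdet al R * X" using lR by simp
    have "mdet d (\<lambda>r c. S (sl K ! r) (sl T ! c)) = mdet al (\<lambda>r c. S (sl K ! r) (sl T ! c)) * mdet (d - al) (\<lambda>r c. S (sl K ! (al + r)) (sl T ! (al + c)))"
      by (rule mdet_block_ll[OF ad]) (use Kp Tp sK S1 in auto)
    also have "mdet al (\<lambda>r c. S (sl K ! r) (sl T ! c)) = mdet al S" by (rule mdet_cong) (simp add: Kp Tp)
    also have "mdet (d - al) (\<lambda>r c. S (sl K ! (al + r)) (sl T ! (al + c))) = X"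
      unfolding X_def by (rule mdet_cong) (use Kp Tp Kb Tb RS in auto)
    finally have eS: "lam_cha n S K T = mdet al S * X" using lS by simp
    show ?thesis using 1 eR eS dS by simp
  next
    case 2
    have ad: "al \<le> d" using 2 card_mono[OF fK(1), of "{..<al}"] cK by auto
    have Kp: "r < al \<Longrightarrow> sl K ! r = r" for r using sl_prefix_nth[OF K, of al] 2 by auto
    have Kb: "sl K ! r < al + be" if "r < d" for r using sl_mem[OF K, of r] that cK 2 by (auto simp: subset_iff)
    have "mdet d (\<lambda>r c. R (sl K ! r) (sl T ! c)) = 0"
    proof (cases "{..<al} \<subseteq> T")
      case False
      define B where "B = {c. c < card T \<and> sl T ! c \<in> {..<al}}"
      have "card B = card (T \<inter> {..<al})" unfolding B_def by (rule pos_card[OF T])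
      also have "\<dots> < card {..<al}" using False by (intro psubset_card_mono) auto
      finally have cB: "card B < al" by simp
      show ?thesis
      proof (rule mdet_zero_rows[of "{..<al}" d B])
        show "\<forall>r\<in>{..<al}. \<forall>c<d. c \<notin> B \<longrightarrow> R (sl K ! r) (sl T ! c) = 0"
          using Kp sT R1 unfolding B_def d_def by auto
      qed (use ad cB B_def in auto)
    next
      case True
      hence "\<not> T \<subseteq> {..<al+be}" using 2 by auto
      then obtain t0 where t0: "t0 \<in> T" "al + be \<le> t0" by (auto simp: subset_iff not_less)
      then obtain c0 where c0: "c0 < d" "sl T ! c0 = t0" using ksub_facts[OF sub_ksub[OF T]] d_def
        by (metis in_set_conv_nth)
      show ?thesis
      proof (rule mdet_zero_cols[of "{c0}" d "{}"])
        show "\<forall>c\<in>{c0}. \<forall>r<d. r \<notin> {} \<longrightarrow> R (sl K ! r) (sl T ! c) = 0"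
          using c0 t0 Kb T R2 by auto
      qed (use c0 in auto)
    qed
    thus ?thesis using lR by (simp only: if_not_P[OF 2(2)] if_P[OF 2(1)]) simp
  next
    case 3
    have ad: "al \<le> d" using 3 card_mono[OF fK(2), of "{..<al}"] d_def by auto
    have Tp: "r < al \<Longrightarrow> sl T ! r = r" for r using sl_prefix_nth[OF T, of al] 3 by auto
    have Tb: "sl T ! r < al + be" if "r < d" for r using sl_mem[OF T, of r] that d_def 3 by (auto simp: subset_iff)
    have "mdet d (\<lambda>r c. S (sl K ! r) (sl T ! c)) = 0"
    proof (cases "{..<al} \<subseteq> K")
      case False
      define B where "B = {c. c < card K \<and> sl K ! c \<in> {..<al}}"
      have "card B = card (K \<inter> {..<al})" unfolding B_def by (rule pos_card[OF K])
      also have "\<dots> < card {..<al}" using False by (intro psubset_card_mono) auto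
      finally have cB: "card B < al" by simp
      show ?thesis
      proof (rule mdet_zero_cols[of "{..<al}" d B])
        show "\<forall>c\<in>{..<al}. \<forall>r<d. r \<notin> B \<longrightarrow> S (sl K ! r) (sl T ! c) = 0"
          using Tp sK S1 cK unfolding B_def by auto
      qed (use ad cB B_def in auto)
    next
      case True
      hence "\<not> K \<subseteq> {..<al+be}" using 3 by auto
      then obtain k0 where k0: "k0 \<in> K" "al + be \<le> k0" by (auto simp: subset_iff not_less)
      then obtain r0 where r0: "r0 < d" "sl K ! r0 = k0" using ksub_facts[OF sub_ksub[OF K]] cK
        by (metis in_set_conv_nth)
      show ?thesis
      proof (rule mdet_zero_rows[of "{r0}" d "{}"])
        show "\<forall>r\<in>{r0}. \<forall>c<d. c \<notin> {} \<longrightarrow> S (sl K ! r) (sl T ! c) = 0"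
          using r0 k0 Tb K S2 by auto
      qed (use r0 in auto)
    qed
    thus ?thesis using lS by (simp only: if_not_P[OF 3(1)] if_P[OF 3(2)]) simp
  next
    case 4 thus ?thesis by (simp only: if_not_P[OF 4(1)] if_not_P[OF 4(2)]) simp
  qed
qed


lemma mm_assoc_on: "mm n X (mm n Y Z) i j = mm n (mm n X Y) Z i j"
  unfolding mm_def using swap3[where X="X i" and Y=Y and Z="\<lambda>k. Z k j"] by simp

lemma sum_swap2:
  fixes x :: "'k \<Rightarrow> complex"
  assumes "finite A" "finite B"
  shows "(\<Sum>J\<in>B. (\<Sum>K\<in>A. x K * y K J) * z J) = (\<Sum>K\<in>A. x K * (\<Sum>J\<in>B. y K J * z J))"
proof -
  have "(\<Sum>J\<in>B. (\<Sum>K\<in>A. x K * y K J) * z J) = (\<Sum>J\<in>B. \<Sum>K\<in>A. x K * (y K J * z J))"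
    by (simp add: sum_distrib_right mult.assoc)
  also have "\<dots> = (\<Sum>K\<in>A. \<Sum>J\<in>B. x K * (y K J * z J))" by (rule sum.swap)
  also have "\<dots> = (\<Sum>K\<in>A. x K * (\<Sum>J\<in>B. y K J * z J))" by (simp add: sum_distrib_left)
  finally show ?thesis .
qed

lemma mdet_minv_nz: assumes "mdet n X \<noteq> 0" shows "mdet n (minv n X) \<noteq> 0"
proof -
  have "mdet n (mm n (minv n X) X) = mdet n (\<lambda>r c. if r = c then 1 else 0)"
    by (rule mdet_cong) (use minv_left[OF assms] in \<open>auto simp: idm_def\<close>)
  hence "mdet n (minv n X) * mdet n X = 1" using mdet_idm by (simp add: mdet_mm)
  thus ?thesis by auto
qed

context hsetup begin

lemma Pt_join: assumes "v \<in> vecs n" "w \<in> vecs n" "Defs.join n v w \<in> Pt t" shows "Pcond t v w"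
proof -
  obtain v' w' where vw: "v' \<in> vecs n" "w' \<in> vecs n" "Defs.join n v w = Defs.join n v' w'" "Pcond t v' w'"
    using assms(3) unfolding Pt_iff by auto
  thus ?thesis using join_inj[OF vw(3) assms(1,2) vw(1,2)] by simp
qed

lemma mvec_zv: "mvec n X (\<lambda>_. 0) = (\<lambda>_. 0)" unfolding mvec_def by auto

lemma lambda_unique:
  assumes t: "t < tau" and L: "is_lambda n (Pt t) M"
  shows "\<exists>c. c \<noteq> 0 \<and> (\<forall>I J. I \<subseteq> {..<n} \<longrightarrow> J \<subseteq> {..<n} \<longrightarrow> M I J = c * Mt t I J)"
proof -
  obtain f g h F G H where
    len: "length f + length g + length h = n" "length F = length f" "length G = length g" "length H = length h"
    and sv: "set (f @ g @ h) \<subseteq> vecs n" and li: "lin_indep (f @ g @ h)"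
    and sV: "set (F @ G @ H) \<subseteq> vecs n" and lI: "lin_indep (F @ G @ H)"
    and P: "Pt t = cspan (map (Defs.join n (\<lambda>_. 0)) F @ map2 (Defs.join n) g G @ map (\<lambda>v. Defs.join n v (\<lambda>_. 0)) h)"
    and W: "\<forall>T\<subseteq>{..<n}. \<forall>I\<subseteq>{..<n}.
        ext_apply n M (wedge n (map (\<lambda>k. (f @ g @ h) ! k) (sorted_list_of_set T))) I =
        (if {..<length f} \<subseteq> T \<and> T \<subseteq> {..<length f + length g}
         then wedge n (map (\<lambda>k. (F @ G @ H) ! k) (sorted_list_of_set T)) I else 0)"
    using L unfolding is_lambda_def by (elim exE conjE) (rule that; assumption)
  define us where "us = f @ g @ h"
  define Us where "Us = F @ G @ H"
  define a' where "a' = length f"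
  define b' where "b' = length g"
  have lus: "length us = n" "length Us = n" using len unfolding us_def Us_def by auto
  define \<Phi> where "\<Phi> = (\<lambda>r c. (us ! c) r)"
  define \<Psi> where "\<Psi> = (\<lambda>r c. (Us ! c) r)"
  have dPhi: "mdet n \<Phi> \<noteq> 0" unfolding \<Phi>_def by (rule indep_mdet[OF li[folded us_def] sv[folded us_def] lus(1)])
  have dPsi: "mdet n \<Psi> \<noteq> 0" unfolding \<Psi>_def by (rule indep_mdet[OF lI[folded Us_def] sV[folded Us_def] lus(2)])
  define R where "R = mm n (b 0) \<Phi>"
  define S where "S = mm n a0i \<Psi>"
  have dR: "mdet n R \<noteq> 0" unfolding R_def mdet_mm using dPhi detb by simp
  have dS: "mdet n S \<noteq> 0" unfolding S_def mdet_mm using dPsi mdet_minv_nz[OF deta] by simp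
  have Rv: "R p k = mvec n (b 0) (us ! k) p" if "p < n" for p k using that unfolding R_def mm_def mvec_def \<Phi>_def by simp
  have Sv: "S p k = mvec n a0i (Us ! k) p" if "p < n" for p k using that unfolding S_def mm_def mvec_def \<Psi>_def by simp
  have usv: "us ! k \<in> vecs n" if "k < n" for k using sv nth_mem[of k us] lus that unfolding us_def by auto
  have Usv: "Us ! k \<in> vecs n" if "k < n" for k using sV nth_mem[of k Us] lus that unfolding Us_def by auto
  let ?PL = "map (Defs.join n (\<lambda>_. 0)) F @ map2 (Defs.join n) g G @ map (\<lambda>v. Defs.join n v (\<lambda>_. 0)) h"
  have inP: "x \<in> set ?PL \<Longrightarrow> x \<in> Pt t" for x unfolding P by (rule cspan_mem)
  have zv: "(\<lambda>_. 0::complex) \<in> vecs n" unfolding vecs_def by auto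
  have abn: "a' + b' \<le> n" using len unfolding a'_def b'_def by simp
  have lens: "length f = a'" "length g = b'" "length F = a'" "length G = b'" "length h = n - a' - b'"
    using len unfolding a'_def b'_def by auto
  have cF: "Pcond t (\<lambda>_. 0) (Us ! k)" if k: "k < a'" for k
  proof -
    have kn: "k < n" using k abn by simp
    have e: "Us ! k = F ! k" using k lens unfolding Us_def by (simp add: nth_append)
    have "F ! k \<in> set F" using k lens by simp
    hence "Defs.join n (\<lambda>_. 0) (F ! k) \<in> Pt t" by (intro inP) auto
    hence mem: "Defs.join n (\<lambda>_. 0) (Us ! k) \<in> Pt t" using e by simp
    show ?thesis by (rule Pt_join[OF zv Usv[OF kn] mem])
  qed
  have cG: "Pcond t (us ! k) (Us ! k)" if k: "a' \<le> k" "k < a' + b'" for k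
  proof -
    have kn: "k < n" using k abn by simp
    have e: "us ! k = g ! (k - a')" "Us ! k = G ! (k - a')" using k lens unfolding us_def Us_def
      by (auto simp: nth_append)
    have kk: "k - a' < length g" "k - a' < length G" using k lens by auto
    have "(g ! (k - a'), G ! (k - a')) \<in> set (zip g G)" using kk by (auto simp: in_set_zip)
    hence "Defs.join n (g ! (k - a')) (G ! (k - a')) \<in> Pt t" by (intro inP) force
    hence mem: "Defs.join n (us ! k) (Us ! k) \<in> Pt t" using e by simp
    show ?thesis by (rule Pt_join[OF usv[OF kn] Usv[OF kn] mem])
  qed
  have cH: "Pcond t (us ! k) (\<lambda>_. 0)" if k: "a' + b' \<le> k" "k < n" for k
  proof -
    have e: "us ! k = h ! (k - a' - b')" using k lens unfolding us_def by (auto simp: nth_append)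
    have "h ! (k - a' - b') \<in> set h" using k lens by auto
    hence "Defs.join n (h ! (k - a' - b')) (\<lambda>_. 0) \<in> Pt t" by (intro inP) auto
    hence mem: "Defs.join n (us ! k) (\<lambda>_. 0) \<in> Pt t" using e by simp
    show ?thesis by (rule Pt_join[OF usv[OF k(2)] zv mem])
  qed
  have SF: "S p k = 0" if "k < a'" "p < n" "alpha t \<le> p" for p k
  proof -
    have "\<not> kt t < m p" using blk_gt[of p t] that by auto
    thus ?thesis using cF[OF that(1)] that(2) unfolding Pcond_def Sv[OF that(2)] by (auto simp: mvec_zv)
  qed
  have RG: "R p k = 0" if "a' \<le> k" "k < a' + b'" "p < alpha t" for p k
  proof -
    have pn: "p < n" using that blk_le[of t] by auto
    hence "kt t < m p" using blk_gt[of p t] that by auto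
    thus ?thesis using cG[OF that(1,2)] pn unfolding Pcond_def Rv[OF pn] by auto
  qed
  have SG: "S p k = 0" if "a' \<le> k" "k < a' + b'" "alpha t + beta t \<le> p" "p < n" for p k
  proof -
    have "m p < kt t" using blk_lt[of p t] that by auto
    thus ?thesis using cG[OF that(1,2)] that(4) unfolding Pcond_def Sv[OF that(4)] by auto
  qed
  have RSG: "R p k = S p k" if "a' \<le> k" "k < a' + b'" "alpha t \<le> p" "p < alpha t + beta t" for p k
  proof -
    have pn: "p < n" using that blk_le[of t] by auto
    hence "m p = kt t" using blk_eq[of p t] that by auto
    thus ?thesis using cG[OF that(1,2)] pn unfolding Pcond_def Rv[OF pn] Sv[OF pn] by auto
  qed
  have RH: "R p k = 0" if "a' + b' \<le> k" "k < n" "p < alpha t + beta t" for p k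
  proof -
    have pn: "p < n" using that blk_le[of t] by auto
    hence "\<not> m p < kt t" using blk_lt[of p t] that by auto
    thus ?thesis using cH[OF that(1,2)] pn unfolding Pcond_def Rv[OF pn] by (auto simp: mvec_zv)
  qed
  have a1: "a' \<le> alpha t"
  proof (rule ccontr)
    assume "\<not> ?thesis"
    have "mdet n S = 0"
      by (rule mdet_zero_cols[of "{..<a'}" _ "{..<alpha t}"]) (use \<open>\<not> a' \<le> alpha t\<close> abn SF in auto)
    thus False using dS by simp
  qed
  have a2: "alpha t \<le> a'"
  proof (rule ccontr)
    assume c: "\<not> ?thesis"
    have "mdet n R = 0"
    proof (rule mdet_zero_cols[of "{a'..<n}" _ "{alpha t..<n}"])
      show "card {alpha t..<n} < card {a'..<n}" using c blk_le[of t] by auto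
      show "\<forall>c\<in>{a'..<n}. \<forall>r<n. r \<notin> {alpha t..<n} \<longrightarrow> R r c = 0"
        using RG RH by (auto simp: not_le) (metis add.commute le_add2 not_less order.strict_trans2 trans_less_add2)
    qed auto
    thus False using dR by simp
  qed
  have aeq: "a' = alpha t" using a1 a2 by simp
  have b1: "a' + b' \<le> alpha t + beta t"
  proof (rule ccontr)
    assume c: "\<not> ?thesis"
    have "mdet n S = 0"
    proof (rule mdet_zero_cols[of "{..<a'+b'}" _ "{..<alpha t + beta t}"])
      show "\<forall>c\<in>{..<a'+b'}. \<forall>r<n. r \<notin> {..<alpha t + beta t} \<longrightarrow> S r c = 0"
      proof (intro ballI allI impI)
        fix c r assume cr: "c \<in> {..<a'+b'}" "r < n" "r \<notin> {..<alpha t + beta t}"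
        show "S r c = 0"
        proof (cases "c < a'")
          case True thus ?thesis using SF cr by auto
        next
          case False thus ?thesis using SG cr by auto
        qed
      qed
    qed (use c abn in auto)
    thus False using dS by simp
  qed
  have b2: "alpha t + beta t \<le> a' + b'"
  proof (rule ccontr)
    assume c: "\<not> ?thesis"
    have "mdet n R = 0"
    proof (rule mdet_zero_cols[of "{a'+b'..<n}" _ "{alpha t + beta t..<n}"])
      show "card {alpha t + beta t..<n} < card {a'+b'..<n}" using c blk_le[of t] by auto
      show "\<forall>c\<in>{a'+b'..<n}. \<forall>r<n. r \<notin> {alpha t + beta t..<n} \<longrightarrow> R r c = 0"
        using RH by auto
    qed auto
    thus False using dR by simp
  qed
  have beq: "a' + b' = alpha t + beta t" using b1 b2 by simp
  let ?al = "alpha t" and ?be = "beta t"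
  have R1: "R p k = 0" if "p < ?al" "?al \<le> k" "k < n" for p k
    using RG RH that aeq beq by (cases "k < a' + b'") auto
  have R2: "R p k = 0" if "p < ?al + ?be" "?al + ?be \<le> k" "k < n" for p k
    using RH that beq by auto
  have S1: "S p k = 0" if "?al \<le> p" "p < n" "k < ?al" for p k using SF that aeq by auto
  have S2: "S p k = 0" if "?al + ?be \<le> p" "p < n" "k < ?al + ?be" for p k
    using SF SG that aeq beq by (cases "k < a'") auto
  have RS: "R p k = S p k" if "?al \<le> p" "p < ?al + ?be" "?al \<le> k" "k < ?al + ?be" for p k
    using RSG that aeq beq by auto
  have dSa: "mdet ?al S \<noteq> 0"
    using dS mdet_block_ll[of ?al n S] S1 blk_le[of t] by auto
  have dRa: "mdet ?al R \<noteq> 0"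
    using dR mdet_block_ur[of ?al n R] R1 blk_le[of t] by auto
  define \<kappa> where "\<kappa> = mdet ?al R / mdet ?al S"
  have kap: "\<kappa> \<noteq> 0" unfolding \<kappa>_def using dSa dRa by simp
  have BC: "(if Ebl t K then 1 else 0) * lam_cha n R K T = \<kappa> * ((if Ebl t T then 1 else 0) * lam_cha n S K T)"
    if "K \<subseteq> {..<n}" "T \<subseteq> {..<n}" for K T
    unfolding Ebl_def \<kappa>_def
    by (rule block_claim[OF blk_le R1 R2 S1 S2 RS dSa that])
  have E1: "(\<Sum>J\<in>Pow {..<n}. M I J * lam_cha n \<Phi> J T) = (if Ebl t T then 1 else 0) * lam_cha n \<Psi> I T"
    if I: "I \<subseteq> {..<n}" and T: "T \<subseteq> {..<n}" for I T
  proof -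
    have "ext_apply n M (wedge n (map (\<lambda>k. us ! k) (sorted_list_of_set T))) I =
        (if {..<a'} \<subseteq> T \<and> T \<subseteq> {..<a' + b'} then wedge n (map (\<lambda>k. Us ! k) (sorted_list_of_set T)) I else 0)"
      using W I T unfolding us_def Us_def a'_def b'_def by blast
    moreover have "wedge n (map (\<lambda>k. us ! k) (sorted_list_of_set T)) = (\<lambda>K. lam_cha n \<Phi> K T)"
      unfolding \<Phi>_def by (rule wedge_lam[OF _ lus(1) T]) (use sv us_def in auto)
    moreover have "wedge n (map (\<lambda>k. Us ! k) (sorted_list_of_set T)) = (\<lambda>K. lam_cha n \<Psi> K T)"
      unfolding \<Psi>_def by (rule wedge_lam[OF _ lus(2) T]) (use sV Us_def in auto)
    moreover have ee: "({..<a'} \<subseteq> T \<and> T \<subseteq> {..<a' + b'}) = Ebl t T" unfolding Ebl_def by (metis aeq beq)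
    ultimately show ?thesis unfolding ext_apply_def ee by simp
  qed
  have E2: "(\<Sum>J\<in>Pow {..<n}. Mt t I J * lam_cha n \<Phi> J T) = \<kappa> * ((if Ebl t T then 1 else 0) * lam_cha n \<Psi> I T)"
    if I: "I \<subseteq> {..<n}" and T: "T \<subseteq> {..<n}" for I T
  proof -
    have "(\<Sum>J\<in>Pow {..<n}. Mt t I J * lam_cha n \<Phi> J T) =
       (\<Sum>K\<in>Pow {..<n}. (lam_cha n (a 0) I K * (if Ebl t K then 1 else 0)) * (\<Sum>J\<in>Pow {..<n}. lam_cha n (b 0) K J * lam_cha n \<Phi> J T))"
      unfolding Mt_def by (rule sum_swap2) auto
    also have "\<dots> = (\<Sum>K\<in>Pow {..<n}. lam_cha n (a 0) I K * ((if Ebl t K then 1 else 0) * lam_cha n R K T))"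
      unfolding R_def by (intro sum.cong refl) (simp add: lam_mult T mult.assoc)
    also have "\<dots> = (\<Sum>K\<in>Pow {..<n}. lam_cha n (a 0) I K * (\<kappa> * ((if Ebl t T then 1 else 0) * lam_cha n S K T)))"
      by (intro sum.cong refl) (simp add: BC T)
    also have "\<dots> = \<kappa> * (if Ebl t T then 1 else 0) * (\<Sum>K\<in>Pow {..<n}. lam_cha n (a 0) I K * lam_cha n S K T)"
      by (simp add: sum_distrib_left mult_ac)
    also have "(\<Sum>K\<in>Pow {..<n}. lam_cha n (a 0) I K * lam_cha n S K T) = lam_cha n (mm n (a 0) S) I T"
      by (rule lam_mult[OF I T, symmetric])
    also have "lam_cha n (mm n (a 0) S) I T = lam_cha n \<Psi> I T"
    proof (rule lam_cong[OF _ I T])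
      fix i j assume ij: "i < n" "j < n"
      have "mm n (a 0) S i j = mm n (mm n (a 0) a0i) \<Psi> i j" unfolding S_def by (rule mm_assoc_on)
      also have "\<dots> = (\<Sum>l<n. idm i l * \<Psi> l j)" unfolding mm_def using a0_a0i ij by (intro sum.cong) (auto simp: mm_def)
      also have "\<dots> = \<Psi> i j" by (rule sum_idm'[OF ij(1)])
      finally show "mm n (a 0) S i j = \<Psi> i j" .
    qed
    finally show ?thesis by (simp add: mult_ac)
  qed
  have main: "Mt t I J0 = \<kappa> * M I J0" if I: "I \<subseteq> {..<n}" and J0: "J0 \<subseteq> {..<n}" for I J0
  proof -
    define D where "D J = Mt t I J - \<kappa> * M I J" for J
    have DT: "(\<Sum>J\<in>Pow {..<n}. D J * lam_cha n \<Phi> J T) = 0" if T: "T \<subseteq> {..<n}" for T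
    proof -
      have "(\<Sum>J\<in>Pow {..<n}. D J * lam_cha n \<Phi> J T) = (\<Sum>J\<in>Pow {..<n}. Mt t I J * lam_cha n \<Phi> J T) - \<kappa> * (\<Sum>J\<in>Pow {..<n}. M I J * lam_cha n \<Phi> J T)"
        unfolding D_def by (simp add: left_diff_distrib sum_subtractf sum_distrib_left mult.assoc)
      thus ?thesis using E1[OF I T] E2[OF I T] by simp
    qed
    have "D J0 = (\<Sum>T\<in>Pow {..<n}. (\<Sum>J\<in>Pow {..<n}. D J * lam_cha n \<Phi> J T) * lam_cha n (minv n \<Phi>) T J0)"
    proof -
      have "(\<Sum>T\<in>Pow {..<n}. (\<Sum>J\<in>Pow {..<n}. D J * lam_cha n \<Phi> J T) * lam_cha n (minv n \<Phi>) T J0) =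
          (\<Sum>J\<in>Pow {..<n}. D J * (\<Sum>T\<in>Pow {..<n}. lam_cha n \<Phi> J T * lam_cha n (minv n \<Phi>) T J0))"
        by (rule sum_swap2) auto
      also have "\<dots> = (\<Sum>J\<in>Pow {..<n}. D J * (if J = J0 then 1 else 0))"
        by (intro sum.cong refl) (simp add: lam_inv_right[OF dPhi _ J0])
      also have "\<dots> = D J0" using J0 by (simp add: if_distrib cong: if_cong)
      finally show ?thesis by simp
    qed
    also have "\<dots> = 0" using DT by simp
    finally show ?thesis unfolding D_def by simp
  qed
  show ?thesis
    by (rule exI[of _ "1 / \<kappa>"]) (use kap main in auto)
qed

end

lemma map2_same: "map2 F (map g xs) (map h xs) = map (\<lambda>x. F (g x) (h x)) xs"
  by (induction xs) auto

lemma prod_ind: "finite K \<Longrightarrow> (\<Prod>i\<in>K. if P i then (1::complex) else 0) = (if \<forall>i\<in>K. P i then 1 else 0)"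
  by (induction K rule: finite_induct) auto

lemma upt3: assumes "a \<le> b" "b \<le> c" shows "[0..<c] = [0..<a] @ [a..<b] @ [b..<c]"
proof -
  have "[0..<c] = [0..<b] @ [b..<c]" using upt_add_eq_append[of 0 b "c - b"] assms by simp
  moreover have "[0..<b] = [0..<a] @ [a..<b]" using upt_add_eq_append[of 0 a "b - a"] assms by simp
  ultimately show ?thesis by simp
qed

lemma sum_delta_mult: "finite A \<Longrightarrow> (\<Sum>K\<in>A. x K * (if K = T then (1::complex) else 0)) = (if T \<in> A then x T else 0)"
proof -
  assume f: "finite A"
  have "(\<Sum>K\<in>A. x K * (if K = T then (1::complex) else 0)) = (\<Sum>K\<in>A. if K = T then x K else 0)"
    by (intro sum.cong) auto
  thus ?thesis using f by (simp add: sum.delta')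
qed

context hsetup begin

definition fl where "fl t = map (colv n b0i) [0..<alpha t]"
definition gl' where "gl' t = map (colv n b0i) [alpha t..<alpha t + beta t]"
definition hl where "hl t = map (colv n b0i) [alpha t + beta t..<n]"
definition Fl where "Fl t = map (colv n (a 0)) [0..<alpha t]"
definition Gl where "Gl t = map (colv n (a 0)) [alpha t..<alpha t + beta t]"
definition Hl where "Hl t = map (colv n (a 0)) [alpha t + beta t..<n]"

lemma fgh: "fl t @ gl' t @ hl t = map (colv n b0i) [0..<n]"
  unfolding fl_def gl'_def hl_def by (subst upt3[of "alpha t" "alpha t + beta t" n]) (simp_all add: blk_le)
lemma FGH: "Fl t @ Gl t @ Hl t = map (colv n (a 0)) [0..<n]"
  unfolding Fl_def Gl_def Hl_def by (subst upt3[of "alpha t" "alpha t + beta t" n]) (simp_all add: blk_le)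

lemma PL_eq: "map (Defs.join n (\<lambda>_. 0)) (Fl t) @ map2 (Defs.join n) (gl' t) (Gl t) @ map (\<lambda>v. Defs.join n v (\<lambda>_. 0)) (hl t) = ulist t"
proof -
  have "ulist t = map (uu t) [0..<alpha t] @ map (uu t) [alpha t..<alpha t + beta t] @ map (uu t) [alpha t + beta t..<n]"
    unfolding ulist_def by (subst upt3[of "alpha t" "alpha t + beta t" n]) (simp_all add: blk_le)
  moreover have "map (Defs.join n (\<lambda>_. 0)) (Fl t) = map (uu t) [0..<alpha t]"
    unfolding Fl_def map_map
  proof (rule map_cong[OF refl])
    fix i assume "i \<in> set [0..<alpha t]"
    hence i: "i < alpha t" "i < n" using blk_le[of t] by auto
    hence "kt t < m i" using blk_gt by auto
    thus "(Defs.join n (\<lambda>_. 0) \<circ> colv n (a 0)) i = uu t i" unfolding uu_def zv_def by auto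
  qed
  moreover have "map2 (Defs.join n) (gl' t) (Gl t) = map (uu t) [alpha t..<alpha t + beta t]"
    unfolding gl'_def Gl_def map2_same
  proof (rule map_cong[OF refl])
    fix i assume "i \<in> set [alpha t..<alpha t + beta t]"
    hence i: "alpha t \<le> i" "i < alpha t + beta t" "i < n" using blk_le[of t] by auto
    hence "m i = kt t" using blk_eq by auto
    thus "Defs.join n (colv n b0i i) (colv n (a 0) i) = uu t i" unfolding uu_def by auto
  qed
  moreover have "map (\<lambda>v. Defs.join n v (\<lambda>_. 0)) (hl t) = map (uu t) [alpha t + beta t..<n]"
    unfolding hl_def map_map
  proof (rule map_cong[OF refl])
    fix i assume "i \<in> set [alpha t + beta t..<n]"
    hence i: "alpha t + beta t \<le> i" "i < n" by auto
    hence "m i < kt t" using blk_lt by auto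
    thus "((\<lambda>v. Defs.join n v (\<lambda>_. 0)) \<circ> colv n b0i) i = uu t i" unfolding uu_def zv_def by auto
  qed
  ultimately show ?thesis by simp
qed

lemma wedge_cols:
  assumes d: "T \<subseteq> {..<n}"
  shows "wedge n (map (\<lambda>k. map (colv n X) [0..<n] ! k) (sorted_list_of_set T)) = (\<lambda>K. lam_cha n X K T)"
proof -
  have "wedge n (map (\<lambda>k. map (colv n X) [0..<n] ! k) (sorted_list_of_set T)) =
        (\<lambda>K. lam_cha n (\<lambda>r c. (map (colv n X) [0..<n] ! c) r) K T)"
    by (rule wedge_lam[OF _ _ d]) (auto simp: colv_vecs)
  also have "\<dots> = (\<lambda>K. lam_cha n X K T)"
  proof
    fix K
    show "lam_cha n (\<lambda>r c. (map (colv n X) [0..<n] ! c) r) K T = lam_cha n X K T"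
    proof (cases "K \<subseteq> {..<n}")
      case True thus ?thesis by (intro lam_cong[OF _ True d]) (simp add: colv_def)
    next
      case False thus ?thesis unfolding lam_cha_def wedge_def by simp
    qed
  qed
  finally show ?thesis .
qed

lemma Mt_lambda: assumes t: "t < tau" shows "is_lambda n (Pt t) (Mt t)"
  unfolding is_lambda_def
proof (intro exI conjI)
  show "length (fl t) + length (gl' t) + length (hl t) = n" unfolding fl_def gl'_def hl_def using blk_le[of t] by simp
  show "length (Fl t) = length (fl t)" "length (Gl t) = length (gl' t)" "length (Hl t) = length (hl t)"
    unfolding fl_def gl'_def hl_def Fl_def Gl_def Hl_def by simp_all
  show "set (fl t @ gl' t @ hl t) \<subseteq> vecs n" unfolding fgh by (auto simp: colv_vecs)
  show "set (Fl t @ Gl t @ Hl t) \<subseteq> vecs n" unfolding FGH by (auto simp: colv_vecs)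
  show "lin_indep (fl t @ gl' t @ hl t)" unfolding fgh by (rule cols_indep[OF mdet_minv_nz[OF detb]]) simp
  show "lin_indep (Fl t @ Gl t @ Hl t)" unfolding FGH by (rule cols_indep[OF deta]) simp
  show "Pt t = cspan (map (Defs.join n (\<lambda>_. 0)) (Fl t) @ map2 (Defs.join n) (gl' t) (Gl t) @ map (\<lambda>v. Defs.join n v (\<lambda>_. 0)) (hl t))"
    unfolding PL_eq Pt_def ..
  show "\<forall>T\<subseteq>{..<n}. \<forall>I\<subseteq>{..<n}.
     ext_apply n (Mt t) (wedge n (map (\<lambda>k. (fl t @ gl' t @ hl t) ! k) (sorted_list_of_set T))) I =
     (if {..<length (fl t)} \<subseteq> T \<and> T \<subseteq> {..<length (fl t) + length (gl' t)}
      then wedge n (map (\<lambda>k. (Fl t @ Gl t @ Hl t) ! k) (sorted_list_of_set T)) I else 0)"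
  proof (intro allI impI)
    fix T I assume T: "T \<subseteq> {..<n}" and I: "I \<subseteq> {..<n}"
    have lf: "length (fl t) = alpha t" "length (gl' t) = beta t" unfolding fl_def gl'_def by simp_all
    have "ext_apply n (Mt t) (wedge n (map (\<lambda>k. (fl t @ gl' t @ hl t) ! k) (sorted_list_of_set T))) I =
          (\<Sum>J\<in>Pow {..<n}. Mt t I J * lam_cha n b0i J T)"
      unfolding fgh wedge_cols[OF T] ext_apply_def ..
    also have "\<dots> = (\<Sum>K\<in>Pow {..<n}. (lam_cha n (a 0) I K * (if Ebl t K then 1 else 0)) * (\<Sum>J\<in>Pow {..<n}. lam_cha n (b 0) K J * lam_cha n b0i J T))"
      unfolding Mt_def by (rule sum_swap2) auto
    also have "\<dots> = (\<Sum>K\<in>Pow {..<n}. (lam_cha n (a 0) I K * (if Ebl t K then 1 else 0)) * (if K = T then 1 else 0))"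
      by (intro sum.cong refl) (simp add: lam_inv_right[OF detb _ T])
    also have "\<dots> = lam_cha n (a 0) I T * (if Ebl t T then 1 else 0)" using T by (subst sum_delta_mult) auto
    also have "\<dots> = (if {..<length (fl t)} \<subseteq> T \<and> T \<subseteq> {..<length (fl t) + length (gl' t)}
      then wedge n (map (\<lambda>k. (Fl t @ Gl t @ Hl t) ! k) (sorted_list_of_set T)) I else 0)"
      unfolding FGH wedge_cols[OF T] lf Ebl_def by simp
    finally show "ext_apply n (Mt t) (wedge n (map (\<lambda>k. (fl t @ gl' t @ hl t) ! k) (sorted_list_of_set T))) I =
     (if {..<length (fl t)} \<subseteq> T \<and> T \<subseteq> {..<length (fl t) + length (gl' t)}
      then wedge n (map (\<lambda>k. (Fl t @ Gl t @ Hl t) ! k) (sorted_list_of_set T)) I else 0)" .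
  qed
qed

end

context hsetup begin

definition Eb0 where "Eb0 = (\<lambda>i j. (if m i = kt 0 then 1 else 0) * b 0 i j)"
definition A0 where "A0 = mm n (a 0) Eb0"

lemma a0i_A0: "i < n \<Longrightarrow> j < n \<Longrightarrow> mm n a0i A0 i j = Eb0 i j"
proof -
  assume ij: "i < n" "j < n"
  have "mm n a0i A0 i j = mm n (mm n a0i (a 0)) Eb0 i j" unfolding A0_def by (rule mm_assoc_on)
  also have "\<dots> = (\<Sum>l<n. idm i l * Eb0 l j)" unfolding mm_def using a0i_a0 ij by (intro sum.cong) (auto simp: mm_def)
  also have "\<dots> = Eb0 i j" by (rule sum_idm'[OF ij(1)])
  finally show ?thesis .
qed

lemma no_gt0: "p < n \<Longrightarrow> \<not> kt 0 < m p"
  using blk_gt[of p 0] alpha0 by auto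

lemma graph_A0: "graph n A0 = Pt 0"
proof (intro subset_antisym subsetI)
  fix x assume "x \<in> graph n A0"
  then obtain v where v: "v \<in> vecs n" "x = Defs.join n v (mvec n A0 v)" unfolding graph_def by auto
  have aw: "mvec n a0i (mvec n A0 v) p = (if m p = kt 0 then 1 else 0) * mvec n (b 0) v p" if p: "p < n" for p
  proof -
    have "mvec n a0i (mvec n A0 v) p = mvec n Eb0 v p"
      unfolding mvec_mm by (rule arg_cong[where f="\<lambda>X. X p"], rule mvec_cong_mat) (simp add: a0i_A0)
    thus ?thesis using p unfolding mvec_def Eb0_def by (simp add: sum_distrib_left mult.assoc)
  qed
  have "Pcond 0 v (mvec n A0 v)" unfolding Pcond_def using aw no_gt0 by auto
  thus "x \<in> Pt 0" unfolding Pt_iff using v mvec_vecs by blast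
next
  fix x assume "x \<in> Pt 0"
  then obtain v w where vw: "v \<in> vecs n" "w \<in> vecs n" "x = Defs.join n v w" "Pcond 0 v w" unfolding Pt_iff by auto
  have e: "mvec n a0i w = mvec n Eb0 v"
  proof
    fix p show "mvec n a0i w p = mvec n Eb0 v p"
    proof (cases "p < n")
      case True
      have "mvec n Eb0 v p = (if m p = kt 0 then 1 else 0) * mvec n (b 0) v p"
        using True unfolding mvec_def Eb0_def by (simp add: sum_distrib_left mult.assoc)
      moreover have "\<not> kt 0 < m p" using no_gt0 True by auto
      ultimately show ?thesis using vw(4) True unfolding Pcond_def
        by (cases "m p = kt 0") (auto simp: not_less_iff_gr_or_eq)
    next
      case False thus ?thesis by (simp add: mvec_def)
    qed
  qed
  have "w = mvec n (a 0) (mvec n a0i w)" unfolding mvec_mm by (rule mvec_idm_vecs[OF a0_a0i vw(2), symmetric])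
  also have "\<dots> = mvec n A0 v" unfolding e mvec_mm A0_def ..
  finally show "x \<in> graph n A0" unfolding graph_def using vw by auto
qed

lemma lam_A0: assumes I: "I \<subseteq> {..<n}" and J: "J \<subseteq> {..<n}" shows "lam_cha n A0 I J = Mt 0 I J"
proof -
  have "lam_cha n A0 I J = (\<Sum>K\<in>Pow {..<n}. lam_cha n (a 0) I K * lam_cha n Eb0 K J)"
    unfolding A0_def by (rule lam_mult[OF I J])
  also have "\<dots> = Mt 0 I J" unfolding Mt_def
  proof (intro sum.cong refl)
    fix K assume K: "K \<in> Pow {..<n}"
    have fK: "finite K" using K finite_subset by auto
    have "lam_cha n Eb0 K J = (\<Prod>i\<in>K. if m i = kt 0 then 1 else 0) * lam_cha n (b 0) K J"
      unfolding Eb0_def using K J by (simp add: lam_scale_rows)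
    also have "(\<Prod>i\<in>K. if m i = kt 0 then (1::complex) else 0) = (if Ebl 0 K then 1 else 0)"
    proof -
      have "(\<forall>i\<in>K. m i = kt 0) = Ebl 0 K" unfolding Ebl_def alpha0 using K blk_eq[of _ 0] alpha0 by auto
      thus ?thesis using prod_ind[OF fK] by simp
    qed
    finally show "lam_cha n (a 0) I K * lam_cha n Eb0 K J = lam_cha n (a 0) I K * (if Ebl 0 K then 1 else 0) * lam_cha n (b 0) K J"
      by (simp add: mult.assoc)
  qed
  finally show ?thesis .
qed

definition ImS where "ImS t = {w \<in> vecs n. \<forall>p<n. m p < kt t \<longrightarrow> mvec n a0i w p = 0}"

lemma Im_Pt: "Im n (Pt t) = ImS t"
proof (intro subset_antisym subsetI)
  fix w assume "w \<in> Im n (Pt t)"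
  then obtain v where v: "w \<in> vecs n" "v \<in> vecs n" "Defs.join n v w \<in> Pt t" unfolding Im_def by auto
  have "Pcond t v w" by (rule Pt_join[OF v(2,1,3)])
  thus "w \<in> ImS t" unfolding ImS_def Pcond_def using v by auto
next
  fix w assume w: "w \<in> ImS t"
  define xx where "xx p = (if m p = kt t then mvec n a0i w p else 0)" for p
  define v where "v = mvec n b0i xx"
  have bv: "mvec n (b 0) v p = xx p" if "p < n" for p unfolding v_def mvec_mm using mvec_idm[OF b0_b0i that] .
  have "Pcond t v w" unfolding Pcond_def using bv w unfolding ImS_def xx_def by auto
  moreover have "v \<in> vecs n" unfolding v_def by (rule mvec_vecs)
  ultimately have "Defs.join n v w \<in> Pt t" unfolding Pt_iff using w unfolding ImS_def by blast
  thus "w \<in> Im n (Pt t)" unfolding Im_def using w \<open>v \<in> vecs n\<close> unfolding ImS_def by auto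
qed

lemma ImS_span: "ImS t = cspan (map (colv n (a 0)) [0..<alpha t + beta t])"
proof (intro subset_antisym subsetI)
  fix w assume w: "w \<in> ImS t"
  define y where "y = mvec n a0i w"
  have y0: "y k = 0" if "alpha t + beta t \<le> k" "k < n" for k
    using w that blk_lt[of k t] unfolding ImS_def y_def by auto
  have "w = mvec n (a 0) y" unfolding y_def mvec_mm using w unfolding ImS_def
    by (intro mvec_idm_vecs[OF a0_a0i, symmetric]) auto
  also have "\<dots> = (\<lambda>i. \<Sum>k<n. y k * colv n (a 0) k i)" by (rule sum_colv[symmetric])
  also have "\<dots> = (\<lambda>i. \<Sum>k<alpha t + beta t. y k * colv n (a 0) k i)"
    using y0 blk_le[of t] by (intro ext sum.mono_neutral_right) auto
  finally show "w \<in> cspan (map (colv n (a 0)) [0..<alpha t + beta t])" unfolding cspan_map_upt by blast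
next
  fix w assume "w \<in> cspan (map (colv n (a 0)) [0..<alpha t + beta t])"
  then obtain c where c: "w = (\<lambda>i. \<Sum>k<alpha t + beta t. c k * colv n (a 0) k i)" unfolding cspan_map_upt by auto
  define c' where "c' k = (if k < alpha t + beta t then c k else 0)" for k
  have "w = (\<lambda>i. \<Sum>k<n. c' k * colv n (a 0) k i)"
    unfolding c c'_def using blk_le[of t] by (intro ext sum.mono_neutral_cong_left) auto
  also have "\<dots> = mvec n (a 0) c'" by (rule sum_colv)
  finally have wc: "w = mvec n (a 0) c'" .
  have "mvec n a0i w p = c' p" if "p < n" for p unfolding wc mvec_mm using mvec_idm[OF a0i_a0 that] .
  hence "\<forall>p<n. m p < kt t \<longrightarrow> mvec n a0i w p = 0" using blk_lt unfolding c'_def by auto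
  thus "w \<in> ImS t" unfolding ImS_def using wc mvec_vecs by auto
qed

lemma cdim_Pt: "cdim n (Im n (Pt t)) = alpha t + beta t"
  unfolding cdim_def Im_Pt
proof (rule Least_equality)
  show "is_subspace_dim n (ImS t) (alpha t + beta t)" unfolding is_subspace_dim_def ImS_span
    by (intro exI[of _ "map (colv n (a 0)) [0..<alpha t + beta t]"]) (auto simp: colv_vecs blk_le cols_indep[OF deta])
  fix d assume "is_subspace_dim n (ImS t) d"
  then obtain ws where ws: "length ws = d" "cspan ws = ImS t" unfolding is_subspace_dim_def by auto
  have "length (map (colv n (a 0)) [0..<alpha t + beta t]) \<le> length ws"
  proof (rule steinitz)
    show "lin_indep (map (colv n (a 0)) [0..<alpha t + beta t])" by (rule cols_indep[OF deta blk_le])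
    show "set (map (colv n (a 0)) [0..<alpha t + beta t]) \<subseteq> cspan ws" unfolding ws(2) ImS_span
      by (auto intro: cspan_mem)
  qed
  thus "alpha t + beta t \<le> d" using ws by simp
qed

lemma Mt_deg_eq:
  assumes I: "I \<in> ksub n j" and eq: "\<And>K. K \<subseteq> {..<n} \<Longrightarrow> card K = j \<Longrightarrow> Ebl s K = Ebl t K"
  shows "Mt s I J = Mt t I J"
  unfolding Mt_def
proof (intro sum.cong refl)
  fix K assume K: "K \<in> Pow {..<n}"
  have I': "I \<subseteq> {..<n}" "card I = j" using I unfolding ksub_def by auto
  show "lam_cha n (a 0) I K * (if Ebl s K then 1 else 0) * lam_cha n (b 0) K J =
        lam_cha n (a 0) I K * (if Ebl t K then 1 else 0) * lam_cha n (b 0) K J"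
    using eq[of K] K I' by (cases "card K = j") (auto simp: lam_cha_zero)
qed

lemma Ebl_chain:
  assumes st: "Suc t < tau" and K: "K \<subseteq> {..<n}" "card K = alpha t + beta t"
  shows "Ebl (Suc t) K = Ebl t K"
proof -
  let ?d = "alpha t + beta t"
  have fK: "finite K" using K finite_subset by auto
  have "Ebl t K \<longleftrightarrow> K = {..<?d}"
  proof
    assume "Ebl t K" hence "K \<subseteq> {..<?d}" unfolding Ebl_def by auto
    thus "K = {..<?d}" using K fK by (intro card_subset_eq) auto
  qed (auto simp: Ebl_def)
  moreover have "Ebl (Suc t) K \<longleftrightarrow> K = {..<?d}"
  proof
    assume "Ebl (Suc t) K" hence "{..<?d} \<subseteq> K" unfolding Ebl_def alpha_Suc[OF st] by auto
    thus "K = {..<?d}" using K fK by (metis card_lessThan card_subset_eq finite_lessThan)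
  qed (auto simp: Ebl_def alpha_Suc[OF st])
  ultimately show ?thesis by simp
qed

end

context hsetup begin

lemma graph_eq_entries:
  assumes g: "graph n A = graph n B" and ij: "i < n" "j < n"
  shows "A i j = B i j"
proof -
  define v where "v = colv n idm j"
  have v: "v \<in> vecs n" unfolding v_def by (rule colv_vecs)
  have "Defs.join n v (mvec n A v) \<in> graph n B" using g v unfolding graph_def by auto
  then obtain v' where v': "v' \<in> vecs n" "Defs.join n v (mvec n A v) = Defs.join n v' (mvec n B v')"
    unfolding graph_def by auto
  hence "v = v' \<and> mvec n A v = mvec n B v'" using join_inj v mvec_vecs by blast
  hence "mvec n A v i = mvec n B v i" by (metis (no_types))
  moreover have "mvec n X v i = X i j" for X
  proof -
    have "mvec n X v i = (\<Sum>k<n. X i k * idm k j)" unfolding mvec_def v_def colv_def using ij by simp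
    also have "\<dots> = X i j" by (rule sum_idm[OF ij(2)])
    finally show ?thesis .
  qed
  ultimately show ?thesis by simp
qed

lemma Ps_eq:
  assumes "is_hinge_of n \<gamma> m Ps"
  shows "length Ps = tau" "\<And>t. t < tau \<Longrightarrow> Ps ! t = Pt t"
proof -
  show l: "length Ps = tau" using assms unfolding is_hinge_of_def tau_def ds_def by simp
  fix t assume t: "t < tau"
  have sd: "is_subspace_dim (2 * n) (Ps ! t) n"
    and G: "grass_tendsto (2 * n) (\<lambda>z. graph n (\<lambda>i k. z powi (distinct_exps n m ! t) * \<gamma> z i k)) (Ps ! t) (at 0)"
    using assms t l unfolding is_hinge_of_def by auto
  obtain ws where ws: "set ws \<subseteq> vecs (2 * n)" "cspan ws = Ps ! t" using sd unfolding is_subspace_dim_def by auto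
  show "Ps ! t = Pt t"
    by (rule hinge_eq[OF t ws(1) ws(2)[symmetric]]) (use G in \<open>simp add: kt_def ds_def\<close>)
qed

lemma norm_exists:
  assumes l: "length Ps = tau" and P: "\<And>t. t < tau \<Longrightarrow> Ps ! t = Pt t"
  shows "normalized_lambdas n Ps (map Mt [0..<tau])"
  unfolding normalized_lambdas_def
proof (intro conjI allI impI ballI)
  show "length (map Mt [0..<tau]) = length Ps" using l by simp
  show "is_lambda n (Ps ! j) (map Mt [0..<tau] ! j)" if "j < length Ps" for j
    using that l P Mt_lambda by auto
  show "\<exists>A. graph n A = Ps ! 0 \<and> (\<forall>I\<subseteq>{..<n}. \<forall>J\<subseteq>{..<n}. (map Mt [0..<tau] ! 0) I J = lam_cha n A I J)"
    by (rule exI[of _ A0]) (use tau_pos P graph_A0 lam_A0 in auto)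
  fix j I J assume j: "Suc j < length Ps"
    and I: "I \<in> ksub n (cdim n (Im n (Ps ! j)))" and J: "J \<in> ksub n (cdim n (Im n (Ps ! j)))"
  have jt: "Suc j < tau" "j < tau" using j l by auto
  have I': "I \<in> ksub n (alpha j + beta j)" using I P[OF jt(2)] cdim_Pt by simp
  have "Mt (Suc j) I J = Mt j I J"
    by (rule Mt_deg_eq[OF I']) (use Ebl_chain[OF jt(1)] in auto)
  thus "(map Mt [0..<tau] ! Suc j) I J = (map Mt [0..<tau] ! j) I J" using jt by simp
qed

lemma norm_unique:
  assumes l: "length Ps = tau" and P: "\<And>t. t < tau \<Longrightarrow> Ps ! t = Pt t"
    and N: "normalized_lambdas n Ps Ms"
  shows "t < tau \<Longrightarrow> I \<subseteq> {..<n} \<Longrightarrow> J \<subseteq> {..<n} \<Longrightarrow> (Ms ! t) I J = Mt t I J"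
proof (induction t arbitrary: I J)
  case 0
  obtain A where A: "graph n A = Ps ! 0" "\<forall>I\<subseteq>{..<n}. \<forall>J\<subseteq>{..<n}. (Ms ! 0) I J = lam_cha n A I J"
    using N unfolding normalized_lambdas_def by blast
  have gA: "graph n A = graph n A0" using A(1) P[OF tau_pos] graph_A0 by simp
  have "lam_cha n A I J = lam_cha n A0 I J"
    by (rule lam_cong[OF _ 0(2,3)]) (rule graph_eq_entries[OF gA])
  thus ?case using A(2) 0 lam_A0 by simp
next
  case (Suc t)
  have st: "Suc t < tau" "t < tau" using Suc.prems by auto
  have "is_lambda n (Ps ! Suc t) (Ms ! Suc t)" using N st l unfolding normalized_lambdas_def by auto
  hence "is_lambda n (Pt (Suc t)) (Ms ! Suc t)" using P[OF st(1)] by simp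
  then obtain c where c: "c \<noteq> 0" "\<And>I J. I \<subseteq> {..<n} \<Longrightarrow> J \<subseteq> {..<n} \<Longrightarrow> (Ms ! Suc t) I J = c * Mt (Suc t) I J"
    using lambda_unique[OF st(1)] by blast
  obtain I0 J0 where IJ0: "I0 \<in> ksub n (alpha t + beta t)" "J0 \<in> ksub n (alpha t + beta t)" "Mt t I0 J0 \<noteq> 0"
    using Mt_nonzero[of t "alpha t + beta t"] by auto
  have sub0: "I0 \<subseteq> {..<n}" "J0 \<subseteq> {..<n}" using IJ0 unfolding ksub_def by auto
  have cd: "cdim n (Im n (Ps ! t)) = alpha t + beta t" using P[OF st(2)] cdim_Pt by simp
  have "(Ms ! Suc t) I0 J0 = (Ms ! t) I0 J0"
    using N st l IJ0 cd unfolding normalized_lambdas_def by auto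
  also have "\<dots> = Mt t I0 J0" using Suc.IH[OF st(2) sub0] .
  finally have e1: "c * Mt (Suc t) I0 J0 = Mt t I0 J0" using c(2)[OF sub0] by simp
  have "Mt (Suc t) I0 J0 = Mt t I0 J0"
    by (rule Mt_deg_eq[OF IJ0(1)]) (use Ebl_chain[OF st(1)] in auto)
  hence "c = 1" using e1 IJ0(3) by simp
  thus ?case using c(2)[OF Suc.prems(2,3)] by simp
qed

lemma part_a:
  "\<forall>j\<le>n. (\<forall>I\<in>ksub n j. \<forall>J\<in>ksub n j. ((\<lambda>z. z powi (\<Sum>i<j. m i) * lam_cha n (\<gamma> z) I J) \<longlongrightarrow> Ldef j I J) (at 0)) \<and>
     (\<exists>I\<in>ksub n j. \<exists>J\<in>ksub n j. Ldef j I J \<noteq> 0)"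
  using part_a_lim L_nonzero unfolding sj_def by blast

lemma part_b:
  assumes H: "is_hinge_of n \<gamma> m Ps"
  shows "(\<exists>Ms. normalized_lambdas n Ps Ms) \<and>
        (\<forall>Ms. normalized_lambdas n Ps Ms \<longrightarrow>
           (\<forall>j\<le>n.
              (\<exists>k<length Ps. \<exists>I\<in>ksub n j. \<exists>J\<in>ksub n j. (Ms ! k) I J \<noteq> 0) \<and>
              (\<forall>k<length Ps. (\<exists>I\<in>ksub n j. \<exists>J\<in>ksub n j. (Ms ! k) I J \<noteq> 0) \<longrightarrow>
                 (\<forall>I\<in>ksub n j. \<forall>J\<in>ksub n j. (Ms ! k) I J = Ldef j I J))))"
proof (intro conjI allI impI)
  note l = Ps_eq(1)[OF H] and P = Ps_eq(2)[OF H]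
  show "\<exists>Ms. normalized_lambdas n Ps Ms" using norm_exists[OF l P] by blast
  fix Ms j assume N: "normalized_lambdas n Ps Ms" and j: "j \<le> n"
  have MM: "(Ms ! k) I J = Mt k I J" if "k < tau" "I \<in> ksub n j" "J \<in> ksub n j" for k I J
    using norm_unique[OF l P N that(1)] that(2,3) unfolding ksub_def by auto
  obtain t where t: "t < tau" "alpha t \<le> j" "j \<le> alpha t + beta t" using cover[OF j] by auto
  obtain I J where IJ: "I \<in> ksub n j" "J \<in> ksub n j" "Mt t I J \<noteq> 0" using Mt_nonzero[OF t(2,3)] by auto
  show "\<exists>k<length Ps. \<exists>I\<in>ksub n j. \<exists>J\<in>ksub n j. (Ms ! k) I J \<noteq> 0"
  proof -
    have nz: "(Ms ! t) I J \<noteq> 0" using IJ MM[OF t(1) IJ(1,2)] by simp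
    have tl: "t < length Ps" using t(1) l by simp
    show ?thesis using tl IJ(1,2) nz by blast
  qed
  fix k assume k: "k < length Ps" and nz: "\<exists>I\<in>ksub n j. \<exists>J\<in>ksub n j. (Ms ! k) I J \<noteq> 0"
  have kt': "k < tau" using k l by simp
  have "\<exists>I\<in>ksub n j. \<exists>J\<in>ksub n j. Mt k I J \<noteq> 0" using nz MM[OF kt'] by metis
  hence dg: "alpha k \<le> j \<and> j \<le> alpha k + beta k" by (rule Mt_deg)
  show "\<forall>I\<in>ksub n j. \<forall>J\<in>ksub n j. (Ms ! k) I J = Ldef j I J"
    using MM[OF kt'] L_eq_M[of k j] dg by auto
qed

end

theorem proposition3p3:
  fixes n :: nat and e :: real and \<gamma> :: "complex \<Rightarrow> cmat" and m :: "nat \<Rightarrow> int"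
  assumes "0 < n"
    and "meromorphic_family n e \<gamma>"
    and "has_exponents n \<gamma> m"
  shows "\<exists>L :: nat \<Rightarrow> nat set \<Rightarrow> nat set \<Rightarrow> complex.
     (\<forall>j\<le>n.
        (\<forall>I\<in>ksub n j. \<forall>J\<in>ksub n j.
           ((\<lambda>z. z powi (\<Sum>i<j. m i) * lam_cha n (\<gamma> z) I J) \<longlongrightarrow> L j I J) (at 0)) \<and>
        (\<exists>I\<in>ksub n j. \<exists>J\<in>ksub n j. L j I J \<noteq> 0)) \<and>
     (\<forall>Ps. is_hinge_of n \<gamma> m Ps \<longrightarrow>
        (\<exists>Ms. normalized_lambdas n Ps Ms) \<and>
        (\<forall>Ms. normalized_lambdas n Ps Ms \<longrightarrow>
           (\<forall>j\<le>n.
              (\<exists>k<length Ps. \<exists>I\<in>ksub n j. \<exists>J\<in>ksub n j. (Ms ! k) I J \<noteq> 0) \<and>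
              (\<forall>k<length Ps. (\<exists>I\<in>ksub n j. \<exists>J\<in>ksub n j. (Ms ! k) I J \<noteq> 0) \<longrightarrow>
                 (\<forall>I\<in>ksub n j. \<forall>J\<in>ksub n j. (Ms ! k) I J = L j I J)))))"
proof -
  have ms: "\<forall>i j. i \<le> j \<and> j < n \<longrightarrow> m j \<le> m i"
    and ex: "\<exists>r>0. \<exists>a b.
        (\<forall>i<n. \<forall>j<n. (\<lambda>z. a z i j) holomorphic_on ball 0 r \<and> (\<lambda>z. b z i j) holomorphic_on ball 0 r) \<and>
        mdet n (a 0) \<noteq> 0 \<and> mdet n (b 0) \<noteq> 0 \<and>
        (\<forall>z. 0 < norm z \<and> norm z < r \<longrightarrow>
           (\<forall>i<n. \<forall>k<n. \<gamma> z i k = (\<Sum>l<n. a z i l * z powi (- m l) * b z l k)))"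
    using assms(3) unfolding has_exponents_def by blast+
  then obtain r a b where r: "r > 0"
    and hol: "\<forall>i<n. \<forall>j<n. (\<lambda>z. a z i j) holomorphic_on ball 0 r \<and> (\<lambda>z. b z i j) holomorphic_on ball 0 r"
    and da: "mdet n (a 0) \<noteq> 0" and db: "mdet n (b 0) \<noteq> 0"
    and fac: "\<forall>z. 0 < norm z \<and> norm z < r \<longrightarrow>
           (\<forall>i<n. \<forall>k<n. \<gamma> z i k = (\<Sum>l<n. a z i l * z powi (- m l) * b z l k))"
    by blast
  interpret H: hsetup n m \<gamma> r a b
    by unfold_locales (use assms(1) ms r hol da db fac in auto)
  show ?thesis
    by (rule exI[of _ H.Ldef], intro conjI) (use H.part_a H.part_b in blast)+
qed


end
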